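(* Let $V\subseteq\mathbb N$ be finite with $|V|\ge2$. The total order $\succ_{\mathrm{fac}}$ on the facets of $\Delta_V$ is a shelling order, with shelling sets $\sigma(F)$ defined recursively by $\sigma(F)=\emptyset$ if $|V|\le 3$; $\sigma(F)=\sigma(F^2)$ if $V(F^1)=\{\min V,\operatorname{min}_2 V\}$; and $\sigma(F)=\sigma(F^2)\cup\{\{\min X,\max X\}:X\in\mathcal L(\mathcal T(F^1))\}$ otherwise. That is: (SH1) if $F\succ_{\mathrm{fac}}G$ then $\sigma(F)\not\subseteq G$; and (SH2) for each $e\in\sigma(F)$ there is a facet $G\prec_{\mathrm{fac}}F$ with $F\setminus G=\{e\}$. In particular $\Delta_V$ is shellable.
   Context: A path $(v_1,\dots,v_k)$ in an edge set is forbidden if $k\ge4$, $v_1=\max(v_1,\dots,v_k)$, $v_k=\max(v_2,\dots,v_k)$, $v_2>v_{k-1}$. $\Delta_V$ is the simplicial complex on $E(K_V)$ whose faces are edge sets containing no forbidden path; it is pure and each facet $F$ has a unique decomposition $F=F^1\sqcup F^2\sqcup\{\{\min V,\max V\}\}$ with $F^i$ a facet of $\Delta_{V(F^i)}$, $V(F^1)\cup V(F^2)=V$, $V(F^1)\cap V(F^2)=\{\max V(F^1)\}$, $\min V\in V(F^1)$, $\max V\in V(F^2)$ ($V(E)$ = vertices incident to $E$). The decomposition tree $\mathcal T(F)$ is the binary tree with root labeled $V$, older subtree $\mathcal T(F^1)$ and younger subtree $\mathcal T(F^2)$ (a single node labeled $V$ if $|V|=2$); its nodes are in bijection with the edges of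 $F$ via $X\mapsto\{\min X,\max X\}$. For a binary tree $T$, $\mathcal L(T)$ is the set of the root and all firstborn nodes (older children); the traversal of $T$ is the preorder list: root, then the traversal of the older subtree, then that of the younger subtree. $\operatorname{min}_2 V$ denotes the second smallest element of $V$. Order finite subsets of $\mathbb N$ by $X\succ Y$ iff $|X|>|Y|$, or $|X|=|Y|$ and $\min(X\triangle Y)\in Y$. For facets $F,G$ of $\Delta_V$ with traversals $(X_1,\dots,X_N)$ of $\mathcal T(F)$ and $(Y_1,\dots,Y_N)$ of $\mathcal T(G)$ ($N=2|V|-3$), let $k$ be the least index with $X_k\neq Y_k$; then $F\succ_{\mathrm{fac}}G$ iff $X_k\succ Y_k$. *)

theory Defs
  imports Main
begin

definition KEdges :: "nat set \<Rightarrow> nat set set" where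
  "KEdges V = {e. \<exists>a b. a \<in> V \<and> b \<in> V \<and> a \<noteq> b \<and> e = {a, b}}"

definition verts :: "nat set set \<Rightarrow> nat set" where
  "verts E = \<Union>E"

definition is_path :: "nat set set \<Rightarrow> nat list \<Rightarrow> bool" where
  "is_path E vs \<longleftrightarrow> vs \<noteq> [] \<and> distinct vs \<and>
     (\<forall>i. Suc i < length vs \<longrightarrow> {vs ! i, vs ! Suc i} \<in> E)"

definition forbidden :: "nat list \<Rightarrow> bool" where
  "forbidden vs \<longleftrightarrow> (let k = length vs in
     k \<ge> 4 \<and> vs ! 0 = Max (set vs) \<and> vs ! (k - 1) = Max (set (tl vs))
     \<and> vs ! 1 > vs ! (k - 2))"

definition is_face :: "nat set \<Rightarrow> nat set set \<Rightarrow> bool" where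
  "is_face V F \<longleftrightarrow> F \<subseteq> KEdges V \<and> \<not> (\<exists>vs. is_path F vs \<and> forbidden vs)"

definition is_facet :: "nat set \<Rightarrow> nat set set \<Rightarrow> bool" where
  "is_facet V F \<longleftrightarrow> is_face V F \<and> (\<forall>G. is_face V G \<and> F \<subseteq> G \<longrightarrow> G = F)"

datatype dtree = Leaf "nat set" | Node "nat set" dtree dtree

fun label :: "dtree \<Rightarrow> nat set" where
  "label (Leaf X) = X"
| "label (Node X _ _) = X"

fun traversal :: "dtree \<Rightarrow> nat set list" where
  "traversal (Leaf X) = [X]"
| "traversal (Node X T1 T2) = X # traversal T1 @ traversal T2"

text \<open>Firstborn nodes (older children) anywhere in the tree, and L(T) = root + firstborns.\<close>
fun firstborns :: "dtree \<Rightarrow> nat set set" where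
  "firstborns (Leaf X) = {}"
| "firstborns (Node X T1 T2) = {label T1} \<union> firstborns T1 \<union> firstborns T2"

definition Lset :: "dtree \<Rightarrow> nat set set" where
  "Lset T = {label T} \<union> firstborns T"

text \<open>The decomposition tree T(F) of a facet F of Delta_V (relational form, following the
  unique decomposition F = F^1 \<squnion> F^2 \<squnion> {{min V, max V}}).\<close>
inductive dtree_of :: "nat set \<Rightarrow> nat set set \<Rightarrow> dtree \<Rightarrow> bool" where
  base: "card V = 2 \<Longrightarrow> is_facet V F \<Longrightarrow> dtree_of V F (Leaf V)"
| step: "\<lbrakk> finite V; card V \<ge> 3; is_facet V F;
           F = F1 \<union> F2 \<union> {{Min V, Max V}};
           F1 \<inter> F2 = {}; {Min V, Max V} \<notin> F1; {Min V, Max V} \<notin> F2;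
           is_facet (verts F1) F1; is_facet (verts F2) F2;
           verts F1 \<union> verts F2 = V; verts F1 \<inter> verts F2 = {Max (verts F1)};
           Min V \<in> verts F1; Max V \<in> verts F2;
           dtree_of (verts F1) F1 T1; dtree_of (verts F2) F2 T2 \<rbrakk>
         \<Longrightarrow> dtree_of V F (Node V T1 T2)"

definition dtree :: "nat set \<Rightarrow> nat set set \<Rightarrow> dtree" where
  "dtree V F = (THE T. dtree_of V F T)"

definition min2 :: "nat set \<Rightarrow> nat" where
  "min2 V = Min (V - {Min V})"

definition edge_of :: "nat set \<Rightarrow> nat set" where
  "edge_of X = {Min X, Max X}"

text \<open>Shelling sets, computed on the decomposition tree (V(F^1) is the label of the older child).\<close>
fun sigma_tree :: "dtree \<Rightarrow> nat set set" where
  "sigma_tree (Leaf X) = {}"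
| "sigma_tree (Node V T1 T2) =
     (if card V \<le> 3 then {}
      else if label T1 = {Min V, min2 V} then sigma_tree T2
      else sigma_tree T2 \<union> edge_of ` Lset T1)"

definition sigma :: "nat set \<Rightarrow> nat set set \<Rightarrow> nat set set" where
  "sigma V F = sigma_tree (dtree V F)"

definition set_gt :: "nat set \<Rightarrow> nat set \<Rightarrow> bool" where
  "set_gt X Y \<longleftrightarrow> card X > card Y \<or>
     (card X = card Y \<and> X \<noteq> Y \<and> Min (X - Y \<union> (Y - X)) \<in> Y)"

definition fac_gt :: "nat set \<Rightarrow> nat set set \<Rightarrow> nat set set \<Rightarrow> bool" where
  "fac_gt V F G \<longleftrightarrow> (let xs = traversal (dtree V F); ys = traversal (dtree V G) in
     \<exists>k. k < length xs \<and> k < length ys \<and> take k xs = take k ys \<and> set_gt (xs ! k) (ys ! k))"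

end

theory Submission
  imports Defs
begin

fun ep :: "nat set set \<Rightarrow> nat list \<Rightarrow> bool" where
  "ep E [] = True"
| "ep E [x] = True"
| "ep E (x # y # vs) = ({x, y} \<in> E \<and> ep E (y # vs))"

lemma ep_nth: "ep E vs \<longleftrightarrow> (\<forall>i. Suc i < length vs \<longrightarrow> {vs ! i, vs ! Suc i} \<in> E)"
proof (induction vs rule: ep.induct)
  case (3 E x y vs)
  show ?case
  proof
    assume "ep E (x # y # vs)"
    then show "\<forall>i. Suc i < length (x # y # vs) \<longrightarrow> {(x # y # vs) ! i, (x # y # vs) ! Suc i} \<in> E"
      using 3 by (auto simp: nth_Cons split: nat.split)
  next
    assume h: "\<forall>i. Suc i < length (x # y # vs) \<longrightarrow> {(x # y # vs) ! i, (x # y # vs) ! Suc i} \<in> E"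
    have "{x,y} \<in> E" using h[rule_format, of 0] by simp
    moreover have "ep E (y # vs)" unfolding 3
    proof (intro allI impI)
      fix i assume "Suc i < length (y # vs)"
      then show "{(y # vs) ! i, (y # vs) ! Suc i} \<in> E" using h[rule_format, of "Suc i"] by simp
    qed
    ultimately show "ep E (x # y # vs)" by simp
  qed
qed auto

lemma is_path_ep: "is_path E vs \<longleftrightarrow> vs \<noteq> [] \<and> distinct vs \<and> ep E vs"
  by (simp add: is_path_def ep_nth)

lemma ep_Cons: "ep E (x # vs) \<longleftrightarrow> ep E vs \<and> (vs \<noteq> [] \<longrightarrow> {x, hd vs} \<in> E)"
  by (cases vs) auto

lemma ep_append: "ep E (xs @ ys) \<longleftrightarrow> ep E xs \<and> ep E ys \<and> (xs \<noteq> [] \<longrightarrow> ys \<noteq> [] \<longrightarrow> {last xs, hd ys} \<in> E)"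
  by (induction xs) (auto simp: ep_Cons)

lemma ep_mono: "ep E vs \<Longrightarrow> E \<subseteq> E' \<Longrightarrow> ep E' vs"
  by (induction E vs rule: ep.induct) auto

lemma ep_rev: "ep E (rev vs) \<longleftrightarrow> ep E vs"
  by (induction vs) (auto simp: ep_append ep_Cons hd_rev last_rev insert_commute)

lemma ep_single: "ep E [x]" by simp

lemma nth_len_last: "ys \<noteq> [] \<Longrightarrow> (x # ys @ [z]) ! length ys = last ys"
  by (induction ys arbitrary: x rule: rev_induct) (auto simp: nth_append)

definition fpath :: "nat set set \<Rightarrow> nat \<Rightarrow> nat list \<Rightarrow> nat \<Rightarrow> bool" where
  "fpath E x ys z \<longleftrightarrow> distinct (x # ys @ [z]) \<and> ep E (x # ys @ [z]) \<and> length ys \<ge> 2 \<and> z < x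
     \<and> (\<forall>v\<in>set ys. v < z) \<and> last ys < hd ys"

lemma forbidden_iff:
  assumes "distinct vs"
  shows "forbidden vs \<longleftrightarrow> (\<exists>x ys z. vs = x # ys @ [z] \<and> length ys \<ge> 2 \<and> z < x
     \<and> (\<forall>v\<in>set ys. v < z) \<and> last ys < hd ys)"
proof
  assume f: "forbidden vs"
  then have len: "length vs \<ge> 4" by (simp add: forbidden_def Let_def)
  obtain x rest where vs: "vs = x # rest" using len by (cases vs) auto
  have "rest \<noteq> []" using len vs by auto
  define ys where "ys = butlast rest"
  define z where "z = last rest"
  have rest: "rest = ys @ [z]" using \<open>rest \<noteq> []\<close> by (simp add: ys_def z_def)
  have vs2: "vs = x # ys @ [z]" using vs rest by simp
  have ly: "length ys \<ge> 2" using len vs2 by simp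
  have d: "distinct (x # ys @ [z])" using assms vs2 by simp
  have m1': "vs ! 0 = Max (set vs)" using f unfolding forbidden_def Let_def by blast
  have m1: "x = Max (set vs)" using m1' vs2 by simp
  have m2': "vs ! (length vs - 1) = Max (set (tl vs))" using f unfolding forbidden_def Let_def by blast
  have m2: "z = Max (set (ys @ [z]))" using m2' vs2 by (simp add: nth_append)
  have m3: "hd ys > last ys"
  proof -
    have "vs ! 1 = hd ys" using vs2 ly by (cases ys) auto
    moreover have "vs ! (length vs - 2) = last ys"
    proof -
      have ne: "ys \<noteq> []" using ly by auto
      have "vs ! (length vs - 2) = (x # ys @ [z]) ! length ys" using vs2 by simp
      also have "\<dots> = last ys" by (rule nth_len_last[OF ne])
      finally show ?thesis .
    qed
    ultimately show ?thesis using f by (simp add: forbidden_def Let_def)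
  qed
  have "z \<in> set vs" using vs2 by simp
  then have "z \<le> x" using m1 Max_ge[of "set vs" z] by simp
  then have zx: "z < x" using d by auto
  have "\<forall>v\<in>set ys. v < z"
  proof
    fix v assume "v \<in> set ys"
    then have "v \<le> Max (set (ys @ [z]))" by (intro Max_ge) auto
    then have "v \<le> z" using m2 by simp
    moreover have "v \<noteq> z" using d \<open>v \<in> set ys\<close> by auto
    ultimately show "v < z" by simp
  qed
  then show "\<exists>x ys z. vs = x # ys @ [z] \<and> length ys \<ge> 2 \<and> z < x
     \<and> (\<forall>v\<in>set ys. v < z) \<and> last ys < hd ys" using vs2 ly zx m3 by blast
next
  assume "\<exists>x ys z. vs = x # ys @ [z] \<and> length ys \<ge> 2 \<and> z < x
     \<and> (\<forall>v\<in>set ys. v < z) \<and> last ys < hd ys"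
  then obtain x ys z where vs2: "vs = x # ys @ [z]" and ly: "length ys \<ge> 2" and zx: "z < x"
    and yz: "\<forall>v\<in>set ys. v < z" and hl: "last ys < hd ys" by blast
  have "Max (set vs) = x" using vs2 zx yz by (intro Max_eqI) auto
  moreover have "Max (set (tl vs)) = z" using vs2 yz by (intro Max_eqI) auto
  moreover have "vs ! 1 = hd ys" using vs2 ly by (cases ys) auto
  moreover have "vs ! (length vs - 2) = last ys"
  proof -
    have ne: "ys \<noteq> []" using ly by auto
    have "vs ! (length vs - 2) = (x # ys @ [z]) ! length ys" using vs2 by simp
    also have "\<dots> = last ys" by (rule nth_len_last[OF ne])
    finally show ?thesis .
  qed
  moreover have "vs ! (length vs - 1) = z" using vs2 by (simp add: nth_append)
  ultimately show "forbidden vs" using vs2 ly hl by (simp add: forbidden_def Let_def)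
qed

definition nf :: "nat set set \<Rightarrow> bool" where
  "nf E \<longleftrightarrow> \<not> (\<exists>x ys z. fpath E x ys z)"

lemma nf_iff: "(\<not> (\<exists>vs. is_path E vs \<and> forbidden vs)) \<longleftrightarrow> nf E"
proof
  assume h: "\<not> (\<exists>vs. is_path E vs \<and> forbidden vs)"
  show "nf E" unfolding nf_def
  proof
    assume "\<exists>x ys z. fpath E x ys z"
    then obtain x ys z where "fpath E x ys z" by blast
    then have "is_path E (x # ys @ [z]) \<and> forbidden (x # ys @ [z])"
      unfolding fpath_def is_path_ep by (subst forbidden_iff) auto
    then show False using h by blast
  qed
next
  assume h: "nf E"
  show "\<not> (\<exists>vs. is_path E vs \<and> forbidden vs)"
  proof
    assume "\<exists>vs. is_path E vs \<and> forbidden vs"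
    then obtain vs where p: "is_path E vs" and f: "forbidden vs" by blast
    have d: "distinct vs" "ep E vs" using p by (auto simp: is_path_ep)
    then obtain x ys z where "vs = x # ys @ [z] \<and> length ys \<ge> 2 \<and> z < x
     \<and> (\<forall>v\<in>set ys. v < z) \<and> last ys < hd ys" using f forbidden_iff by blast
    then have "fpath E x ys z" using d by (auto simp: fpath_def)
    then show False using h by (auto simp: nf_def)
  qed
qed

lemma is_face_nf: "is_face V F \<longleftrightarrow> F \<subseteq> KEdges V \<and> nf F"
  unfolding is_face_def nf_iff[symmetric] by simp

lemma fpath_mono: "fpath E x ys z \<Longrightarrow> E \<subseteq> E' \<Longrightarrow> fpath E' x ys z"
  by (auto simp: fpath_def intro: ep_mono)

lemma nf_mono: "nf E' \<Longrightarrow> E \<subseteq> E' \<Longrightarrow> nf E"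
  by (meson fpath_mono nf_def)

lemma KEdges_mem: "{x, y} \<in> KEdges V \<Longrightarrow> x \<in> V \<and> y \<in> V \<and> x \<noteq> y"
  unfolding KEdges_def by (auto simp: doubleton_eq_iff)

lemma KEdges_iff: "{x, y} \<in> KEdges V \<longleftrightarrow> x \<in> V \<and> y \<in> V \<and> x \<noteq> y"
  unfolding KEdges_def by (auto simp: doubleton_eq_iff)

lemma KEdgesE: "e \<in> KEdges V \<Longrightarrow> (\<And>x y. e = {x, y} \<Longrightarrow> x \<in> V \<Longrightarrow> y \<in> V \<Longrightarrow> x \<noteq> y \<Longrightarrow> P) \<Longrightarrow> P"
  unfolding KEdges_def by blast

lemma KEdges_mono: "V \<subseteq> W \<Longrightarrow> KEdges V \<subseteq> KEdges W"
  unfolding KEdges_def by blast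

lemma KEdges_sub: "e \<in> KEdges V \<Longrightarrow> e \<subseteq> V"
  by (auto elim!: KEdgesE)

lemma KEdges_sub_iff: "e \<in> KEdges W \<Longrightarrow> e \<in> KEdges V \<longleftrightarrow> e \<subseteq> V"
  by (erule KEdgesE) (simp add: KEdges_iff)

lemma fpath_props:
  assumes "fpath E x ys z"
  shows "distinct (x # ys @ [z])" "ep E (x # ys @ [z])" "length ys \<ge> 2" "z < x"
    "\<forall>v\<in>set ys. v < z" "last ys < hd ys" "ys \<noteq> []"
  using assms unfolding fpath_def by auto


lemma stay:
  assumes "E1 \<subseteq> KEdges V1" "E2 \<subseteq> KEdges V2" "V1 \<inter> V2 = {c}"
    "ep (E1 \<union> E2) vs" "c \<notin> set vs" "vs \<noteq> []" "hd vs \<in> V1"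
  shows "set vs \<subseteq> V1"
  using assms(4-7)
proof (induction "E1 \<union> E2" vs rule: ep.induct)
  case (3 x y vs)
  have e: "{x,y} \<in> E1 \<union> E2" using 3 by simp
  have x: "x \<in> V1" "x \<noteq> c" using 3 by auto
  have "y \<in> V1"
  proof (cases "{x,y} \<in> E1")
    case True then show ?thesis using assms(1) KEdges_mem by blast
  next
    case False
    then have "{x,y} \<in> E2" using e by simp
    then have "x \<in> V2" using assms(2) KEdges_mem by blast
    then show ?thesis using x assms(3) by blast
  qed
  then show ?case using 3 x by auto
qed auto

lemma ep_side:
  assumes "E1 \<subseteq> KEdges V1" "V1 \<inter> V2 = {c}" "ep (E1 \<union> E2) vs" "distinct vs" "set vs \<subseteq> V2"
  shows "ep E2 vs"
  using assms(3-5)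
proof (induction "E1 \<union> E2" vs rule: ep.induct)
  case (3 x y vs)
  have "{x,y} \<notin> E1"
  proof
    assume "{x,y} \<in> E1"
    then have "x \<in> V1" "y \<in> V1" using assms(1) KEdges_mem by blast+
    then have "x = c" "y = c" using 3 assms(2) by auto
    then show False using 3 by auto
  qed
  then show ?case using 3 by auto
qed auto

lemma ep_verts:
  assumes "ep E vs" "length vs \<ge> 2" "E \<subseteq> KEdges V"
  shows "set vs \<subseteq> V"
proof
  fix v assume "v \<in> set vs"
  then obtain i where i: "i < length vs" "vs ! i = v" by (auto simp: in_set_conv_nth)
  show "v \<in> V"
  proof (cases "Suc i < length vs")
    case True
    then have "{vs ! i, vs ! Suc i} \<in> E" using assms(1) by (simp add: ep_nth)
    then show ?thesis using assms(3) KEdges_mem i by blast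
  next
    case False
    then have "i > 0" using assms(2) i by auto
    then have si: "Suc (i - 1) = i" by simp
    then have "Suc (i - 1) < length vs" using i by auto
    then have "{vs ! (i - 1), vs ! Suc (i - 1)} \<in> E" using assms(1) by (simp add: ep_nth)
    then have "{vs ! (i - 1), vs ! i} \<in> KEdges V" using si assms(3) by auto
    then show ?thesis using KEdges_mem i by blast
  qed
qed


lemma two_sides:
  assumes "E1 \<subseteq> KEdges V1" "E2 \<subseteq> KEdges V2" "V1 \<inter> V2 = {c}"
    "ep (E1 \<union> E2) vs" "c \<notin> set vs" "vs \<noteq> []" "hd vs \<in> V1 \<union> V2"
  shows "set vs \<subseteq> V1 \<or> set vs \<subseteq> V2"
proof (cases "hd vs \<in> V1")
  case True then show ?thesis using stay[OF assms(1-6)] by blast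
next
  case False
  then have "hd vs \<in> V2" using assms(7) by blast
  moreover have "V2 \<inter> V1 = {c}" using assms(3) by blast
  moreover have "ep (E2 \<union> E1) vs" using assms(4) by (simp add: Un_commute)
  ultimately show ?thesis using stay[OF assms(2) assms(1)] assms(5,6) by blast
qed


lemma cut_fpath:
  assumes E1: "E1 \<subseteq> KEdges V1" and E2: "E2 \<subseteq> KEdges V2" and c: "V1 \<inter> V2 = {c}"
    and le: "\<forall>v\<in>V1. v \<le> c" and fp: "fpath (E1 \<union> E2) x ys z"
  shows "fpath E1 x ys z \<or> fpath E2 x ys z"
proof -
  define vs where "vs = x # ys @ [z]"
  note P = fpath_props[OF fp, folded vs_def]
  have KU: "E1 \<union> E2 \<subseteq> KEdges (V1 \<union> V2)" using E1 E2 KEdges_mono[of V1 "V1 \<union> V2"]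
      KEdges_mono[of V2 "V1 \<union> V2"] by blast
  have allin: "set vs \<subseteq> V1 \<union> V2" using ep_verts[OF P(2) _ KU] P(3) by (simp add: vs_def)
  have side: "set vs \<subseteq> V1 \<or> set vs \<subseteq> V2"
  proof (cases "c \<in> set vs")
    case False
    then show ?thesis using two_sides[OF E1 E2 c P(2) False] allin by (simp add: vs_def)
  next
    case True
    then obtain pre post where sp: "vs = pre @ c # post" by (meson split_list)
    have dpp: "c \<notin> set pre" "c \<notin> set post" using P(1) sp by auto
    have eppre: "ep (E1 \<union> E2) pre" and eppost: "ep (E1 \<union> E2) post"
      using P(2) sp by (auto simp: ep_append ep_Cons)
    have pre_side: "set pre \<subseteq> V1 \<or> set pre \<subseteq> V2" if pn: "pre \<noteq> []"
    proof -
      have "hd pre \<in> set vs" using sp pn by simp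
      then have "hd pre \<in> V1 \<union> V2" using allin by blast
      then show ?thesis using two_sides[OF E1 E2 c eppre dpp(1) pn] by blast
    qed
    have post_side: "set post \<subseteq> V1 \<or> set post \<subseteq> V2" if qn: "post \<noteq> []"
    proof -
      have "hd post \<in> set vs" using sp qn by simp
      then have "hd post \<in> V1 \<union> V2" using allin by blast
      then show ?thesis using two_sides[OF E1 E2 c eppost dpp(2) qn] by blast
    qed
    have cin: "c \<in> V1" "c \<in> V2" using c by auto
    show ?thesis
    proof (cases "pre = []")
      case True
      then show ?thesis using post_side sp cin by (cases "post = []") auto
    next
      case pn: False
      show ?thesis
      proof (cases "post = []")
        case True
        then show ?thesis using pre_side pn sp cin by auto
      next
        case qn: False
        have "hd vs = hd pre" using sp pn by simp
        then have hx: "hd pre = x" by (simp add: vs_def)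
        have "last vs = last post" using sp qn by simp
        then have lz: "last post = z" by (simp add: vs_def)
        have "hd pre \<in> set pre" using pn by (rule hd_in_set)
        then have cx: "c \<noteq> x" using hx dpp(1) by auto
        have "last post \<in> set post" using qn by (rule last_in_set)
        then have cz: "c \<noteq> z" using lz dpp(2) by auto
        have "c \<in> set ys" using True cx cz by (simp add: vs_def)
        then have czx: "c < z" "c < x" using P(4,5) by auto
        have "\<not> set pre \<subseteq> V1" using hx \<open>hd pre \<in> set pre\<close> le czx by force
        then have a1: "set pre \<subseteq> V2" using pre_side pn by blast
        have "\<not> set post \<subseteq> V1" using lz \<open>last post \<in> set post\<close> le czx by force
        then have a2: "set post \<subseteq> V2" using post_side qn by blast
        show ?thesis using a1 a2 cin sp by auto
      qed
    qed
  qed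
  show ?thesis
  proof (cases "set vs \<subseteq> V1")
    case True
    have "V2 \<inter> V1 = {c}" using c by blast
    moreover have "ep (E2 \<union> E1) vs" using P(2) by (simp add: Un_commute)
    ultimately have "ep E1 vs" using ep_side[OF E2 _ _ P(1) True] by blast
    then show ?thesis using fp unfolding fpath_def vs_def by blast
  next
    case False
    then have "set vs \<subseteq> V2" using side by blast
    then have "ep E2 vs" using ep_side[OF E1 c P(2) P(1)] by blast
    then show ?thesis using fp unfolding fpath_def vs_def by blast
  qed
qed

lemma fpath_first_max:
  assumes "fpath E x ys z" "v \<in> set (x # ys @ [z])" "v \<noteq> x"
  shows "v < x"
  using fpath_props[OF assms(1)] assms(2,3) by auto

lemma ab_excl:
  assumes fp: "fpath (insert {a, b} E) x ys z" and rng: "\<forall>v \<in> set (x # ys @ [z]). a \<le> v \<and> v \<le> b"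
  shows "fpath E x ys z"
proof (rule ccontr)
  assume nf: "\<not> fpath E x ys z"
  define vs where "vs = x # ys @ [z]"
  note P = fpath_props[OF fp, folded vs_def]
  have "\<not> ep E vs" using nf fp unfolding fpath_def vs_def by blast
  then obtain i where i: "Suc i < length vs" "{vs ! i, vs ! Suc i} \<notin> E" by (auto simp: ep_nth)
  have "{vs ! i, vs ! Suc i} \<in> insert {a, b} E" using P(2) i(1) by (simp add: ep_nth)
  then have ab: "{vs ! i, vs ! Suc i} = {a, b}" using i(2) by blast
  have "b = vs ! i \<or> b = vs ! Suc i" using ab by (auto simp: doubleton_eq_iff)
  then have bin: "b \<in> set vs" using i(1) by (auto intro: nth_mem)
  have bx: "b = x"
  proof (rule ccontr)
    assume "b \<noteq> x"
    then have "b < x" using fpath_first_max[OF fp] bin by (simp add: vs_def)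
    moreover have "x \<le> b" using rng by simp
    ultimately show False by simp
  qed
  have v0: "vs ! 0 = b" using bx by (simp add: vs_def)
  have "vs ! i = b \<or> vs ! Suc i = b" using ab by (auto simp: doubleton_eq_iff)
  moreover have l0: "0 < length vs" "i < length vs" using i(1) by auto
  moreover have "vs ! Suc i \<noteq> vs ! 0"
    using nth_eq_iff_index_eq[OF P(1) i(1) l0(1)] by simp
  moreover have "vs ! i = vs ! 0 \<Longrightarrow> i = 0"
    using nth_eq_iff_index_eq[OF P(1) l0(2) l0(1)] by simp
  ultimately have "i = 0" using v0 by auto
  then have "{b, vs ! 1} = {a, b}" using ab v0 by simp
  moreover have "vs ! 1 \<noteq> b"
  proof -
    have "1 < length vs" using i(1) \<open>i = 0\<close> by simp
    then have "vs ! 1 \<noteq> vs ! 0" using nth_eq_iff_index_eq[OF P(1) _ l0(1)] by fastforce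
    then show ?thesis using v0 by simp
  qed
  ultimately have "vs ! 1 = a" by (auto simp: doubleton_eq_iff)
  moreover have "vs ! 1 = hd ys" using P(7) by (cases ys) (auto simp: vs_def)
  ultimately have "hd ys = a" by simp
  moreover have "a \<le> last ys" using rng P(7) by simp
  ultimately show False using P(6) by simp
qed

lemma two_elems: "card A \<ge> 2 \<Longrightarrow> \<exists>x y. x \<in> A \<and> y \<in> A \<and> x \<noteq> y"
proof -
  assume c: "card A \<ge> 2"
  then have f: "finite A" by (metis card.infinite not_numeral_le_zero)
  have "\<not> card A \<le> Suc 0" using c by simp
  then show ?thesis using card_le_Suc0_iff_eq[OF f] by blast
qed

definition gsplit :: "nat set \<Rightarrow> nat set \<Rightarrow> nat set \<Rightarrow> bool" where
  "gsplit W V1 V2 \<longleftrightarrow> finite W \<and> V1 \<union> V2 = W \<and> V1 \<inter> V2 = {Max V1} \<and> Min W \<in> V1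
     \<and> Max W \<in> V2 \<and> Max W \<notin> V1 \<and> card V1 \<ge> 2"

lemma gsplit_props:
  assumes "gsplit W V1 V2"
  shows "finite V1" "finite V2" "V1 \<subseteq> W" "V2 \<subseteq> W" "Max V1 \<in> V1" "Max V1 \<in> V2"
    "\<forall>v\<in>V1. v \<le> Max V1" "Min W < Max V1" "Max V1 < Max W" "Min W \<notin> V2"
    "Min V1 = Min W" "Max V2 = Max W" "card V2 \<ge> 2" "\<forall>v\<in>W. Min W \<le> v \<and> v \<le> Max W"
    "W \<noteq> {}" "finite W" "Min W \<in> W" "Max W \<in> W" "Min W < Max W"
    "V1 \<inter> V2 = {Max V1}" "V1 \<union> V2 = W" "Min W \<in> V1" "Max W \<in> V2" "Max W \<notin> V1"
    "card V1 \<ge> 2" "Max V1 \<noteq> Min W" "\<forall>v\<in>V2. v \<le> Max W" "\<forall>v\<in>W. Min W \<le> v"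
proof -
  have fW: "finite W" and U: "V1 \<union> V2 = W" and I: "V1 \<inter> V2 = {Max V1}" and a1: "Min W \<in> V1"
    and b2: "Max W \<in> V2" and b1: "Max W \<notin> V1" and c1: "card V1 \<ge> 2"
    using assms by (auto simp: gsplit_def)
  show f1: "finite V1" using fW U by (metis finite_Un)
  show f2: "finite V2" using fW U by (metis finite_Un)
  show s1: "V1 \<subseteq> W" "V2 \<subseteq> W" using U by auto
  show cV1: "Max V1 \<in> V1" "Max V1 \<in> V2" using I by auto
  show le1: "\<forall>v\<in>V1. v \<le> Max V1" using f1 by auto
  show wne: "W \<noteq> {}" using a1 s1 by auto
  show "finite W" by (rule fW)
  show aW: "Min W \<in> W" using fW wne by simp
  show bW: "Max W \<in> W" using fW wne by simp
  show rng: "\<forall>v\<in>W. Min W \<le> v \<and> v \<le> Max W" using fW by auto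
  then show "\<forall>v\<in>W. Min W \<le> v" by blast
  have minV1: "Min V1 = Min W" using a1 s1 f1 fW by (intro Min_eqI) auto
  show "Min V1 = Min W" by (rule minV1)
  have "Min V1 < Max V1"
  proof -
    obtain x y where xy: "x \<in> V1" "y \<in> V1" "x \<noteq> y" using two_elems[OF c1] by blast
    have "Min V1 \<le> x" "Min V1 \<le> y" "x \<le> Max V1" "y \<le> Max V1" using xy f1 by auto
    then show ?thesis using xy(3) by linarith
  qed
  then show ac: "Min W < Max V1" using minV1 by simp
  then show "Max V1 \<noteq> Min W" by simp
  show "Min W \<notin> V2"
  proof
    assume "Min W \<in> V2"
    then have "Min W = Max V1" using I a1 by blast
    then show False using ac by simp
  qed
  show cb: "Max V1 < Max W"
  proof -
    have "Max V1 \<le> Max W" using cV1 rng s1 by blast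
    moreover have "Max V1 \<noteq> Max W" using b1 cV1 by metis
    ultimately show ?thesis by simp
  qed
  show "Max V2 = Max W" using b2 s1 f2 rng by (intro Max_eqI) auto
  show "card V2 \<ge> 2"
  proof -
    have "{Max V1, Max W} \<subseteq> V2" using cV1 b2 by auto
    then have "card {Max V1, Max W} \<le> card V2" using f2 by (intro card_mono)
    then show ?thesis using cb by simp
  qed
  show "Min W < Max W" using ac cb by simp
  show "V1 \<inter> V2 = {Max V1}" "V1 \<union> V2 = W" "Min W \<in> V1" "Max W \<in> V2" "Max W \<notin> V1"
    "card V1 \<ge> 2" by fact+
  show "\<forall>v\<in>V2. v \<le> Max W" using rng s1 by blast
qed

lemma gsplit_V2: "gsplit W V1 V2 \<Longrightarrow> V2 = W - V1 \<union> {Max V1}"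
  using gsplit_props(20,21,5) by blast

lemma glue_fpath:
  assumes g: "gsplit W V1 V2" and E1: "E1 \<subseteq> KEdges V1" and E2: "E2 \<subseteq> KEdges V2"
    and fp: "fpath (insert {Min W, Max W} (E1 \<union> E2)) x ys z"
  shows "fpath E1 x ys z \<or> fpath E2 x ys z"
proof -
  note G = gsplit_props[OF g]
  have K: "insert {Min W, Max W} (E1 \<union> E2) \<subseteq> KEdges W"
    using E1 E2 KEdges_mono[OF G(3)] KEdges_mono[OF G(4)] G(17,18,19) by (auto simp: KEdges_iff)
  have "set (x # ys @ [z]) \<subseteq> W" using ep_verts[OF fpath_props(2)[OF fp] _ K] by simp
  then have "fpath (E1 \<union> E2) x ys z" using ab_excl[OF fp] G(14) by blast
  then show ?thesis using cut_fpath[OF E1 E2 G(20) G(7)] by blast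
qed

lemma glue_face:
  assumes g: "gsplit W V1 V2" and f1: "is_face V1 F1" and f2: "is_face V2 F2"
  shows "is_face W (F1 \<union> F2 \<union> {{Min W, Max W}})"
proof -
  note G = gsplit_props[OF g]
  have E1: "F1 \<subseteq> KEdges V1" and E2: "F2 \<subseteq> KEdges V2" and n1: "nf F1" and n2: "nf F2"
    using f1 f2 by (auto simp: is_face_nf)
  have K: "F1 \<union> F2 \<union> {{Min W, Max W}} \<subseteq> KEdges W"
    using E1 E2 KEdges_mono[OF G(3)] KEdges_mono[OF G(4)] G(17,18,19) by (auto simp: KEdges_iff)
  have "nf (F1 \<union> F2 \<union> {{Min W, Max W}})"
    unfolding nf_def
  proof
    assume "\<exists>x ys z. fpath (F1 \<union> F2 \<union> {{Min W, Max W}}) x ys z"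
    then obtain x ys z where "fpath (insert {Min W, Max W} (F1 \<union> F2)) x ys z" by auto
    then have "fpath F1 x ys z \<or> fpath F2 x ys z" using glue_fpath[OF g E1 E2] by blast
    then show False using n1 n2 by (auto simp: nf_def)
  qed
  then show ?thesis using K by (simp add: is_face_nf)
qed

lemma cut_nf:
  assumes E1: "E1 \<subseteq> KEdges V1" and E2: "E2 \<subseteq> KEdges V2" and c: "V1 \<inter> V2 = {c}"
    and le: "\<forall>v\<in>V1. v \<le> c" and n1: "nf E1" and n2: "nf E2"
  shows "nf (E1 \<union> E2)"
  using cut_fpath[OF E1 E2 c le] n1 n2 by (auto simp: nf_def)

lemma facet_max:
  "is_facet W F \<longleftrightarrow> is_face W F \<and> (\<forall>e\<in>KEdges W. e \<notin> F \<longrightarrow> \<not> nf (insert e F))"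
proof
  assume f: "is_facet W F"
  show "is_face W F \<and> (\<forall>e\<in>KEdges W. e \<notin> F \<longrightarrow> \<not> nf (insert e F))"
  proof (intro conjI ballI impI)
    show "is_face W F" using f by (simp add: is_facet_def)
    fix e assume e: "e \<in> KEdges W" "e \<notin> F"
    show "\<not> nf (insert e F)"
    proof
      assume "nf (insert e F)"
      then have "is_face W (insert e F)" using f e by (auto simp: is_facet_def is_face_nf)
      then have "insert e F = F" using f by (auto simp: is_facet_def)
      then show False using e by auto
    qed
  qed
next
  assume h: "is_face W F \<and> (\<forall>e\<in>KEdges W. e \<notin> F \<longrightarrow> \<not> nf (insert e F))"
  show "is_facet W F" unfolding is_facet_def
  proof (intro conjI allI impI)
    show "is_face W F" using h by simp
    fix G assume g: "is_face W G \<and> F \<subseteq> G"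
    show "G = F"
    proof (rule ccontr)
      assume "G \<noteq> F"
      then obtain e where e: "e \<in> G" "e \<notin> F" using g by blast
      then have "e \<in> KEdges W" using g by (auto simp: is_face_nf)
      then have "\<not> nf (insert e F)" using h e by blast
      moreover have "nf G" using g by (simp add: is_face_nf)
      ultimately show False using nf_mono[of G "insert e F"] e g by blast
    qed
  qed
qed

lemma facet_face: "is_facet W F \<Longrightarrow> is_face W F"
  by (simp add: is_facet_def)

lemma facet_sub: "is_facet W F \<Longrightarrow> F \<subseteq> KEdges W"
  by (simp add: is_facet_def is_face_nf)

lemma facet_nf: "is_facet W F \<Longrightarrow> nf F"
  by (simp add: is_facet_def is_face_nf)

lemma fpath_verts: "fpath E x ys z \<Longrightarrow> E \<subseteq> KEdges W \<Longrightarrow> set (x # ys @ [z]) \<subseteq> W"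
  using ep_verts[OF fpath_props(2)] fpath_props(3) by fastforce


lemma fpath_insert_max:
  assumes fp: "fpath (insert {v, b} E) x ys z" and nfp: "\<not> fpath E x ys z"
    and le: "\<forall>u \<in> set (x # ys @ [z]). u \<le> b" and vb: "v \<noteq> b"
  shows "x = b \<and> hd ys = v \<and> (\<forall>i. 0 < i \<and> Suc i < length (x # ys @ [z]) \<longrightarrow>
            {(x # ys @ [z]) ! i, (x # ys @ [z]) ! Suc i} \<in> E)"
proof -
  define vs where "vs = x # ys @ [z]"
  note P = fpath_props[OF fp, folded vs_def]
  have "\<not> ep E vs" using nfp fp unfolding fpath_def vs_def by blast
  then obtain i where i: "Suc i < length vs" "{vs ! i, vs ! Suc i} \<notin> E" by (auto simp: ep_nth)
  have "{vs ! i, vs ! Suc i} \<in> insert {v, b} E" using P(2) i(1) by (simp add: ep_nth)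
  then have ab: "{vs ! i, vs ! Suc i} = {v, b}" using i(2) by blast
  have "b = vs ! i \<or> b = vs ! Suc i" using ab by (auto simp: doubleton_eq_iff)
  then have bin: "b \<in> set vs" using i(1) by (auto intro: nth_mem)
  have bx: "b = x"
  proof (rule ccontr)
    assume "b \<noteq> x"
    then have "b < x" using fpath_first_max[OF fp] bin by (simp add: vs_def)
    moreover have "x \<le> b" using le by simp
    ultimately show False by simp
  qed
  have v0: "vs ! 0 = b" using bx by (simp add: vs_def)
  have l0: "0 < length vs" by (simp add: vs_def)
  have nb: "vs ! j \<noteq> b" if "0 < j" "j < length vs" for j
    using nth_eq_iff_index_eq[OF P(1) that(2) l0] v0 that by auto
  have "vs ! i = b \<or> vs ! Suc i = b" using ab by (auto simp: doubleton_eq_iff)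
  then have i0: "i = 0" using nb i(1) by (metis Suc_lessD gr0I zero_less_Suc)
  have "{b, vs ! 1} = {v, b}" using ab v0 i0 by simp
  moreover have "vs ! 1 \<noteq> b" using nb i(1) i0 by simp
  ultimately have v1: "vs ! 1 = v" by (auto simp: doubleton_eq_iff)
  have "vs ! 1 = hd ys" using P(7) by (cases ys) (auto simp: vs_def)
  then have hv: "hd ys = v" using v1 by simp
  have "{vs ! j, vs ! Suc j} \<in> E" if "0 < j" "Suc j < length vs" for j
  proof -
    have "{vs ! j, vs ! Suc j} \<in> insert {v, b} E" using P(2) that(2) by (simp add: ep_nth)
    moreover have "vs ! j \<noteq> b" "vs ! Suc j \<noteq> b" using nb that by auto
    ultimately show ?thesis by (auto simp: doubleton_eq_iff)
  qed
  then show ?thesis using bx hv by (simp add: vs_def)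
qed


lemma ab_in_facet:
  assumes fW: "finite W" and c2: "card W \<ge> 2" and f: "is_facet W F"
  shows "{Min W, Max W} \<in> F"
proof (rule ccontr)
  assume nin: "{Min W, Max W} \<notin> F"
  have wne: "W \<noteq> {}" using c2 by auto
  have ab: "Min W < Max W"
  proof -
    obtain x y where xy: "x \<in> W" "y \<in> W" "x \<noteq> y" using two_elems[OF c2] by blast
    have "Min W \<le> x" "Min W \<le> y" "x \<le> Max W" "y \<le> Max W" using xy fW by auto
    then show ?thesis using xy(3) by linarith
  qed
  have K: "{Min W, Max W} \<in> KEdges W" using ab fW wne by (auto simp: KEdges_iff)
  have sub: "F \<subseteq> KEdges W" using f by (rule facet_sub)
  have "nf (insert {Min W, Max W} F)" unfolding nf_def
  proof
    assume "\<exists>x ys z. fpath (insert {Min W, Max W} F) x ys z"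
    then obtain x ys z where fp: "fpath (insert {Min W, Max W} F) x ys z" by blast
    have "set (x # ys @ [z]) \<subseteq> W" using fpath_verts[OF fp] sub K by blast
    moreover have "\<forall>v\<in>W. Min W \<le> v \<and> v \<le> Max W" using fW by auto
    ultimately have "\<forall>u \<in> set (x # ys @ [z]). Min W \<le> u \<and> u \<le> Max W" by blast
    then have "fpath F x ys z" using ab_excl[OF fp] by blast
    then show False using facet_nf[OF f] by (auto simp: nf_def)
  qed
  then show False using f K nin by (auto simp: facet_max)
qed

lemma facet_verts:
  assumes fW: "finite W" and c2: "card W \<ge> 2" and f: "is_facet W F"
  shows "verts F = W"
proof
  show "verts F \<subseteq> W" using facet_sub[OF f] by (auto simp: verts_def dest: KEdges_sub)
next
  show "W \<subseteq> verts F"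
  proof
    fix v assume vW: "v \<in> W"
    have abF: "{Min W, Max W} \<in> F" by (rule ab_in_facet[OF fW c2 f])
    show "v \<in> verts F"
    proof (cases "v = Max W")
      case True then show ?thesis using abF by (auto simp: verts_def)
    next
      case vb: False
      show ?thesis
      proof (rule ccontr)
        assume nv: "v \<notin> verts F"
        then have nvb: "{v, Max W} \<notin> F" by (auto simp: verts_def)
        have "Max W \<in> W" using fW vW by (auto intro: Max_in)
        then have K: "{v, Max W} \<in> KEdges W" using vW vb by (auto simp: KEdges_iff)
        have sub: "F \<subseteq> KEdges W" using f by (rule facet_sub)
        have "nf (insert {v, Max W} F)" unfolding nf_def
        proof
          assume "\<exists>x ys z. fpath (insert {v, Max W} F) x ys z"
          then obtain x ys z where fp: "fpath (insert {v, Max W} F) x ys z" by blast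
          have nfp: "\<not> fpath F x ys z" using facet_nf[OF f] by (auto simp: nf_def)
          have "set (x # ys @ [z]) \<subseteq> W" using fpath_verts[OF fp] sub K by blast
          then have le: "\<forall>u \<in> set (x # ys @ [z]). u \<le> Max W" using fW by auto
          note R = fpath_insert_max[OF fp nfp le vb]
          define vs where "vs = x # ys @ [z]"
          have "length vs = length ys + 2" by (simp add: vs_def)
          then have l: "2 < length vs" using fpath_props(3)[OF fp] by linarith
          have "vs ! 1 = v" using R fpath_props(7)[OF fp] by (cases ys) (auto simp: vs_def)
          moreover have "{vs ! 1, vs ! Suc 1} \<in> F"
          proof -
            have R3: "\<forall>i. 0 < i \<and> Suc i < length vs \<longrightarrow> {vs ! i, vs ! Suc i} \<in> F"
              using R unfolding vs_def by blast
            show ?thesis using R3[rule_format, of 1] l by simp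
          qed
          ultimately have "v \<in> verts F" by (auto simp: verts_def)
          then show False using nv by simp
        qed
        then show False using f K nvb by (auto simp: facet_max)
      qed
    qed
  qed
qed

definition adjS :: "nat set set \<Rightarrow> nat set \<Rightarrow> nat \<Rightarrow> nat \<Rightarrow> bool" where
  "adjS E S u v \<longleftrightarrow> {u, v} \<in> E \<and> u \<in> S \<and> v \<in> S"

abbreviation reach :: "nat set set \<Rightarrow> nat set \<Rightarrow> nat \<Rightarrow> nat \<Rightarrow> bool" where
  "reach E S \<equiv> (adjS E S)\<^sup>*\<^sup>*"

lemma reach_step: "reach E S u v \<Longrightarrow> {v, w} \<in> E \<Longrightarrow> v \<in> S \<Longrightarrow> w \<in> S \<Longrightarrow> reach E S u w"
  by (rule rtranclp.rtrancl_into_rtrancl) (auto simp: adjS_def)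

lemma reach_edge: "{v, w} \<in> E \<Longrightarrow> v \<in> S \<Longrightarrow> w \<in> S \<Longrightarrow> reach E S v w"
  using reach_step[of E S v v w] by simp

lemma reach_sym: "reach E S u v \<Longrightarrow> reach E S v u"
proof (induction rule: rtranclp_induct)
  case base then show ?case by simp
next
  case (step y z)
  have "adjS E S z y" using step(2) by (auto simp: adjS_def insert_commute)
  then show ?case using step(3) by (rule converse_rtranclp_into_rtranclp)
qed

lemma reach_trans: "reach E S u v \<Longrightarrow> reach E S v w \<Longrightarrow> reach E S u w"
  by (rule rtranclp_trans)

lemma reach_mono: "reach E S u v \<Longrightarrow> E \<subseteq> E' \<Longrightarrow> S \<subseteq> S' \<Longrightarrow> reach E' S' u v"
proof (induction rule: rtranclp_induct)
  case base then show ?case by simp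
next
  case (step y z)
  then show ?case by (metis (no_types, lifting) adjS_def reach_step subsetD)
qed

lemma reach_in: "reach E S u v \<Longrightarrow> u \<in> S \<Longrightarrow> v \<in> S"
  by (induction rule: rtranclp_induct) (auto simp: adjS_def)

lemma reach_closed:
  assumes "reach E S u v" "u \<in> A" "\<And>x y. x \<in> A \<Longrightarrow> adjS E S x y \<Longrightarrow> y \<in> A"
  shows "v \<in> A"
  using assms by (induction rule: rtranclp_induct) auto

lemma reach_path:
  assumes "reach E S u v" "u \<in> S"
  shows "\<exists>vs. vs \<noteq> [] \<and> hd vs = u \<and> last vs = v \<and> distinct vs \<and> ep E vs \<and> set vs \<subseteq> S"
  using assms
proof (induction rule: rtranclp_induct)
  case base
  then show ?case by (intro exI[of _ "[u]"]) auto
next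
  case (step y z)
  then obtain vs where vs: "vs \<noteq> []" "hd vs = u" "last vs = y" "distinct vs" "ep E vs" "set vs \<subseteq> S"
    by blast
  have yz: "{y, z} \<in> E" "z \<in> S" using step(2) by (auto simp: adjS_def)
  show ?case
  proof (cases "z \<in> set vs")
    case True
    then obtain pre post where sp: "vs = pre @ z # post" by (meson split_list)
    have "ep E (pre @ [z])" using vs(5) sp by (auto simp: ep_append ep_Cons)
    moreover have "hd (pre @ [z]) = u" using vs(2) sp by (cases pre) auto
    moreover have "distinct (pre @ [z])" using vs(4) sp by auto
    moreover have "set (pre @ [z]) \<subseteq> S" using vs(6) sp by auto
    ultimately show ?thesis by (intro exI[of _ "pre @ [z]"]) auto
  next
    case False
    have "ep E (vs @ [z])" using vs yz by (simp add: ep_append)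
    then show ?thesis using vs False yz by (intro exI[of _ "vs @ [z]"]) auto
  qed
qed

lemma ep_reach: "ep E vs \<Longrightarrow> set vs \<subseteq> S \<Longrightarrow> vs \<noteq> [] \<Longrightarrow> reach E S (hd vs) (last vs)"
proof (induction vs rule: ep.induct)
  case (3 E x y vs)
  have "reach E S y (last (y # vs))" using 3 by auto
  moreover have "adjS E S x y" using 3 by (auto simp: adjS_def)
  ultimately show ?case by (auto intro: converse_rtranclp_into_rtranclp)
qed auto

lemma path_reach_all:
  assumes "ep E vs" "set vs \<subseteq> S" "vs \<noteq> []" "v \<in> set vs"
  shows "reach E S (hd vs) v"
proof -
  obtain pre post where sp: "vs = pre @ v # post" using assms(4) by (meson split_list)
  have "ep E (pre @ [v])" using assms(1) sp by (auto simp: ep_append ep_Cons)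
  moreover have "set (pre @ [v]) \<subseteq> S" using assms(2) sp by auto
  ultimately have "reach E S (hd (pre @ [v])) (last (pre @ [v]))" using ep_reach by blast
  moreover have "hd (pre @ [v]) = hd vs" using sp by (cases pre) auto
  ultimately show ?thesis by simp
qed

lemma distinct_hd_last: "distinct xs \<Longrightarrow> length xs \<ge> 2 \<Longrightarrow> hd xs \<noteq> last xs"
proof (cases xs)
  case (Cons x ys)
  assume d: "distinct xs" and l: "length xs \<ge> 2"
  have ys: "ys \<noteq> []" using l Cons by auto
  then have "last xs = last ys" "last ys \<in> set ys" using Cons by auto
  then show ?thesis using d Cons by auto
qed simp

lemma ep_nthD: "ep E vs \<Longrightarrow> Suc i < length vs \<Longrightarrow> {vs ! i, vs ! Suc i} \<in> E"
  by (simp add: ep_nth)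

lemma fpath_max_first:
  assumes fp: "fpath E x ys z" and u: "u \<in> set (x # ys @ [z])" and le: "x \<le> u"
  shows "u = x"
  using fpath_first_max[OF fp u] le by fastforce

lemma a_has_nbr:
  assumes fW: "finite W" and c3: "card W \<ge> 3" and f: "is_facet W F"
  shows "\<exists>x. {Min W, x} \<in> F \<and> x \<noteq> Max W"
proof (rule ccontr)
  assume no: "\<not> (\<exists>x. {Min W, x} \<in> F \<and> x \<noteq> Max W)"
  define a b where "a = Min W" and "b = Max W"
  have wne: "W \<noteq> {}" using c3 by auto
  have aW: "a \<in> W" and bW: "b \<in> W" using fW wne by (auto simp: a_def b_def)
  have rng: "\<forall>v\<in>W. a \<le> v \<and> v \<le> b" using fW by (auto simp: a_def b_def)
  obtain m where m: "m \<in> W" "m \<noteq> a" "m \<noteq> b"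
  proof -
    have "\<not> W \<subseteq> {a, b}"
    proof
      assume "W \<subseteq> {a, b}"
      then have "card W \<le> card {a, b}" by (intro card_mono) auto
      also have "\<dots> \<le> 2" by (simp add: card_insert_le_m1)
      finally show False using c3 by simp
    qed
    then show ?thesis using that by blast
  qed
  have am: "a < m" using rng m by (metis le_neq_implies_less)
  have nam: "{a, m} \<notin> F" using no m by (auto simp: a_def b_def)
  have K: "{a, m} \<in> KEdges W" using aW m by (auto simp: KEdges_iff)
  have sub: "F \<subseteq> KEdges W" using f by (rule facet_sub)
  have nbrs: "\<And>y. {a, y} \<in> F \<Longrightarrow> y = b" using no by (auto simp: a_def b_def)
  have "nf (insert {a, m} F)" unfolding nf_def
  proof
    assume "\<exists>x ys z. fpath (insert {a, m} F) x ys z"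
    then obtain x ys z where fp: "fpath (insert {a, m} F) x ys z" by blast
    have nfp: "\<not> fpath F x ys z" using facet_nf[OF f] by (auto simp: nf_def)
    define vs where "vs = x # ys @ [z]"
    note P = fpath_props[OF fp, folded vs_def]
    have inW: "set vs \<subseteq> W" using fpath_verts[OF fp] sub K by (auto simp: vs_def)
    have "\<not> ep F vs" using nfp fp unfolding fpath_def vs_def by blast
    then obtain i where i: "Suc i < length vs" "{vs ! i, vs ! Suc i} \<notin> F" by (auto simp: ep_nth)
    have "{vs ! i, vs ! Suc i} \<in> insert {a, m} F" using P(2) i(1) by (simp add: ep_nth)
    then have e: "{vs ! i, vs ! Suc i} = {a, m}" using i(2) by blast
    obtain j where j: "j < length vs" "vs ! j = a" using e i(1)
      by (metis Suc_lessD doubleton_eq_iff)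
    have lv: "length vs = length ys + 2" by (simp add: vs_def)
    have v0: "vs ! 0 = x" by (simp add: vs_def)
    have vl: "vs ! (length vs - 1) = z" by (simp add: vs_def nth_append)
    have zW: "z \<in> W" using inW by (simp add: vs_def)
    have hdW: "hd ys \<in> W" using inW P(7) by (auto simp: vs_def)
    have "x \<noteq> a" using P(4) rng zW by (metis leD)
    then have j0: "j \<noteq> 0" using j v0 by (cases j) auto
    have "z \<noteq> a"
    proof -
      have "hd ys < z" using P(5,7) by simp
      then show ?thesis using rng hdW by (metis leD)
    qed
    then have jl: "j \<noteq> length vs - 1" using j vl by auto
    define p q where "p = vs ! (j - 1)" and "q = vs ! Suc j"
    have sj: "Suc (j - 1) = j" using j0 by simp
    have jl2: "Suc j < length vs" using j jl by simp
    have ep1: "{p, a} \<in> insert {a, m} F"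
      using ep_nthD[OF P(2), of "j - 1"] j sj by (simp add: p_def)
    have ep2: "{a, q} \<in> insert {a, m} F" using ep_nthD[OF P(2) jl2] j(2) by (simp add: q_def)
    have pq: "p \<in> {m, b}" "q \<in> {m, b}"
    proof -
      show "p \<in> {m, b}"
      proof (cases "{p, a} = {a, m}")
        case True then show ?thesis by (auto simp: doubleton_eq_iff)
      next
        case False then have "{a, p} \<in> F" using ep1 by (auto simp: insert_commute)
        then show ?thesis using nbrs by auto
      qed
      show "q \<in> {m, b}"
      proof (cases "{a, q} = {a, m}")
        case True then show ?thesis by (auto simp: doubleton_eq_iff)
      next
        case False then have "{a, q} \<in> F" using ep2 by auto
        then show ?thesis using nbrs by auto
      qed
    qed
    have "p \<noteq> q"
    proof -
      have "j - 1 < length vs" using j by simp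
      then show ?thesis using nth_eq_iff_index_eq[OF P(1) _ jl2] j0 by (auto simp: p_def q_def)
    qed
    then have "p = b \<or> q = b" using pq by auto
    moreover have bx: "b \<in> set vs \<Longrightarrow> b = x"
      using fpath_max_first[OF fp] rng inW by (auto simp: vs_def)
    moreover have "p \<in> set vs" "q \<in> set vs" using j jl2 by (auto simp: p_def q_def)
    moreover have l0: "0 < length vs" by (simp add: vs_def)
    moreover have "q \<noteq> x"
      using nth_eq_iff_index_eq[OF P(1) jl2 l0] v0 by (auto simp: q_def)
    ultimately have "p = x" by auto
    moreover have jm: "j - 1 < length vs" using j by simp
    ultimately have "j - 1 = 0"
      using nth_eq_iff_index_eq[OF P(1) jm l0] v0 by (auto simp: p_def)
    then have "j = 1" using j0 by simp
    then have "hd ys = a" using j P(7) by (cases ys) (auto simp: vs_def)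
    moreover have "last ys \<in> W" using inW P(7) by (auto simp: vs_def)
    ultimately show False using P(6) rng by (metis leD)
  qed
  then show False using f K nam by (auto simp: facet_max)
qed


lemma facet_split:
  assumes fW: "finite W" and c3: "card W \<ge> 3" and f: "is_facet W F"
  shows "\<exists>V1 V2. gsplit W V1 V2 \<and> (\<forall>e\<in>F. e = {Min W, Max W} \<or> e \<subseteq> V1 \<or> e \<subseteq> V2)"
proof -
  define a b where "a = Min W" and "b = Max W"
  have wne: "W \<noteq> {}" using c3 by auto
  have aW: "a \<in> W" and bW: "b \<in> W" using fW wne by (auto simp: a_def b_def)
  have rng: "\<forall>v\<in>W. a \<le> v \<and> v \<le> b" using fW by (auto simp: a_def b_def)
  have sub: "F \<subseteq> KEdges W" using f by (rule facet_sub)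
  have nfF: "nf F" using f by (rule facet_nf)
  define N where "N = {x. {a, x} \<in> F \<and> x \<noteq> b}"
  have Nne: "N \<noteq> {}" using a_has_nbr[OF fW c3 f] by (auto simp: N_def a_def b_def)
  have NW: "N \<subseteq> W" using sub by (auto simp: N_def dest: KEdges_mem)
  have fN: "finite N" using NW fW finite_subset by blast
  define c where "c = Max N"
  have cN: "c \<in> N" using Nne fN by (simp add: c_def)
  have Nle: "\<forall>x\<in>N. x \<le> c" using fN by (simp add: c_def)
  have acF: "{a, c} \<in> F" and cb: "c \<noteq> b" using cN by (auto simp: N_def)
  have cW: "c \<in> W" and ca: "a \<noteq> c" using acF sub KEdges_mem by blast+
  have ac: "a < c" using rng cW ca by (metis le_neq_implies_less)
  have cbl: "c < b" using rng cW cb by (metis le_neq_implies_less)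
  define S where "S = W - {b, c}"
  define Comp where "Comp = {v. reach F S a v}"
  have aS: "a \<in> S" using aW ac cbl by (auto simp: S_def)
  have CompS: "Comp \<subseteq> S" using reach_in aS by (auto simp: Comp_def)
  have aComp: "a \<in> Comp" by (simp add: Comp_def)
  have lt: "v < c" if vC: "v \<in> Comp" for v
  proof (rule ccontr)
    assume "\<not> v < c"
    moreover have "v \<noteq> c" using vC CompS by (auto simp: S_def)
    ultimately have cv: "c < v" by simp
    obtain p where p: "p \<noteq> []" "hd p = a" "last p = v" "distinct p" "ep F p" "set p \<subseteq> S"
      using reach_path[of F S a v] vC aS by (auto simp: Comp_def)
    have "\<exists>w\<in>set p. c < w" using p(1,3) cv by (metis last_in_set)
    then obtain q w r where sp: "p = q @ w # r" and cw: "c < w" and qle: "\<forall>u\<in>set q. \<not> c < u"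
      using split_list_first_prop[of p "\<lambda>u. c < u"] by blast
    have qS: "set q \<subseteq> S" using p(6) sp by auto
    have qlt: "\<forall>u\<in>set q. u < c"
    proof
      fix u assume u: "u \<in> set q"
      then have "u \<noteq> c" using qS by (auto simp: S_def)
      then show "u < c" using qle u by (meson le_neq_implies_less not_le)
    qed
    have qne: "q \<noteq> []"
    proof
      assume "q = []"
      then have "w = a" using p(2) sp by simp
      then show False using cw ac by simp
    qed
    have hq: "hd q = a" using p(2) sp qne by simp
    have epq: "ep F (q @ [w])" using p(5) sp by (auto simp: ep_append ep_Cons)
    then have lqw: "{last q, w} \<in> F" using qne by (simp add: ep_append)
    have epq2: "ep F q" using epq by (simp add: ep_append)
    have dq: "distinct q" "w \<notin> set q" using p(4) sp by auto
    have wS: "w \<in> S" using p(6) sp by auto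
    have lq: "length q \<ge> 2"
    proof (rule ccontr)
      assume "\<not> length q \<ge> 2"
      moreover have "length q \<noteq> 0" using qne by simp
      ultimately have "length q = 1" by linarith
      then have "q = [a]" using hq by (cases q) auto
      then have "{a, w} \<in> F" using lqw by simp
      moreover have "w \<noteq> b" using wS by (auto simp: S_def)
      ultimately have "w \<in> N" by (simp add: N_def)
      then show False using Nle cw by auto
    qed
    have lqa: "last q \<noteq> a"
    proof
      assume "last q = a"
      then have "hd q = last q" using hq by simp
      then show False using distinct_hd_last[OF dq(1) lq] by simp
    qed
    have "fpath F w (rev q) c"
      unfolding fpath_def
    proof (intro conjI)
      show "distinct (w # rev q @ [c])" using dq qS cw by (auto simp: S_def)
      show "ep F (w # rev q @ [c])"
        using epq2 lqw acF qne hq by (auto simp: ep_Cons ep_append ep_rev hd_rev last_rev insert_commute)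
      show "2 \<le> length (rev q)" using lq by simp
      show "c < w" by (rule cw)
      show "\<forall>v\<in>set (rev q). v < c" using qlt by simp
      have "last q \<in> set q" using qne by (rule last_in_set)
      then have "last q \<in> W" using qS by (auto simp: S_def)
      then show "last (rev q) < hd (rev q)" using hq lqa rng qne
        by (simp add: hd_rev last_rev) (metis le_neq_implies_less)
    qed
    then show False using nfF by (auto simp: nf_def)
  qed
  have bedge: "u = a" if uC: "u \<in> Comp" and ub: "{u, b} \<in> F" for u
  proof (rule ccontr)
    assume ua: "u \<noteq> a"
    obtain p where p: "p \<noteq> []" "hd p = a" "last p = u" "distinct p" "ep F p" "set p \<subseteq> S"
      using reach_path[of F S a u] uC aS by (auto simp: Comp_def)
    have pC: "set p \<subseteq> Comp" using path_reach_all[OF p(5) p(6) p(1)] p(2) by (auto simp: Comp_def)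
    have lp: "length p \<ge> 2"
    proof (rule ccontr)
      assume "\<not> length p \<ge> 2"
      moreover have "length p \<noteq> 0" using p(1) by simp
      ultimately have "length p = 1" by linarith
      then have "hd p = last p" by (cases p) auto
      then show False using p ua by simp
    qed
    have "fpath F b (rev p) c"
      unfolding fpath_def
    proof (intro conjI)
      show "distinct (b # rev p @ [c])" using p(4,6) cbl by (auto simp: S_def)
      show "ep F (b # rev p @ [c])"
        using p ub acF by (auto simp: ep_Cons ep_append ep_rev hd_rev last_rev insert_commute)
      show "2 \<le> length (rev p)" using lp by simp
      show "c < b" by (rule cbl)
      show "\<forall>v\<in>set (rev p). v < c" using pC lt by auto
      have "u \<in> W" using uC CompS by (auto simp: S_def)
      then show "last (rev p) < hd (rev p)" using p(1,2,3) ua rng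
        by (simp add: hd_rev last_rev) (metis le_neq_implies_less)
    qed
    then show False using nfF by (auto simp: nf_def)
  qed
  have nbr: "v \<in> Comp \<or> v = c \<or> v = b" if uC: "u \<in> Comp" and uv: "{u, v} \<in> F" for u v
  proof -
    have vW: "v \<in> W" using uv sub KEdges_mem by blast
    show ?thesis
    proof (cases "v = c \<or> v = b")
      case True then show ?thesis by blast
    next
      case False
      then have "v \<in> S" using vW by (auto simp: S_def)
      moreover have "u \<in> S" using uC CompS by blast
      ultimately have "reach F S a v" using uC uv reach_step[of F S a u v] by (auto simp: Comp_def)
      then show ?thesis by (simp add: Comp_def)
    qed
  qed
  define V1 V2 where "V1 = insert c Comp" and "V2 = W - Comp"
  have CompW: "Comp \<subseteq> W" using CompS by (auto simp: S_def)
  have fV1: "finite V1" using CompW fW cW by (auto simp: V1_def intro: finite_subset)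
  have mV1: "Max V1 = c" using fV1 by (intro Max_eqI) (auto simp: V1_def dest: lt)
  have cC: "c \<notin> Comp" and bC: "b \<notin> Comp" using CompS by (auto simp: S_def)
  have g: "gsplit W V1 V2" unfolding gsplit_def
  proof (intro conjI)
    show "finite W" by (rule fW)
    show "V1 \<union> V2 = W" using CompW cW by (auto simp: V1_def V2_def)
    show "V1 \<inter> V2 = {Max V1}" using mV1 cC cW by (auto simp: V1_def V2_def)
    show "Min W \<in> V1" using aComp by (simp add: V1_def a_def[symmetric])
    show "Max W \<in> V2" using bC bW by (simp add: V2_def b_def[symmetric])
    show "Max W \<notin> V1" using bC cb by (simp add: V1_def b_def[symmetric])
    have "{a, c} \<subseteq> V1" using aComp by (auto simp: V1_def)
    then have "card {a, c} \<le> card V1" using fV1 by (intro card_mono)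
    then show "2 \<le> card V1" using ca by simp
  qed
  have "\<forall>e\<in>F. e = {Min W, Max W} \<or> e \<subseteq> V1 \<or> e \<subseteq> V2"
  proof
    fix e assume eF: "e \<in> F"
    then obtain u v where e: "e = {u, v}" "u \<in> W" "v \<in> W" using sub by (auto elim!: KEdgesE)
    show "e = {Min W, Max W} \<or> e \<subseteq> V1 \<or> e \<subseteq> V2"
    proof (cases "u \<in> Comp")
      case True
      have "v \<in> Comp \<or> v = c \<or> v = b" using nbr[OF True] eF e by simp
      moreover have "v = b \<Longrightarrow> u = a" using bedge[OF True] eF e by simp
      ultimately show ?thesis using True e by (auto simp: V1_def a_def b_def)
    next
      case uC: False
      show ?thesis
      proof (cases "v \<in> Comp")
        case True
        have "{v, u} \<in> F" using eF e by (simp add: insert_commute)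
        then have "u \<in> Comp \<or> u = c \<or> u = b" using nbr[OF True] by simp
        moreover have "u = b \<Longrightarrow> v = a" using bedge[OF True] eF e by (simp add: insert_commute)
        ultimately show ?thesis using True uC e by (auto simp: V1_def a_def b_def)
      next
        case False
        then show ?thesis using uC e by (auto simp: V2_def)
      qed
    qed
  qed
  then show ?thesis using g by blast
qed

lemma KEdges_two: "e \<in> KEdges V \<Longrightarrow> e \<subseteq> {c} \<Longrightarrow> False"
  by (auto elim!: KEdgesE)

lemma gsplit_cardW: "gsplit W V1 V2 \<Longrightarrow> card W \<ge> 2"
proof -
  assume g: "gsplit W V1 V2"
  have "card V1 \<le> card W" by (rule card_mono[OF gsplit_props(16)[OF g] gsplit_props(3)[OF g]])
  then show ?thesis using gsplit_props(25)[OF g] by simp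
qed

lemma split_facets:
  assumes g: "gsplit W V1 V2" and f: "is_facet W F"
    and epr: "\<forall>e\<in>F. e = {Min W, Max W} \<or> e \<subseteq> V1 \<or> e \<subseteq> V2"
  shows "is_facet V1 {e \<in> F. e \<subseteq> V1}" "is_facet V2 {e \<in> F. e \<subseteq> V2}"
    "F = {e \<in> F. e \<subseteq> V1} \<union> {e \<in> F. e \<subseteq> V2} \<union> {{Min W, Max W}}"
    "{e \<in> F. e \<subseteq> V1} \<inter> {e \<in> F. e \<subseteq> V2} = {}"
    "{Min W, Max W} \<notin> {e \<in> F. e \<subseteq> V1}" "{Min W, Max W} \<notin> {e \<in> F. e \<subseteq> V2}"
proof -
  note G = gsplit_props[OF g]
  define F1 F2 where "F1 = {e \<in> F. e \<subseteq> V1}" and "F2 = {e \<in> F. e \<subseteq> V2}"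
  have sub: "F \<subseteq> KEdges W" using f by (rule facet_sub)
  have nfF: "nf F" using f by (rule facet_nf)
  have abF: "{Min W, Max W} \<in> F" using ab_in_facet[OF G(16) gsplit_cardW[OF g] f] .
  have K1: "F1 \<subseteq> KEdges V1" using sub by (auto simp: F1_def KEdges_sub_iff)
  have K2: "F2 \<subseteq> KEdges V2" using sub by (auto simp: F2_def KEdges_sub_iff)
  show dis: "F1 \<inter> F2 = {}" unfolding F1_def F2_def
  proof (rule ccontr)
    assume "{e \<in> F. e \<subseteq> V1} \<inter> {e \<in> F. e \<subseteq> V2} \<noteq> {}"
    then obtain e where e: "e \<in> F" "e \<subseteq> V1 \<inter> V2" by blast
    have "e \<in> KEdges W" using sub e(1) by blast
    moreover have "e \<subseteq> {Max V1}" using G(20) e(2) by simp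
    ultimately show False by (rule KEdges_two)
  qed
  show n1: "{Min W, Max W} \<notin> F1" using G(24) by (auto simp: F1_def)
  show n2: "{Min W, Max W} \<notin> F2" using G(10) by (auto simp: F2_def)
  show FU: "F = F1 \<union> F2 \<union> {{Min W, Max W}}" using epr abF by (auto simp: F1_def F2_def)
  show "is_facet V1 F1"
    unfolding facet_max
  proof (intro conjI ballI impI)
    have "F1 \<subseteq> F" by (auto simp: F1_def)
    then show "is_face V1 F1" using K1 nf_mono[OF nfF] by (auto simp: is_face_nf)
    fix e assume eK: "e \<in> KEdges V1" and eF1: "e \<notin> F1"
    have eW: "e \<in> KEdges W" using eK KEdges_mono[OF G(3)] by blast
    have eF: "e \<notin> F" using eF1 eK by (auto simp: F1_def dest: KEdges_sub)
    have nn: "\<not> nf (insert e F)" using f eW eF by (auto simp: facet_max)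
    show "\<not> nf (insert e F1)"
    proof
      assume ne: "nf (insert e F1)"
      have "nf (insert e F)" unfolding nf_def
      proof
        assume "\<exists>x ys z. fpath (insert e F) x ys z"
        then obtain x ys z where fp: "fpath (insert e F) x ys z" by blast
        have "insert e F = insert {Min W, Max W} (insert e F1 \<union> F2)" using FU by auto
        then have fp': "fpath (insert {Min W, Max W} (insert e F1 \<union> F2)) x ys z" using fp by simp
        have K1': "insert e F1 \<subseteq> KEdges V1" using K1 eK by blast
        have "F2 \<subseteq> F" by (auto simp: F2_def)
        then have "nf F2" using nf_mono[OF nfF] by blast
        then show False using glue_fpath[OF g K1' K2 fp'] ne by (auto simp: nf_def)
      qed
      then show False using nn by simp
    qed
  qed
  show "is_facet V2 F2"
    unfolding facet_max
  proof (intro conjI ballI impI)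
    have "F2 \<subseteq> F" by (auto simp: F2_def)
    then show "is_face V2 F2" using K2 nf_mono[OF nfF] by (auto simp: is_face_nf)
    fix e assume eK: "e \<in> KEdges V2" and eF2: "e \<notin> F2"
    have eW: "e \<in> KEdges W" using eK KEdges_mono[OF G(4)] by blast
    have eF: "e \<notin> F" using eF2 eK by (auto simp: F2_def dest: KEdges_sub)
    have nn: "\<not> nf (insert e F)" using f eW eF by (auto simp: facet_max)
    show "\<not> nf (insert e F2)"
    proof
      assume ne: "nf (insert e F2)"
      have "nf (insert e F)" unfolding nf_def
      proof
        assume "\<exists>x ys z. fpath (insert e F) x ys z"
        then obtain x ys z where fp: "fpath (insert e F) x ys z" by blast
        have "insert e F = insert {Min W, Max W} (F1 \<union> insert e F2)" using FU by auto
        then have fp': "fpath (insert {Min W, Max W} (F1 \<union> insert e F2)) x ys z" using fp by simp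
        have K2': "insert e F2 \<subseteq> KEdges V2" using K2 eK by blast
        have "F1 \<subseteq> F" by (auto simp: F1_def)
        then have "nf F1" using nf_mono[OF nfF] by blast
        then show False using glue_fpath[OF g K1 K2' fp'] ne by (auto simp: nf_def)
      qed
      then show False using nn by simp
    qed
  qed
qed


lemma facet_decomp:
  assumes fW: "finite W" and c3: "card W \<ge> 3" and f: "is_facet W F"
  obtains V1 V2 F1 F2 where "gsplit W V1 V2" "is_facet V1 F1" "is_facet V2 F2"
    "F = F1 \<union> F2 \<union> {{Min W, Max W}}" "F1 \<inter> F2 = {}" "{Min W, Max W} \<notin> F1" "{Min W, Max W} \<notin> F2"
proof -
  obtain V1 V2 where g: "gsplit W V1 V2" and epr: "\<forall>e\<in>F. e = {Min W, Max W} \<or> e \<subseteq> V1 \<or> e \<subseteq> V2"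
    using facet_split[OF fW c3 f] by blast
  note sf = split_facets[OF g f epr]
  show ?thesis by (rule that[OF g sf(1) sf(2) sf(3) sf(4) sf(5) sf(6)])
qed

lemma gsplit_card_less: "gsplit W V1 V2 \<Longrightarrow> card V1 < card W \<and> card V2 < card W"
proof -
  assume g: "gsplit W V1 V2"
  note G = gsplit_props[OF g]
  have "V1 \<subset> W" using G(3,18,24) by blast
  moreover have "V2 \<subset> W" using G(4,17,10) by blast
  ultimately show ?thesis using G(16) by (simp add: psubset_card_mono)
qed

lemma dtree_of_step':
  assumes g: "gsplit W V1 V2" and f1: "is_facet V1 F1" and f2: "is_facet V2 F2"
    and f: "is_facet W (F1 \<union> F2 \<union> {{Min W, Max W}})"
    and d: "F1 \<inter> F2 = {}" and n1: "{Min W, Max W} \<notin> F1" and n2: "{Min W, Max W} \<notin> F2"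
    and t1: "dtree_of V1 F1 T1" and t2: "dtree_of V2 F2 T2"
  shows "dtree_of W (F1 \<union> F2 \<union> {{Min W, Max W}}) (Node W T1 T2)"
proof -
  note G = gsplit_props[OF g]
  have v1: "verts F1 = V1" using facet_verts[OF G(1) G(25) f1] .
  have v2: "verts F2 = V2" using facet_verts[OF G(2) G(13) f2] .
  have c3: "card W \<ge> 3"
  proof -
    have "V1 \<subset> W" using G(3,18,24) by blast
    then have "card V1 < card W" using G(16) by (simp add: psubset_card_mono)
    then show ?thesis using G(25) by simp
  qed
  show ?thesis
    apply (rule dtree_of.step[OF G(16) c3 f refl d n1 n2])
    using f1 apply (simp add: v1)
    using f2 apply (simp add: v2)
    using G(21) apply (simp add: v1 v2)
    using G(20) apply (simp add: v1 v2)
    using G(22) apply (simp add: v1)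
    using G(23) apply (simp add: v2)
    using t1 apply (simp add: v1)
    using t2 apply (simp add: v2)
    done
qed

lemma dtree_of_exists:
  "finite W \<Longrightarrow> card W \<ge> 2 \<Longrightarrow> is_facet W F \<Longrightarrow> \<exists>T. dtree_of W F T"
proof (induction "card W" arbitrary: W F rule: less_induct)
  case less
  show ?case
  proof (cases "card W = 2")
    case True then show ?thesis using less dtree_of.base by blast
  next
    case False
    then have c3: "card W \<ge> 3" using less by simp
    obtain V1 V2 F1 F2 where g: "gsplit W V1 V2" and f1: "is_facet V1 F1" and f2: "is_facet V2 F2"
      and FU: "F = F1 \<union> F2 \<union> {{Min W, Max W}}" and d: "F1 \<inter> F2 = {}"
      and n1: "{Min W, Max W} \<notin> F1" and n2: "{Min W, Max W} \<notin> F2"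
      using facet_decomp[OF less(2) c3 less(4)] by blast
    note G = gsplit_props[OF g]
    have cl: "card V1 < card W" "card V2 < card W" using gsplit_card_less[OF g] by auto
    obtain T1 where t1: "dtree_of V1 F1 T1" using less(1)[OF cl(1) G(1) G(25) f1] by blast
    obtain T2 where t2: "dtree_of V2 F2 T2" using less(1)[OF cl(2) G(2) G(13) f2] by blast
    have "is_facet W (F1 \<union> F2 \<union> {{Min W, Max W}})" using less(4) FU by simp
    from dtree_of_step'[OF g f1 f2 this d n1 n2 t1 t2] show ?thesis using FU by auto
  qed
qed

definition CMi :: "nat set \<Rightarrow> nat set set \<Rightarrow> bool" where
  "CMi W F \<longleftrightarrow> (\<forall>u \<in> W - {Max W}. reach F (W - {Max W}) u (Min W))"

definition RRi :: "nat set \<Rightarrow> nat set set \<Rightarrow> bool" where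
  "RRi W F \<longleftrightarrow> (\<forall>u \<in> W. \<forall>t. u < t \<and> t < Max W \<longrightarrow>
      (\<exists>p w. reach F {v \<in> W. v < t} u p \<and> {p, w} \<in> F \<and> t < w))"

lemma glue_CM:
  assumes g: "gsplit W V1 V2" and ac: "{Min W, Max V1} \<in> F1"
    and c1: "CMi V1 F1" and c2: "CMi V2 F2"
  shows "CMi W (F1 \<union> F2 \<union> {{Min W, Max W}})"
  unfolding CMi_def
proof
  note G = gsplit_props[OF g]
  define F where "F = F1 \<union> F2 \<union> {{Min W, Max W}}"
  define S where "S = W - {Max W}"
  have FF1: "F1 \<subseteq> F" and FF2: "F2 \<subseteq> F" by (auto simp: F_def)
  have S1: "V1 - {Max V1} \<subseteq> S" and S2: "V2 - {Max V2} \<subseteq> S" using G(3,4,12,24) by (auto simp: S_def)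
  have cS: "Max V1 \<in> S" and aS: "Min W \<in> S" using G(3,5,9,17,19,22) by (auto simp: S_def)
  have ca: "reach F S (Max V1) (Min W)"
    using reach_edge[of "Max V1" "Min W" F S] ac FF1 cS aS by (auto simp: insert_commute)
  fix u assume u: "u \<in> W - {Max W}"
  have "reach F S u (Min W)"
  proof (cases "u \<in> V1")
    case True
    show ?thesis
    proof (cases "u = Max V1")
      case True then show ?thesis using ca by simp
    next
      case False
      then have "reach F1 (V1 - {Max V1}) u (Min V1)" using c1 \<open>u \<in> V1\<close> by (auto simp: CMi_def)
      then show ?thesis using reach_mono[OF _ FF1 S1] G(11) by simp
    qed
  next
    case False
    then have uV2: "u \<in> V2 - {Max V2}" using u G(21,12) by auto
    have cV2: "Max V1 \<in> V2 - {Max V2}" using G(6,9,12) by auto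
    have "reach F2 (V2 - {Max V2}) u (Min V2)" using c2 uV2 by (auto simp: CMi_def)
    then have r1: "reach F S u (Min V2)" by (rule reach_mono[OF _ FF2 S2])
    have "reach F2 (V2 - {Max V2}) (Max V1) (Min V2)" using c2 cV2 by (auto simp: CMi_def)
    then have "reach F S (Max V1) (Min V2)" by (rule reach_mono[OF _ FF2 S2])
    then have r2: "reach F S (Min V2) (Max V1)" by (rule reach_sym)
    show ?thesis using reach_trans[OF reach_trans[OF r1 r2] ca] .
  qed
  then show "reach (F1 \<union> F2 \<union> {{Min W, Max W}}) (W - {Max W}) u (Min W)"
    by (simp add: F_def S_def)
qed

lemma glue_RR:
  assumes g: "gsplit W V1 V2" and c1: "CMi V1 F1" and r1: "RRi V1 F1" and r2: "RRi V2 F2"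
  shows "RRi W (F1 \<union> F2 \<union> {{Min W, Max W}})"
  unfolding RRi_def
proof (intro ballI allI impI)
  note G = gsplit_props[OF g]
  define F where "F = F1 \<union> F2 \<union> {{Min W, Max W}}"
  have FF1: "F1 \<subseteq> F" and FF2: "F2 \<subseteq> F" by (auto simp: F_def)
  fix u t assume u: "u \<in> W" and ut: "u < t \<and> t < Max W"
  have "\<exists>p w. reach F {v \<in> W. v < t} u p \<and> {p, w} \<in> F \<and> t < w"
  proof (cases "u \<in> V2")
    case True
    then obtain p w where pw: "reach F2 {v \<in> V2. v < t} u p" "{p, w} \<in> F2" "t < w"
      using r2[unfolded RRi_def, rule_format, of u t] True ut G(12) by auto
    have "{v \<in> V2. v < t} \<subseteq> {v \<in> W. v < t}" using G(4) by auto
    then have "reach F {v \<in> W. v < t} u p" by (rule reach_mono[OF pw(1) FF2])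
    then show ?thesis using pw FF2 by blast
  next
    case False
    then have uV1: "u \<in> V1" "u \<noteq> Max V1" using u G(21,6) by auto
    show ?thesis
    proof (cases "t < Max V1")
      case True
      then obtain p w where pw: "reach F1 {v \<in> V1. v < t} u p" "{p, w} \<in> F1" "t < w"
        using r1[unfolded RRi_def, rule_format, of u t] True ut uV1 by auto
      have "{v \<in> V1. v < t} \<subseteq> {v \<in> W. v < t}" using G(3) by auto
      then have "reach F {v \<in> W. v < t} u p" by (rule reach_mono[OF pw(1) FF1])
      then show ?thesis using pw FF1 by blast
    next
      case False
      have "reach F1 (V1 - {Max V1}) u (Min V1)" using c1 uV1 by (auto simp: CMi_def)
      moreover have "V1 - {Max V1} \<subseteq> {v \<in> W. v < t}"
        using G(3,7) False by (auto simp: le_neq_implies_less)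
      ultimately have "reach F {v \<in> W. v < t} u (Min V1)" using reach_mono[OF _ FF1] by blast
      then have "reach F {v \<in> W. v < t} u (Min W)" using G(11) by simp
      moreover have "{Min W, Max W} \<in> F" by (simp add: F_def)
      ultimately show ?thesis using ut by blast
    qed
  qed
  then show "\<exists>p w. reach (F1 \<union> F2 \<union> {{Min W, Max W}}) {v \<in> W. v < t} u p
           \<and> {p, w} \<in> F1 \<union> F2 \<union> {{Min W, Max W}} \<and> t < w" by (simp add: F_def)
qed


lemma card2_eq: "finite W \<Longrightarrow> card W = 2 \<Longrightarrow> W = {Min W, Max W}"
proof -
  assume fW: "finite W" and c: "card W = 2"
  have ne: "W \<noteq> {}" using c by auto
  have sub: "{Min W, Max W} \<subseteq> W" using fW ne by auto
  obtain x y where xy: "x \<in> W" "y \<in> W" "x \<noteq> y" using two_elems[of W] c by auto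
  have "Min W \<noteq> Max W"
  proof
    assume "Min W = Max W"
    moreover have "Min W \<le> x" "Min W \<le> y" using xy fW by auto
    ultimately have "Max W \<le> x" "Max W \<le> y" by simp_all
    moreover have "x \<le> Max W" "y \<le> Max W" using xy fW by auto
    ultimately have "x = Max W" "y = Max W" by (auto intro: antisym)
    then have "x = y" by simp
    then show False using xy by simp
  qed
  then have "card {Min W, Max W} = 2" by simp
  then show ?thesis using card_subset_eq[OF fW sub] c by simp
qed

lemma card2_cases: "finite W \<Longrightarrow> card W = 2 \<Longrightarrow> u \<in> W \<Longrightarrow> u = Min W \<or> u = Max W"
proof -
  assume a: "finite W" "card W = 2" "u \<in> W"
  have eq: "{Min W, Max W} = W" using card2_eq[OF a(1) a(2)] by (rule sym)
  have "u \<in> {Min W, Max W}" using \<open>u \<in> W\<close> eq by simp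
  then show ?thesis by blast
qed

lemma facet_inv:
  "finite W \<Longrightarrow> card W \<ge> 2 \<Longrightarrow> is_facet W F \<Longrightarrow> CMi W F \<and> RRi W F"
proof (induction "card W" arbitrary: W F rule: less_induct)
  case less
  have fW: "finite W" and f: "is_facet W F" using less by auto
  show ?case
  proof (cases "card W = 2")
    case True
    have W: "\<forall>u\<in>W. u = Min W \<or> u = Max W" using card2_cases[OF fW True] by blast
    have ab: "{Min W, Max W} \<in> F" using ab_in_facet[OF fW _ f] True by simp
    have CM: "CMi W F" unfolding CMi_def
    proof
      fix u assume "u \<in> W - {Max W}"
      then have "u = Min W" using W by auto
      then show "reach F (W - {Max W}) u (Min W)" by simp
    qed
    have RR: "RRi W F" unfolding RRi_def
    proof (intro ballI allI impI)
      fix u t assume u: "u \<in> W" and ut: "u < t \<and> t < Max W"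
      have "u \<noteq> Max W" using ut by simp
      then have "u = Min W" using W u by blast
      then show "\<exists>p w. reach F {v \<in> W. v < t} u p \<and> {p, w} \<in> F \<and> t < w" using ab ut by blast
    qed
    show ?thesis using CM RR by simp
  next
    case False
    then have c3: "card W \<ge> 3" using less by simp
    obtain V1 V2 F1 F2 where g: "gsplit W V1 V2" and f1: "is_facet V1 F1" and f2: "is_facet V2 F2"
      and FU: "F = F1 \<union> F2 \<union> {{Min W, Max W}}"
      by (rule facet_decomp[OF fW c3 f])
    note G = gsplit_props[OF g]
    have cl: "card V1 < card W" "card V2 < card W" using gsplit_card_less[OF g] by auto
    have i1: "CMi V1 F1 \<and> RRi V1 F1" using less(1)[OF cl(1) G(1) G(25) f1] .
    have i2: "CMi V2 F2 \<and> RRi V2 F2" using less(1)[OF cl(2) G(2) G(13) f2] .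
    have ac: "{Min W, Max V1} \<in> F1" using ab_in_facet[OF G(1) G(25) f1] G(11) by simp
    show ?thesis using glue_CM[OF g ac] glue_RR[OF g] i1 i2 FU by simp
  qed
qed

lemma cross_fpath:
  assumes g: "gsplit W V1 V2" and f1: "is_facet V1 F1" and f2: "is_facet V2 F2"
    and x: "x \<in> V1" "x \<noteq> Max V1" and y: "y \<in> V2" "y \<noteq> Max V1"
    and xy: "{x, y} \<noteq> {Min W, Max W}"
  shows "\<exists>xx ys zz. fpath (insert {x, y} (F1 \<union> F2 \<union> {{Min W, Max W}})) xx ys zz"
proof -
  note G = gsplit_props[OF g]
  define a b c where "a = Min W" and "b = Max W" and "c = Max V1"
  define F where "F = insert {x, y} (F1 \<union> F2 \<union> {{Min W, Max W}})"
  have FF1: "F1 \<subseteq> F" and FF2: "F2 \<subseteq> F" and xyF: "{x, y} \<in> F" by (auto simp: F_def)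
  have CM1: "CMi V1 F1" using facet_inv[OF G(1) G(25) f1] by simp
  have RR2: "RRi V2 F2" using facet_inv[OF G(2) G(13) f2] by simp
  have acF: "{a, c} \<in> F" using ab_in_facet[OF G(1) G(25) f1] G(11) FF1 by (auto simp: a_def c_def)
  have K2: "F2 \<subseteq> KEdges V2" using f2 by (rule facet_sub)
  have xV2: "x \<notin> V2" using x G(20) by auto
  have yV1: "y \<notin> V1" using y G(20) by auto
  have aV1: "a \<in> V1" and aV2: "a \<notin> V2" using G(22,10) by (auto simp: a_def)
  have le1: "\<forall>v\<in>V1. v \<le> c" using G(7) by (simp add: c_def)
  have amin: "\<forall>v\<in>W. a \<le> v" using G(28) by (simp add: a_def)
  have ac: "a < c" using G(8) by (simp add: a_def c_def)
  have cb: "c < b" using G(9) by (simp add: b_def c_def)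
  have xlt: "x < c" using le1 x by (auto simp: c_def le_neq_implies_less)
  have xr: "reach F1 (V1 - {c}) x a" using CM1 x G(11) by (auto simp: CMi_def a_def c_def)
  obtain r where r: "r \<noteq> []" "hd r = x" "last r = a" "distinct r" "ep F1 r" "set r \<subseteq> V1 - {c}"
    using reach_path[OF xr] x by (auto simp: c_def)
  have rlt: "\<forall>v\<in>set r. v < c"
  proof
    fix v assume "v \<in> set r"
    then have "v \<in> V1" "v \<noteq> c" using r(6) by auto
    then have "v \<le> c" "v \<noteq> c" using le1 by auto
    then show "v < c" by simp
  qed
  have ra: "a \<le> hd r" using x G(3) amin r(2) by auto
  show ?thesis
  proof (cases "c < y")
    case True
    show ?thesis
    proof (cases "x = a")
      case False
      have lr: "length r \<ge> 2"
      proof (rule ccontr)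
        assume "\<not> length r \<ge> 2"
        moreover have "length r \<noteq> 0" using r(1) by simp
        ultimately have "length r = 1" by linarith
        then have "hd r = last r" by (cases r) auto
        then show False using r False by simp
      qed
      have "fpath F y r c" unfolding fpath_def
      proof (intro conjI)
        show "distinct (y # r @ [c])" using r(4,6) yV1 True by auto
        show "ep F (y # r @ [c])"
          using ep_mono[OF r(5) FF1] xyF acF r(1,2,3) by (auto simp: ep_Cons ep_append insert_commute)
        show "2 \<le> length r" by (rule lr)
        show "c < y" by (rule True)
        show "\<forall>v\<in>set r. v < c" by (rule rlt)
        show "last r < hd r" using r(2,3) ra False by simp
      qed
      then show ?thesis by (auto simp: F_def)
    next
      case xa: True
      have yb: "y \<noteq> b" using xy xa by (auto simp: a_def b_def)
      have yltb: "y < b" using y yb G(27) by (auto simp: b_def le_neq_implies_less)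
      have cV2: "c \<in> V2" using G(6) by (simp add: c_def)
      obtain p w where pw: "reach F2 {v \<in> V2. v < y} c p" "{p, w} \<in> F2" "y < w"
        using RR2[unfolded RRi_def, rule_format, of c y] cV2 True yltb G(12) by (auto simp: b_def)
      obtain q where q: "q \<noteq> []" "hd q = c" "last q = p" "distinct q" "ep F2 q" "set q \<subseteq> {v \<in> V2. v < y}"
        using reach_path[OF pw(1)] cV2 True by auto
      have wV2: "w \<in> V2" using pw(2) K2 KEdges_mem by blast
      have pV2: "p \<in> V2" using pw(2) K2 KEdges_mem by blast
      have "fpath F w (rev q @ [a]) y" unfolding fpath_def
      proof (intro conjI)
        show "distinct (w # (rev q @ [a]) @ [y])" using q(4,6) pw(3) aV2 wV2 ac True by auto
        show "ep F (w # (rev q @ [a]) @ [y])"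
          using ep_mono[OF q(5) FF2] pw(2) FF2 acF xyF xa q(1,2,3)
          by (auto simp: ep_Cons ep_append ep_rev hd_rev last_rev insert_commute)
        show "2 \<le> length (rev q @ [a])" using q(1) by (cases q) auto
        show "y < w" by (rule pw(3))
        show "\<forall>v\<in>set (rev q @ [a]). v < y" using q(6) ac True by auto
        have "a \<le> p" using pV2 G(4) amin by auto
        moreover have "a \<noteq> p" using pV2 aV2 by auto
        ultimately show "last (rev q @ [a]) < hd (rev q @ [a])" using q(1,3) by (simp add: hd_rev)
      qed
      then show ?thesis by (auto simp: F_def)
    qed
  next
    case False
    then have ylc: "y < c" using y by (auto simp: c_def le_neq_implies_less)
    have ycb: "c < Max V2" using cb G(12) by (simp add: b_def)
    obtain p w where pw: "reach F2 {v \<in> V2. v < c} y p" "{p, w} \<in> F2" "c < w"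
      using RR2[unfolded RRi_def, rule_format, of y c] y ylc ycb by auto
    obtain q where q: "q \<noteq> []" "hd q = y" "last q = p" "distinct q" "ep F2 q" "set q \<subseteq> {v \<in> V2. v < c}"
      using reach_path[OF pw(1)] y ylc by auto
    have pV2: "p \<in> V2" using pw(2) K2 KEdges_mem by blast
    have disj: "set q \<inter> set r = {}" using q(6) r(6) G(20) by (auto simp: c_def)
    have "fpath F w (rev q @ r) c" unfolding fpath_def
    proof (intro conjI)
      show "distinct (w # (rev q @ r) @ [c])" using q(4,6) r(4,6) disj pw(3) rlt by auto
      show "ep F (w # (rev q @ r) @ [c])"
        using ep_mono[OF q(5) FF2] ep_mono[OF r(5) FF1] pw(2) FF2 acF xyF q(1,2,3) r(1,2,3)
        by (auto simp: ep_Cons ep_append ep_rev hd_rev last_rev insert_commute)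
      show "2 \<le> length (rev q @ r)" using q(1) r(1) by (cases q; cases r) auto
      show "c < w" by (rule pw(3))
      show "\<forall>v\<in>set (rev q @ r). v < c" using q(6) rlt by auto
      have "a \<le> p" using pV2 G(4) amin by auto
      moreover have "a \<noteq> p" using pV2 aV2 by auto
      ultimately show "last (rev q @ r) < hd (rev q @ r)" using q(1,3) r(1,3) by (simp add: hd_rev)
    qed
    then show ?thesis by (auto simp: F_def)
  qed
qed


lemma glue_facet:
  assumes g: "gsplit W V1 V2" and f1: "is_facet V1 F1" and f2: "is_facet V2 F2"
  shows "is_facet W (F1 \<union> F2 \<union> {{Min W, Max W}})"
  unfolding facet_max
proof (intro conjI ballI impI)
  note G = gsplit_props[OF g]
  define F where "F = F1 \<union> F2 \<union> {{Min W, Max W}}"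
  show "is_face W (F1 \<union> F2 \<union> {{Min W, Max W}})"
    using glue_face[OF g facet_face[OF f1] facet_face[OF f2]] .
  fix e assume eK: "e \<in> KEdges W" and eF: "e \<notin> F1 \<union> F2 \<union> {{Min W, Max W}}"
  obtain u v where e: "e = {u, v}" "u \<in> W" "v \<in> W" "u \<noteq> v" using eK by (auto elim!: KEdgesE)
  have FF1: "F1 \<subseteq> F" and FF2: "F2 \<subseteq> F" by (auto simp: F_def)
  have "\<not> nf (insert e F)"
  proof (cases "e \<subseteq> V1")
    case True
    then have "e \<in> KEdges V1" using eK KEdges_sub_iff by blast
    then have "\<not> nf (insert e F1)" using f1 eF by (auto simp: facet_max)
    then show ?thesis using nf_mono[of "insert e F" "insert e F1"] FF1 by blast
  next
    case n1: False
    show ?thesis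
    proof (cases "e \<subseteq> V2")
      case True
      then have "e \<in> KEdges V2" using eK KEdges_sub_iff by blast
      then have "\<not> nf (insert e F2)" using f2 eF by (auto simp: facet_max)
      then show ?thesis using nf_mono[of "insert e F" "insert e F2"] FF2 by blast
    next
      case n2: False
      have ab: "e \<noteq> {Min W, Max W}" using eF by simp
      have "(u \<in> V1 \<and> u \<noteq> Max V1 \<and> v \<in> V2 \<and> v \<noteq> Max V1) \<or> (v \<in> V1 \<and> v \<noteq> Max V1 \<and> u \<in> V2 \<and> u \<noteq> Max V1)"
        using e n1 n2 G(20,21) by blast
      then show ?thesis
      proof
        assume h: "u \<in> V1 \<and> u \<noteq> Max V1 \<and> v \<in> V2 \<and> v \<noteq> Max V1"
        then show ?thesis using cross_fpath[OF g f1 f2, of u v] ab e by (auto simp: nf_def F_def)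
      next
        assume h: "v \<in> V1 \<and> v \<noteq> Max V1 \<and> u \<in> V2 \<and> u \<noteq> Max V1"
        have "{v, u} \<noteq> {Min W, Max W}" using ab e by (simp add: insert_commute)
        then show ?thesis using cross_fpath[OF g f1 f2, of v u] h e by (auto simp: nf_def F_def insert_commute)
      qed
    qed
  qed
  then show "\<not> nf (insert e (F1 \<union> F2 \<union> {{Min W, Max W}}))" by (simp add: F_def)
qed


lemma card_verts_ge2:
  assumes "is_facet V F" "x \<in> verts F"
  shows "card (verts F) \<ge> 2 \<or> infinite (verts F)"
proof (rule ccontr)
  assume h: "\<not> (card (verts F) \<ge> 2 \<or> infinite (verts F))"
  obtain e where e: "e \<in> F" "x \<in> e" using assms(2) by (auto simp: verts_def)
  have "e \<in> KEdges V" using e facet_sub[OF assms(1)] by blast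
  then obtain u v where uv: "e = {u, v}" "u \<noteq> v" by (auto elim!: KEdgesE)
  have "{u, v} \<subseteq> verts F" using e uv by (auto simp: verts_def)
  then have "card {u, v} \<le> card (verts F)" using h by (intro card_mono) auto
  then show False using uv h by simp
qed

lemma dtree_gsplit:
  assumes fV: "finite V" and f1: "is_facet (verts F1) F1"
    and U: "verts F1 \<union> verts F2 = V" and I: "verts F1 \<inter> verts F2 = {Max (verts F1)}"
    and a1: "Min V \<in> verts F1" and b2: "Max V \<in> verts F2" and n1: "{Min V, Max V} \<notin> F1"
  shows "gsplit V (verts F1) (verts F2)"
proof -
  have fin1: "finite (verts F1)" using fV U by (metis finite_Un)
  have c1: "card (verts F1) \<ge> 2" using card_verts_ge2[OF f1 a1] fin1 by simp
  have m1: "Min (verts F1) = Min V" using a1 U fin1 fV by (intro Min_eqI) auto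
  have "Max V \<notin> verts F1"
  proof
    assume b1: "Max V \<in> verts F1"
    then have "Max V = Max (verts F1)" using I b2 by blast
    then have "{Min (verts F1), Max (verts F1)} = {Min V, Max V}" using m1 by simp
    moreover have "{Min (verts F1), Max (verts F1)} \<in> F1" using ab_in_facet[OF fin1 c1 f1] .
    ultimately show False using n1 by simp
  qed
  then show ?thesis using fV U I a1 b2 c1 by (simp add: gsplit_def)
qed

lemma glue_nbr_max:
  assumes g: "gsplit W V1 V2" and f1: "is_facet V1 F1" and f2: "is_facet V2 F2"
  shows "{Min W, Max V1} \<in> F1 \<union> F2 \<union> {{Min W, Max W}}"
    "\<forall>x. {Min W, x} \<in> F1 \<union> F2 \<union> {{Min W, Max W}} \<and> x \<noteq> Max W \<longrightarrow> x \<le> Max V1"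
proof -
  note G = gsplit_props[OF g]
  show "{Min W, Max V1} \<in> F1 \<union> F2 \<union> {{Min W, Max W}}"
    using ab_in_facet[OF G(1) G(25) f1] G(11) by simp
  show "\<forall>x. {Min W, x} \<in> F1 \<union> F2 \<union> {{Min W, Max W}} \<and> x \<noteq> Max W \<longrightarrow> x \<le> Max V1"
  proof (intro allI impI)
    fix x assume h: "{Min W, x} \<in> F1 \<union> F2 \<union> {{Min W, Max W}} \<and> x \<noteq> Max W"
    have K1: "F1 \<subseteq> KEdges V1" and K2: "F2 \<subseteq> KEdges V2" using f1 f2 by (auto dest: facet_sub)
    have "{Min W, x} \<notin> F2" using K2 G(10) KEdges_mem by blast
    moreover have "{Min W, x} \<noteq> {Min W, Max W}" using h G(19) by (auto simp: doubleton_eq_iff)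
    ultimately have "{Min W, x} \<in> F1" using h by blast
    then have "x \<in> V1" using K1 KEdges_mem by blast
    then show "x \<le> Max V1" using G(7) by blast
  qed
qed

lemma glue_part:
  assumes g: "gsplit W V1 V2" and f1: "is_facet V1 F1" and f2: "is_facet V2 F2"
  shows "F1 = {e \<in> F1 \<union> F2 \<union> {{Min W, Max W}}. e \<subseteq> V1}"
    "F2 = {e \<in> F1 \<union> F2 \<union> {{Min W, Max W}}. e \<subseteq> V2}"
proof -
  note G = gsplit_props[OF g]
  have K1: "F1 \<subseteq> KEdges V1" and K2: "F2 \<subseteq> KEdges V2" using f1 f2 by (auto dest: facet_sub)
  have n12: "e \<notin> F2" if "e \<subseteq> V1" for e
  proof
    assume "e \<in> F2"
    then have "e \<in> KEdges V2" "e \<subseteq> V2" using K2 KEdges_sub by auto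
    moreover have "e \<subseteq> {Max V1}" using that \<open>e \<subseteq> V2\<close> G(20) by blast
    ultimately show False using KEdges_two by blast
  qed
  have n21: "e \<notin> F1" if "e \<subseteq> V2" for e
  proof
    assume "e \<in> F1"
    then have "e \<in> KEdges V1" "e \<subseteq> V1" using K1 KEdges_sub by auto
    moreover have "e \<subseteq> {Max V1}" using that \<open>e \<subseteq> V1\<close> G(20) by blast
    ultimately show False using KEdges_two by blast
  qed
  show "F1 = {e \<in> F1 \<union> F2 \<union> {{Min W, Max W}}. e \<subseteq> V1}"
    using K1 KEdges_sub n12 G(24) by auto
  show "F2 = {e \<in> F1 \<union> F2 \<union> {{Min W, Max W}}. e \<subseteq> V2}"
    using K2 KEdges_sub n21 G(10) by auto
qed


lemma split_c:
  assumes g: "gsplit W V1 V2" and f1: "is_facet V1 F1" and f2: "is_facet V2 F2"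
    and g': "gsplit W V1' V2'" and f1': "is_facet V1' F1'" and f2': "is_facet V2' F2'"
    and eq: "F1 \<union> F2 \<union> {{Min W, Max W}} = F1' \<union> F2' \<union> {{Min W, Max W}}"
  shows "Max V1 = Max V1'"
proof -
  note A = glue_nbr_max[OF g f1 f2] and B = glue_nbr_max[OF g' f1' f2']
  from A(1) have "{Min W, Max V1} \<in> F1' \<union> F2' \<union> {{Min W, Max W}}" by (simp only: eq)
  moreover have "Max V1 \<noteq> Max W" using gsplit_props(9)[OF g] by simp
  ultimately have 1: "Max V1 \<le> Max V1'" using B(2) by blast
  from B(1) have "{Min W, Max V1'} \<in> F1 \<union> F2 \<union> {{Min W, Max W}}" by (simp only: eq[symmetric])
  moreover have "Max V1' \<noteq> Max W" using gsplit_props(9)[OF g'] by simp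
  ultimately have 2: "Max V1' \<le> Max V1" using A(2) by blast
  show ?thesis using 1 2 by simp
qed

lemma split_unique_V1:
  assumes g: "gsplit W V1 V2" and f1: "is_facet V1 F1" and f2: "is_facet V2 F2"
    and g': "gsplit W V1' V2'" and f1': "is_facet V1' F1'" and f2': "is_facet V2' F2'"
    and eq: "F1 \<union> F2 \<union> {{Min W, Max W}} = F1' \<union> F2' \<union> {{Min W, Max W}}"
  shows "V1 - {Max V1} \<subseteq> V1'"
proof
  note G = gsplit_props[OF g] and G' = gsplit_props[OF g']
  define F where "F = F1 \<union> F2 \<union> {{Min W, Max W}}"
  have cc: "Max V1 = Max V1'" by (rule split_c[OF g f1 f2 g' f1' f2' eq])
  fix v assume v: "v \<in> V1 - {Max V1}"
  have CM1: "CMi V1 F1" using facet_inv[OF G(1) G(25) f1] by simp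
  have h: "reach F1 (V1 - {Max V1}) v (Min V1)" using CM1 v by (auto simp: CMi_def)
  have FF1: "F1 \<subseteq> F" by (auto simp: F_def)
  have "reach F (V1 - {Max V1}) v (Min V1)" by (rule reach_mono[OF h FF1 subset_refl])
  then have "reach F (V1 - {Max V1}) v (Min W)" using G(11) by simp
  then have r: "reach F (V1 - {Max V1}) (Min W) v" by (rule reach_sym)
  have K1': "F1' \<subseteq> KEdges V1'" and K2': "F2' \<subseteq> KEdges V2'" using f1' f2' by (auto dest: facet_sub)
  have "v \<in> V1' - {Max V1'}"
  proof (rule reach_closed[OF r])
    show "Min W \<in> V1' - {Max V1'}" using G'(22) G'(26) by simp
    fix x y assume x: "x \<in> V1' - {Max V1'}" and adj: "adjS F (V1 - {Max V1}) x y"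
    have "{x, y} \<in> F" "y \<in> V1 - {Max V1}" using adj by (auto simp: adjS_def)
    then have xy: "{x, y} \<in> F1' \<union> F2' \<union> {{Min W, Max W}}" "y \<in> V1 - {Max V1}"
      unfolding F_def by (simp_all only: eq)
    have "{x, y} \<notin> F2'"
    proof
      assume "{x, y} \<in> F2'"
      then have "x \<in> V2'" using K2' KEdges_mem by blast
      then show False using x G'(20) by blast
    qed
    moreover have "{x, y} \<noteq> {Min W, Max W}"
    proof
      assume "{x, y} = {Min W, Max W}"
      then have "x = Max W \<or> y = Max W" by (auto simp: doubleton_eq_iff)
      then show False using x xy(2) G'(24) G(24) by auto
    qed
    ultimately have "{x, y} \<in> F1'" using xy(1) by blast
    then have "y \<in> V1'" using K1' KEdges_mem by blast
    then show "y \<in> V1' - {Max V1'}" using xy(2) cc by auto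
  qed
  then show "v \<in> V1'" by simp
qed


lemma split_unique:
  assumes g: "gsplit W V1 V2" and f1: "is_facet V1 F1" and f2: "is_facet V2 F2"
    and g': "gsplit W V1' V2'" and f1': "is_facet V1' F1'" and f2': "is_facet V2' F2'"
    and eq: "F1 \<union> F2 \<union> {{Min W, Max W}} = F1' \<union> F2' \<union> {{Min W, Max W}}"
  shows "V1 = V1'" "V2 = V2'" "F1 = F1'" "F2 = F2'"
proof -
  have s1: "V1 - {Max V1} \<subseteq> V1'" by (rule split_unique_V1[OF g f1 f2 g' f1' f2' eq])
  have s2: "V1' - {Max V1'} \<subseteq> V1" by (rule split_unique_V1[OF g' f1' f2' g f1 f2 eq[symmetric]])
  have cc: "Max V1 = Max V1'" by (rule split_c[OF g f1 f2 g' f1' f2' eq])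
  have m1: "Max V1 \<in> V1" and m1': "Max V1' \<in> V1'" using gsplit_props(5)[OF g] gsplit_props(5)[OF g'] by auto
  show v1: "V1 = V1'"
  proof (rule equalityI; rule subsetI)
    fix x assume "x \<in> V1"
    then show "x \<in> V1'" using s1 cc m1' by (cases "x = Max V1") auto
  next
    fix x assume "x \<in> V1'"
    then show "x \<in> V1" using s2 cc m1 by (cases "x = Max V1'") auto
  qed
  show v2: "V2 = V2'" using gsplit_V2[OF g] gsplit_V2[OF g'] v1 by simp
  have "F1 = {e \<in> F1 \<union> F2 \<union> {{Min W, Max W}}. e \<subseteq> V1}" by (rule glue_part(1)[OF g f1 f2])
  also have "\<dots> = {e \<in> F1' \<union> F2' \<union> {{Min W, Max W}}. e \<subseteq> V1'}" by (simp only: eq v1)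
  also have "\<dots> = F1'" by (rule glue_part(1)[OF g' f1' f2', symmetric])
  finally show "F1 = F1'" .
  have "F2 = {e \<in> F1 \<union> F2 \<union> {{Min W, Max W}}. e \<subseteq> V2}" by (rule glue_part(2)[OF g f1 f2])
  also have "\<dots> = {e \<in> F1' \<union> F2' \<union> {{Min W, Max W}}. e \<subseteq> V2'}" by (simp only: eq v2)
  also have "\<dots> = F2'" by (rule glue_part(2)[OF g' f1' f2', symmetric])
  finally show "F2 = F2'" .
qed

lemma card2_finite: "card V = 2 \<Longrightarrow> finite V"
  using card.infinite by fastforce

lemma dtree_of_facet: "dtree_of W F T \<Longrightarrow> is_facet W F \<and> finite W \<and> card W \<ge> 2"
  by (induction rule: dtree_of.induct) (auto intro: card2_finite)

lemma dtree_of_label: "dtree_of W F T \<Longrightarrow> label T = W"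
  by (induction rule: dtree_of.induct) auto

lemma card2_facet:
  assumes fW: "finite W" and c: "card W = 2" and f: "is_facet W F"
  shows "F = {{Min W, Max W}}"
proof -
  have ab: "{Min W, Max W} \<in> F" using ab_in_facet[OF fW _ f] c by simp
  have "F \<subseteq> {{Min W, Max W}}"
  proof
    fix e assume "e \<in> F"
    then have "e \<in> KEdges W" using facet_sub[OF f] by blast
    then obtain u v where uv: "e = {u, v}" "u \<in> W" "v \<in> W" "u \<noteq> v" by (auto elim!: KEdgesE)
    then have "u = Min W \<or> u = Max W" "v = Min W \<or> v = Max W" using card2_cases[OF fW c] by auto
    then show "e \<in> {{Min W, Max W}}" using uv by auto
  qed
  then show ?thesis using ab by auto
qed

lemma dtree_of_unique: "dtree_of W F T \<Longrightarrow> dtree_of W F T' \<Longrightarrow> T = T'"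
proof (induction arbitrary: T' rule: dtree_of.induct)
  case (base V F)
  from base(3) show ?case
  proof (cases rule: dtree_of.cases)
    case base then show ?thesis by simp
  next
    case (step F1 F2 T1 T2) then show ?thesis using base(1) by simp
  qed
next
  case (step V F F1 F2 T1 T2)
  note h = step.hyps
  note IH = step.IH
  from step.prems show ?case
  proof (cases rule: dtree_of.cases)
    case base then show ?thesis using h(2) by simp
  next
    case (step F1' F2' T1' T2')
    note s = step
    have g: "gsplit V (verts F1) (verts F2)"
      by (rule dtree_gsplit[OF h(1) h(8) h(10) h(11) h(12) h(13) h(6)])
    have g': "gsplit V (verts F1') (verts F2')"
      by (rule dtree_gsplit[OF s(2) s(9) s(11) s(12) s(13) s(14) s(7)])
    have eq: "F1 \<union> F2 \<union> {{Min V, Max V}} = F1' \<union> F2' \<union> {{Min V, Max V}}"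
      using h(4) s(5) by simp
    note U = split_unique[OF g h(8) h(9) g' s(9) s(10) eq]
    have "T1 = T1'" using IH(1)[of T1'] s(15) U(1,3) by simp
    moreover have "T2 = T2'" using IH(2)[of T2'] s(16) U(2,4) by simp
    ultimately show ?thesis using s(1) by simp
  qed
qed

lemma dtree_eq: "dtree_of W F T \<Longrightarrow> dtree W F = T"
  unfolding dtree_def using dtree_of_unique by blast

lemma dtree_of_dtree: "finite W \<Longrightarrow> card W \<ge> 2 \<Longrightarrow> is_facet W F \<Longrightarrow> dtree_of W F (dtree W F)"
  using dtree_of_exists dtree_eq by metis

lemma dtree_of_Leaf: assumes "dtree_of W F (Leaf X)" shows "X = W \<and> card W = 2 \<and> F = {{Min W, Max W}} \<and> finite W"
  using assms
proof (cases rule: dtree_of.cases)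
  case base
  then show ?thesis using card2_facet[of W F] card2_finite[of W] by simp
qed

lemma dtree_of_Node:
  assumes "dtree_of W F (Node X T1 T2)"
  shows "X = W \<and> card W \<ge> 3 \<and> (\<exists>F1 F2. gsplit W (label T1) (label T2) \<and> F = F1 \<union> F2 \<union> {{Min W, Max W}}
     \<and> F1 \<inter> F2 = {} \<and> {Min W, Max W} \<notin> F1 \<and> {Min W, Max W} \<notin> F2
     \<and> dtree_of (label T1) F1 T1 \<and> dtree_of (label T2) F2 T2)"
  using assms
proof (cases rule: dtree_of.cases)
  case (step F1 F2)
  have g: "gsplit W (verts F1) (verts F2)"
    by (rule dtree_gsplit[OF step(2) step(9) step(11) step(12) step(13) step(14) step(7)])
  have "label T1 = verts F1" using dtree_of_label[OF step(15)] .
  moreover have "label T2 = verts F2" using dtree_of_label[OF step(16)] .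
  ultimately show ?thesis using step g by auto
qed

lemma dtree_of_glue:
  assumes g: "gsplit W V1 V2" and t1: "dtree_of V1 F1 T1" and t2: "dtree_of V2 F2 T2"
  shows "dtree_of W (F1 \<union> F2 \<union> {{Min W, Max W}}) (Node W T1 T2)"
proof -
  note G = gsplit_props[OF g]
  have f1: "is_facet V1 F1" and f2: "is_facet V2 F2" using dtree_of_facet t1 t2 by auto
  have K1: "F1 \<subseteq> KEdges V1" and K2: "F2 \<subseteq> KEdges V2" using f1 f2 by (auto dest: facet_sub)
  have d: "F1 \<inter> F2 = {}"
  proof (rule ccontr)
    assume "F1 \<inter> F2 \<noteq> {}"
    then obtain e where e: "e \<in> F1" "e \<in> F2" by blast
    have "e \<in> KEdges V1" "e \<in> KEdges V2" using K1 K2 e by auto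
    then have "e \<subseteq> V1" "e \<subseteq> V2" by (auto dest: KEdges_sub)
    then have "e \<subseteq> {Max V1}" using G(20) by blast
    then show False using KEdges_two e K1 by blast
  qed
  have n1: "{Min W, Max W} \<notin> F1" using K1 G(24) KEdges_mem by blast
  have n2: "{Min W, Max W} \<notin> F2" using K2 G(10) KEdges_mem by blast
  show ?thesis by (rule dtree_of_step'[OF g f1 f2 glue_facet[OF g f1 f2] d n1 n2 t1 t2])
qed

lemma dtree_of_edges: "dtree_of W F T \<Longrightarrow> F = edge_of ` set (traversal T)"
proof (induction rule: dtree_of.induct)
  case (base V F)
  then show ?case using card2_facet[of V F] card2_finite[of V] by (auto simp: edge_of_def)
next
  case (step V F F1 F2 T1 T2)
  have "label T1 = verts F1" "label T2 = verts F2" using step(14,15) dtree_of_label by auto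
  then show ?case using step by (auto simp: edge_of_def)
qed

lemma dtree_of_length: "dtree_of W F T \<Longrightarrow> length (traversal T) + 3 = 2 * card W"
proof (induction rule: dtree_of.induct)
  case (base V F)
  then show ?case by simp
next
  case (step V F F1 F2 T1 T2)
  have fin: "finite (verts F1)" "finite (verts F2)" using step(1,10) by (metis finite_Un)+
  have "card (verts F1) + card (verts F2) = card V + 1"
    using card_Un_Int[OF fin] step(10,11) by simp
  moreover have "length (traversal T1) + 3 = 2 * card (verts F1)"
    "length (traversal T2) + 3 = 2 * card (verts F2)" using step by auto
  ultimately show ?case by simp
qed

lemma dtree_of_labels: "dtree_of W F T \<Longrightarrow> X \<in> set (traversal T) \<Longrightarrow> X \<subseteq> W \<and> finite X \<and> card X \<ge> 2"
proof (induction arbitrary: X rule: dtree_of.induct)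
  case (base V F)
  then show ?case using card2_finite[of V] by simp
next
  case (step V F F1 F2 T1 T2)
  have fin: "finite (verts F1)" "finite (verts F2)" using step(1,10) by (metis finite_Un)+
  show ?case
  proof (cases "X = V")
    case True
    then show ?thesis using step.hyps(1,2) by simp
  next
    case False
    then have "X \<in> set (traversal T1) \<or> X \<in> set (traversal T2)" using step.prems by simp
    then show ?thesis using step.IH step(10) fin by (auto intro: finite_subset)
  qed
qed

lemma set_gt_irrefl: "\<not> set_gt X X"
  by (simp add: set_gt_def)

lemma symd_comm: "X - Y \<union> (Y - X) = Y - X \<union> (X - Y)" by blast

lemma symd_min:
  assumes "finite X" "finite Y" "X \<noteq> Y"
  shows "Min (X - Y \<union> (Y - X)) \<in> X - Y \<union> (Y - X)" "\<forall>u \<in> X - Y \<union> (Y - X). Min (X - Y \<union> (Y - X)) \<le> u"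
proof -
  have f: "finite (X - Y \<union> (Y - X))" using assms by simp
  have ne: "X - Y \<union> (Y - X) \<noteq> {}" using assms(3) by blast
  show "Min (X - Y \<union> (Y - X)) \<in> X - Y \<union> (Y - X)" using f ne by (rule Min_in)
  show "\<forall>u \<in> X - Y \<union> (Y - X). Min (X - Y \<union> (Y - X)) \<le> u" using f by simp
qed

lemma set_gt_same_trans:
  assumes fX: "finite X" and fY: "finite Y" and fZ: "finite Z"
    and xy: "X \<noteq> Y" "Min (X - Y \<union> (Y - X)) \<in> Y"
    and yz: "Y \<noteq> Z" "Min (Y - Z \<union> (Z - Y)) \<in> Z"
  shows "X \<noteq> Z \<and> Min (X - Z \<union> (Z - X)) \<in> Z"
proof -
  define p q where "p = Min (X - Y \<union> (Y - X))" and "q = Min (Y - Z \<union> (Z - Y))"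
  note P = symd_min[OF fX fY xy(1), folded p_def]
  note Q = symd_min[OF fY fZ yz(1), folded q_def]
  have pY: "p \<in> Y" "p \<notin> X" using P(1) xy(2) by (auto simp: p_def)
  have qZ: "q \<in> Z" "q \<notin> Y" using Q(1) yz(2) by (auto simp: q_def)
  have agxy: "u \<in> X \<longleftrightarrow> u \<in> Y" if "u < p" for u using P(2) that by (meson DiffI UnCI leD)
  have agyz: "u \<in> Y \<longleftrightarrow> u \<in> Z" if "u < q" for u using Q(2) that by (meson DiffI UnCI leD)
  have fD: "finite (X - Z \<union> (Z - X))" using fX fZ by simp
  show ?thesis
  proof (cases "p < q")
    case True
    then have pZ: "p \<in> Z" using agyz pY by blast
    have "Min (X - Z \<union> (Z - X)) = p"
    proof (rule Min_eqI[OF fD])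
      show "p \<in> X - Z \<union> (Z - X)" using pZ pY by blast
      fix u assume u: "u \<in> X - Z \<union> (Z - X)"
      show "p \<le> u"
      proof (rule ccontr)
        assume "\<not> p \<le> u"
        then have "u < p" "u < q" using True by auto
        then show False using agxy agyz u by blast
      qed
    qed
    then show ?thesis using pZ pY by auto
  next
    case False
    have "p \<noteq> q" using pY qZ by auto
    then have qp: "q < p" using False by simp
    then have qX: "q \<notin> X" using agxy qZ by blast
    have "Min (X - Z \<union> (Z - X)) = q"
    proof (rule Min_eqI[OF fD])
      show "q \<in> X - Z \<union> (Z - X)" using qZ qX by blast
      fix u assume u: "u \<in> X - Z \<union> (Z - X)"
      show "q \<le> u"
      proof (rule ccontr)
        assume "\<not> q \<le> u"
        then have "u < p" "u < q" using qp by auto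
        then show False using agxy agyz u by blast
      qed
    qed
    then show ?thesis using qZ qX by auto
  qed
qed

lemma set_gt_trans:
  assumes "finite X" "finite Y" "finite Z" "set_gt X Y" "set_gt Y Z"
  shows "set_gt X Z"
proof -
  have c: "card X \<ge> card Y" "card Y \<ge> card Z" using assms(4,5) by (auto simp: set_gt_def)
  show ?thesis
  proof (cases "card X = card Y \<and> card Y = card Z")
    case True
    then have "X \<noteq> Y \<and> Min (X - Y \<union> (Y - X)) \<in> Y" "Y \<noteq> Z \<and> Min (Y - Z \<union> (Z - Y)) \<in> Z"
      using assms(4,5) by (auto simp: set_gt_def)
    then show ?thesis using set_gt_same_trans[OF assms(1-3)] True by (auto simp: set_gt_def)
  next
    case False
    then have "card X > card Z" using c by auto
    then show ?thesis by (simp add: set_gt_def)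
  qed
qed

lemma set_gt_asym: "finite X \<Longrightarrow> finite Y \<Longrightarrow> set_gt X Y \<Longrightarrow> \<not> set_gt Y X"
  using set_gt_trans set_gt_irrefl by blast

lemma set_gt_total:
  assumes "finite X" "finite Y" "X \<noteq> Y"
  shows "set_gt X Y \<or> set_gt Y X"
proof (cases "card X = card Y")
  case True
  have "Min (X - Y \<union> (Y - X)) \<in> X - Y \<union> (Y - X)" using symd_min[OF assms] by simp
  then have "Min (X - Y \<union> (Y - X)) \<in> Y \<or> Min (Y - X \<union> (X - Y)) \<in> X" using symd_comm[of X Y] by auto
  then show ?thesis using True assms(3) by (auto simp: set_gt_def)
next
  case False
  then show ?thesis by (auto simp: set_gt_def)
qed

lemma set_gt_subset: "finite Y \<Longrightarrow> X \<subseteq> Y \<Longrightarrow> \<not> set_gt X Y"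
proof
  assume f: "finite Y" and s: "X \<subseteq> Y" and g: "set_gt X Y"
  have "card X \<le> card Y" using f s by (rule card_mono)
  then have "card X = card Y" using g by (auto simp: set_gt_def)
  then have "X = Y" using card_subset_eq[OF f s] by simp
  then show False using g set_gt_irrefl by simp
qed

lemma set_gt_card: "card X > card Y \<Longrightarrow> set_gt X Y"
  by (simp add: set_gt_def)

definition lexgt :: "nat set list \<Rightarrow> nat set list \<Rightarrow> bool" where
  "lexgt xs ys \<longleftrightarrow> (\<exists>k. k < length xs \<and> k < length ys \<and> take k xs = take k ys \<and> set_gt (xs ! k) (ys ! k))"

lemma fac_gt_lexgt: "fac_gt V F G \<longleftrightarrow> lexgt (traversal (dtree V F)) (traversal (dtree V G))"
  by (simp add: fac_gt_def lexgt_def Let_def)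

lemma lexgt_Cons: "lexgt (x # xs) (y # ys) \<longleftrightarrow> set_gt x y \<or> (x = y \<and> lexgt xs ys)"
proof
  assume "lexgt (x # xs) (y # ys)"
  then obtain k where k: "k < length (x # xs)" "k < length (y # ys)" "take k (x # xs) = take k (y # ys)"
    "set_gt ((x # xs) ! k) ((y # ys) ! k)" by (auto simp: lexgt_def)
  show "set_gt x y \<or> (x = y \<and> lexgt xs ys)"
  proof (cases k)
    case 0 then show ?thesis using k by simp
  next
    case (Suc j)
    then have "x = y" "lexgt xs ys" using k by (auto simp: lexgt_def)
    then show ?thesis by simp
  qed
next
  assume h: "set_gt x y \<or> (x = y \<and> lexgt xs ys)"
  show "lexgt (x # xs) (y # ys)"
  proof (cases "set_gt x y")
    case True
    then show ?thesis unfolding lexgt_def by (intro exI[of _ 0]) auto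
  next
    case False
    then obtain k where "x = y" "k < length xs" "k < length ys" "take k xs = take k ys" "set_gt (xs ! k) (ys ! k)"
      using h by (auto simp: lexgt_def)
    then show ?thesis unfolding lexgt_def by (intro exI[of _ "Suc k"]) auto
  qed
qed

lemma lexgt_append:
  assumes l: "length xs = length xs'"
  shows "lexgt (xs @ ys) (xs' @ ys') \<longleftrightarrow> lexgt xs xs' \<or> (xs = xs' \<and> lexgt ys ys')"
  using l
proof (induction xs arbitrary: xs')
  case Nil
  then show ?case by (simp add: lexgt_def)
next
  case (Cons x xs)
  then obtain y ys0 where xs': "xs' = y # ys0" "length xs = length ys0" by (cases xs') auto
  show ?case using Cons.IH[OF xs'(2)] xs'(1) by (auto simp: lexgt_Cons)
qed

lemma lexgt_irrefl: "\<not> lexgt xs xs"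
  by (auto simp: lexgt_def set_gt_irrefl)

lemma lexgt_trans:
  assumes fin: "\<forall>X \<in> set xs \<union> set ys \<union> set zs. finite X"
    and a: "lexgt xs ys" and b: "lexgt ys zs"
  shows "lexgt xs zs"
proof -
  obtain k where k: "k < length xs" "k < length ys" "take k xs = take k ys" "set_gt (xs ! k) (ys ! k)"
    using a by (auto simp: lexgt_def)
  obtain j where j: "j < length ys" "j < length zs" "take j ys = take j zs" "set_gt (ys ! j) (zs ! j)"
    using b by (auto simp: lexgt_def)
  have tk: "\<And>i. i < k \<Longrightarrow> xs ! i = ys ! i" using k(3) k(1,2)
    by (metis nth_take)
  have tj: "\<And>i. i < j \<Longrightarrow> ys ! i = zs ! i" using j(3) j(1,2)
    by (metis nth_take)
  show ?thesis
  proof (cases "k < j")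
    case True
    have "take k xs = take k zs"
    proof (rule nth_equalityI)
      show "length (take k xs) = length (take k zs)" using k j True by simp
      fix i assume "i < length (take k xs)"
      then have "i < k" by simp
      then show "take k xs ! i = take k zs ! i" using tk tj True by simp
    qed
    moreover have "ys ! k = zs ! k" using tj True by simp
    ultimately show ?thesis unfolding lexgt_def using k j True by (intro exI[of _ k]) auto
  next
    case False
    show ?thesis
    proof (cases "j < k")
      case True
      have "take j xs = take j zs"
      proof (rule nth_equalityI)
        show "length (take j xs) = length (take j zs)" using k j True by simp
        fix i assume "i < length (take j xs)"
        then have "i < j" by simp
        then show "take j xs ! i = take j zs ! i" using tk tj True by simp
      qed
      moreover have "xs ! j = ys ! j" using tk True by simp
      ultimately show ?thesis unfolding lexgt_def using k j True by (intro exI[of _ j]) auto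
    next
      case False
      then have kj: "k = j" using \<open>\<not> k < j\<close> by simp
      have "finite (xs ! k)" "finite (ys ! k)" "finite (zs ! k)" using fin k j kj by auto
      then have "set_gt (xs ! k) (zs ! k)" using set_gt_trans k(4) j(4) kj by blast
      moreover have "take k xs = take k zs" using k(3) j(3) kj by simp
      ultimately show ?thesis unfolding lexgt_def using k j kj by blast
    qed
  qed
qed

lemma lexgt_total:
  assumes fin: "\<forall>X \<in> set xs \<union> set ys. finite X" and l: "length xs = length ys" and ne: "xs \<noteq> ys"
  shows "lexgt xs ys \<or> lexgt ys xs"
  using l ne fin
proof (induction xs arbitrary: ys)
  case Nil then show ?case by simp
next
  case (Cons x xs)
  then obtain y ys0 where ys: "ys = y # ys0" by (cases ys) auto
  show ?case
  proof (cases "x = y")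
    case True
    then have "xs \<noteq> ys0" "length xs = length ys0" using Cons.prems ys by auto
    then have "lexgt xs ys0 \<or> lexgt ys0 xs" using Cons.IH Cons.prems(3) ys by auto
    then show ?thesis using ys True by (auto simp: lexgt_Cons)
  next
    case False
    have "finite x" "finite y" using Cons.prems(3) ys by auto
    then have "set_gt x y \<or> set_gt y x" using set_gt_total False by blast
    then show ?thesis using ys by (auto simp: lexgt_Cons)
  qed
qed

lemma traversal_hd: "\<exists>r. traversal T = label T # r"
  by (cases T) auto

lemma firstborns_sub: "firstborns T \<subseteq> set (traversal T)"
proof (induction T)
  case (Node X T1 T2)
  have "label T1 \<in> set (traversal T1)" using traversal_hd[of T1] by force
  then show ?case using Node by auto
qed simp

lemma sigma_tree_sub: "sigma_tree T \<subseteq> edge_of ` set (traversal T)"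
proof (induction T)
  case (Node X T1 T2)
  have "Lset T1 \<subseteq> set (traversal T1)"
    using firstborns_sub[of T1] traversal_hd[of T1] by (force simp: Lset_def)
  then show ?case using Node by auto
qed simp

lemma dtree_glue:
  assumes g: "gsplit W V1 V2" and f1: "is_facet V1 F1" and f2: "is_facet V2 F2"
  shows "dtree W (F1 \<union> F2 \<union> {{Min W, Max W}}) = Node W (dtree V1 F1) (dtree V2 F2)"
proof -
  note G = gsplit_props[OF g]
  have t1: "dtree_of V1 F1 (dtree V1 F1)" using dtree_of_dtree[OF G(1) G(25) f1] .
  have t2: "dtree_of V2 F2 (dtree V2 F2)" using dtree_of_dtree[OF G(2) G(13) f2] .
  show ?thesis using dtree_eq[OF dtree_of_glue[OF g t1 t2]] .
qed

lemma dtree_label: "finite W \<Longrightarrow> card W \<ge> 2 \<Longrightarrow> is_facet W F \<Longrightarrow> label (dtree W F) = W"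
  using dtree_of_dtree dtree_of_label by blast

lemma dtree_length:
  "finite W \<Longrightarrow> card W \<ge> 2 \<Longrightarrow> is_facet W F \<Longrightarrow> length (traversal (dtree W F)) + 3 = 2 * card W"
  using dtree_of_dtree dtree_of_length by blast

lemma dtree_edges:
  "finite W \<Longrightarrow> card W \<ge> 2 \<Longrightarrow> is_facet W F \<Longrightarrow> F = edge_of ` set (traversal (dtree W F))"
  using dtree_of_dtree dtree_of_edges by blast

lemma dtree_labels:
  "finite W \<Longrightarrow> card W \<ge> 2 \<Longrightarrow> is_facet W F \<Longrightarrow> X \<in> set (traversal (dtree W F)) \<Longrightarrow> X \<subseteq> W \<and> finite X \<and> card X \<ge> 2"
  using dtree_of_dtree dtree_of_labels by blast

lemma fac_gt_glue:
  assumes g: "gsplit W V1 V2" and f1: "is_facet V1 F1" and f2: "is_facet V2 F2"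
    and g': "gsplit W V1' V2'" and h1: "is_facet V1' G1" and h2: "is_facet V2' G2"
  shows "fac_gt W (F1 \<union> F2 \<union> {{Min W, Max W}}) (G1 \<union> G2 \<union> {{Min W, Max W}}) \<longleftrightarrow>
    set_gt V1 V1' \<or> (V1 = V1' \<and> (fac_gt V1 F1 G1 \<or> (F1 = G1 \<and> fac_gt V2 F2 G2)))"
proof -
  note G = gsplit_props[OF g] and G' = gsplit_props[OF g']
  define t1 t2 s1 s2 where "t1 = traversal (dtree V1 F1)" and "t2 = traversal (dtree V2 F2)"
    and "s1 = traversal (dtree V1' G1)" and "s2 = traversal (dtree V2' G2)"
  have "fac_gt W (F1 \<union> F2 \<union> {{Min W, Max W}}) (G1 \<union> G2 \<union> {{Min W, Max W}}) \<longleftrightarrow>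
      lexgt (W # t1 @ t2) (W # s1 @ s2)"
    unfolding fac_gt_lexgt dtree_glue[OF g f1 f2] dtree_glue[OF g' h1 h2] t1_def t2_def s1_def s2_def by simp
  also have "\<dots> \<longleftrightarrow> lexgt (t1 @ t2) (s1 @ s2)" by (simp add: lexgt_Cons set_gt_irrefl)
  also have "\<dots> \<longleftrightarrow> set_gt V1 V1' \<or> (V1 = V1' \<and> (fac_gt V1 F1 G1 \<or> (F1 = G1 \<and> fac_gt V2 F2 G2)))"
  proof (cases "V1 = V1'")
    case True
    then have v2: "V2 = V2'" using gsplit_V2[OF g] gsplit_V2[OF g'] by simp
    have l: "length t1 = length s1"
      using dtree_length[OF G(1) G(25) f1] dtree_length[OF G'(1) G'(25) h1] True by (simp add: t1_def s1_def)
    have "t1 = s1 \<longleftrightarrow> F1 = G1"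
    proof
      assume "t1 = s1"
      then show "F1 = G1" using dtree_edges[OF G(1) G(25) f1] dtree_edges[OF G'(1) G'(25) h1]
        by (simp add: t1_def s1_def)
    next
      assume "F1 = G1" then show "t1 = s1" using True by (simp add: t1_def s1_def)
    qed
    then show ?thesis using lexgt_append[OF l] True v2
      by (simp add: fac_gt_lexgt t1_def s1_def t2_def s2_def set_gt_irrefl)
  next
    case False
    obtain r1 where r1: "t1 = V1 # r1" using traversal_hd[of "dtree V1 F1"] dtree_label[OF G(1) G(25) f1]
      by (auto simp: t1_def)
    obtain r2 where r2: "s1 = V1' # r2" using traversal_hd[of "dtree V1' G1"] dtree_label[OF G'(1) G'(25) h1]
      by (auto simp: s1_def)
    show ?thesis using False r1 r2 by (simp add: lexgt_Cons)
  qed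
  finally show ?thesis .
qed


lemma sigma_glue:
  assumes g: "gsplit W V1 V2" and f1: "is_facet V1 F1" and f2: "is_facet V2 F2"
  shows "sigma W (F1 \<union> F2 \<union> {{Min W, Max W}}) = (if card W \<le> 3 then {}
      else if V1 = {Min W, min2 W} then sigma V2 F2 else sigma V2 F2 \<union> edge_of ` Lset (dtree V1 F1))"
proof -
  note G = gsplit_props[OF g]
  have "label (dtree V1 F1) = V1" using dtree_label[OF G(1) G(25) f1] .
  then show ?thesis unfolding sigma_def dtree_glue[OF g f1 f2] by simp
qed

lemma FBconn: "dtree_of Y F T \<Longrightarrow> v \<in> Y - {Max Y} \<Longrightarrow> reach (edge_of ` firstborns T) (Y - {Max Y}) v (Min Y)"
proof (induction arbitrary: v rule: dtree_of.induct)
  case (base V F)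
  have "v = Min V" using card2_cases[OF card2_finite[OF base(1)] base(1)] base(3) by auto
  then show ?case by simp
next
  case (step V F F1 F2 T1 T2)
  note h = step.hyps
  have g: "gsplit V (verts F1) (verts F2)" by (rule dtree_gsplit[OF h(1) h(8) h(10) h(11) h(12) h(13) h(6)])
  note G = gsplit_props[OF g]
  have l1: "label T1 = verts F1" and l2: "label T2 = verts F2" using h(14,15) dtree_of_label by auto
  define E where "E = edge_of ` firstborns (Node V T1 T2)"
  define S where "S = V - {Max V}"
  have E1: "edge_of ` firstborns T1 \<subseteq> E" and E2: "edge_of ` firstborns T2 \<subseteq> E" by (auto simp: E_def)
  have cE: "{Min V, Max (verts F1)} \<in> E" using l1 G(11) by (auto simp: E_def edge_of_def)
  have S1: "verts F1 - {Max (verts F1)} \<subseteq> S" and S2: "verts F2 - {Max (verts F2)} \<subseteq> S"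
    using G(3,4,12,24) by (auto simp: S_def)
  have cS: "Max (verts F1) \<in> S" and aS: "Min V \<in> S" using G(3,5,9,17,19,22) by (auto simp: S_def)
  have ca: "reach E S (Max (verts F1)) (Min V)"
    using reach_edge[of "Max (verts F1)" "Min V" E S] cE cS aS by (auto simp: insert_commute)
  have "reach E S v (Min V)"
  proof (cases "v \<in> verts F1")
    case True
    show ?thesis
    proof (cases "v = Max (verts F1)")
      case True then show ?thesis using ca by simp
    next
      case False
      then have "reach (edge_of ` firstborns T1) (verts F1 - {Max (verts F1)}) v (Min (verts F1))"
        using step.IH(1) \<open>v \<in> verts F1\<close> by simp
      then have "reach E S v (Min (verts F1))" by (rule reach_mono[OF _ E1 S1])
      then show ?thesis using G(11) by simp
    qed
  next
    case False
    then have vV2: "v \<in> verts F2 - {Max (verts F2)}" using step.prems G(21,12) by auto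
    have cV2: "Max (verts F1) \<in> verts F2 - {Max (verts F2)}" using G(6,9,12) by auto
    have "reach (edge_of ` firstborns T2) (verts F2 - {Max (verts F2)}) v (Min (verts F2))"
      using step.IH(2) vV2 by simp
    then have r1: "reach E S v (Min (verts F2))" by (rule reach_mono[OF _ E2 S2])
    have "reach (edge_of ` firstborns T2) (verts F2 - {Max (verts F2)}) (Max (verts F1)) (Min (verts F2))"
      using step.IH(2) cV2 by simp
    then have "reach E S (Max (verts F1)) (Min (verts F2))" by (rule reach_mono[OF _ E2 S2])
    then have r2: "reach E S (Min (verts F2)) (Max (verts F1))" by (rule reach_sym)
    show ?thesis using reach_trans[OF reach_trans[OF r1 r2] ca] .
  qed
  then show ?case by (simp add: E_def S_def)
qed

lemma lemmaK:
  assumes g: "gsplit W V1 V2" and f1: "is_facet V1 F1" and f2: "is_facet V2 F2"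
    and g': "gsplit W V1' V2'" and h1: "is_facet V1' G1" and h2: "is_facet V2' G2"
    and sub: "edge_of ` Lset (dtree V1 F1) \<subseteq> G1 \<union> G2 \<union> {{Min W, Max W}}"
  shows "V1 \<subseteq> V1'"
proof -
  note G = gsplit_props[OF g] and G' = gsplit_props[OF g']
  define G0 where "G0 = G1 \<union> G2 \<union> {{Min W, Max W}}"
  define c where "c = Max V1"
  have t1: "dtree_of V1 F1 (dtree V1 F1)" using dtree_of_dtree[OF G(1) G(25) f1] .
  have lab: "label (dtree V1 F1) = V1" using dtree_label[OF G(1) G(25) f1] .
  have acG: "{Min W, c} \<in> G0" using sub lab G(11) by (auto simp: Lset_def edge_of_def G0_def c_def)
  have fbG: "edge_of ` firstborns (dtree V1 F1) \<subseteq> G0" using sub by (auto simp: Lset_def G0_def)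
  have K1': "G1 \<subseteq> KEdges V1'" and K2': "G2 \<subseteq> KEdges V2'" using h1 h2 by (auto dest: facet_sub)
  have cc: "c \<le> Max V1'" using glue_nbr_max(2)[OF g' h1 h2] acG G(9) by (auto simp: G0_def c_def)
  have acG1: "{Min W, c} \<in> G1"
  proof -
    have "{Min W, c} \<notin> G2" using K2' G'(10) KEdges_mem by blast
    moreover have "{Min W, c} \<noteq> {Min W, Max W}" using G(9) G(19) by (auto simp: c_def doubleton_eq_iff)
    ultimately show ?thesis using acG by (auto simp: G0_def)
  qed
  have cV1': "c \<in> V1'" using acG1 K1' KEdges_mem by blast
  have "v \<in> V1'" if v: "v \<in> V1 - {c}" for v
  proof -
    have "reach (edge_of ` firstborns (dtree V1 F1)) (V1 - {c}) v (Min V1)"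
      using FBconn[OF t1, of v] v by (simp add: c_def)
    then have "reach G0 (V1 - {c}) v (Min V1)" by (rule reach_mono[OF _ fbG subset_refl])
    then have r: "reach G0 (V1 - {c}) (Min W) v" using G(11) reach_sym by simp
    have "v \<in> V1' - {Max V1'}"
    proof (rule reach_closed[OF r])
      show "Min W \<in> V1' - {Max V1'}" using G'(22) G'(26) by simp
      fix x y assume x: "x \<in> V1' - {Max V1'}" and adj: "adjS G0 (V1 - {c}) x y"
      have xy: "{x, y} \<in> G0" "y \<in> V1 - {c}" using adj by (auto simp: adjS_def)
      have "{x, y} \<notin> G2"
      proof
        assume "{x, y} \<in> G2"
        then have "x \<in> V2'" using K2' KEdges_mem by blast
        then show False using x G'(20) by blast
      qed
      moreover have "{x, y} \<noteq> {Min W, Max W}"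
      proof
        assume "{x, y} = {Min W, Max W}"
        then have "x = Max W \<or> y = Max W" by (auto simp: doubleton_eq_iff)
        then show False using x xy(2) G'(24) G(24) by auto
      qed
      ultimately have "{x, y} \<in> G1" using xy(1) by (auto simp: G0_def)
      then have "y \<in> V1'" using K1' KEdges_mem by blast
      moreover have "y < c" using xy(2) G(7) by (auto simp: c_def le_neq_implies_less)
      ultimately show "y \<in> V1' - {Max V1'}" using cc by auto
    qed
    then show ?thesis by simp
  qed
  then show ?thesis using cV1' by blast
qed

lemma card2_facet_eq: "finite W \<Longrightarrow> card W = 2 \<Longrightarrow> is_facet W F \<Longrightarrow> is_facet W G \<Longrightarrow> F = G"
  using card2_facet by metis

lemma LL:
  "finite W \<Longrightarrow> card W \<ge> 2 \<Longrightarrow> is_facet W F \<Longrightarrow> is_facet W G \<Longrightarrow> fac_gt W F G \<Longrightarrow>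
    \<exists>X \<in> firstborns (dtree W F). edge_of X \<notin> G"
proof (induction "card W" arbitrary: W F G rule: less_induct)
  case less
  have fW: "finite W" and f: "is_facet W F" and h: "is_facet W G" and gt: "fac_gt W F G" using less by auto
  show ?case
  proof (cases "card W = 2")
    case True
    then have "F = G" using card2_facet_eq fW f h by blast
    then show ?thesis using gt lexgt_irrefl by (simp add: fac_gt_lexgt)
  next
    case False
    then have c3: "card W \<ge> 3" using less by simp
    obtain V1 V2 F1 F2 where g: "gsplit W V1 V2" and f1: "is_facet V1 F1" and f2: "is_facet V2 F2"
      and FU: "F = F1 \<union> F2 \<union> {{Min W, Max W}}" by (rule facet_decomp[OF fW c3 f])
    obtain V1' V2' G1 G2 where g': "gsplit W V1' V2'" and h1: "is_facet V1' G1" and h2: "is_facet V2' G2"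
      and GU: "G = G1 \<union> G2 \<union> {{Min W, Max W}}" by (rule facet_decomp[OF fW c3 h])
    note Gs = gsplit_props[OF g] and Gs' = gsplit_props[OF g']
    have dF: "dtree W F = Node W (dtree V1 F1) (dtree V2 F2)" using dtree_glue[OF g f1 f2] FU by simp
    have cl: "card V1 < card W" "card V2 < card W" using gsplit_card_less[OF g] by auto
    have gt': "set_gt V1 V1' \<or> (V1 = V1' \<and> (fac_gt V1 F1 G1 \<or> (F1 = G1 \<and> fac_gt V2 F2 G2)))"
      using gt fac_gt_glue[OF g f1 f2 g' h1 h2] FU GU by simp
    show ?thesis
    proof (cases "set_gt V1 V1'")
      case True
      have "\<not> edge_of ` Lset (dtree V1 F1) \<subseteq> G"
      proof
        assume "edge_of ` Lset (dtree V1 F1) \<subseteq> G"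
        then have "V1 \<subseteq> V1'" using lemmaK[OF g f1 f2 g' h1 h2] GU by simp
        then show False using set_gt_subset[OF Gs'(1)] True by blast
      qed
      then obtain X where "X \<in> Lset (dtree V1 F1)" "edge_of X \<notin> G" by blast
      moreover have "Lset (dtree V1 F1) \<subseteq> firstborns (dtree W F)" using dF by (auto simp: Lset_def)
      ultimately show ?thesis by blast
    next
      case False
      then have v1: "V1 = V1'" using gt' by simp
      then have v2: "V2 = V2'" using gsplit_V2[OF g] gsplit_V2[OF g'] by simp
      have parts: "G1 = {e \<in> G. e \<subseteq> V1}" "G2 = {e \<in> G. e \<subseteq> V2}"
        using glue_part[OF g' h1 h2] GU v1 v2 by auto
      show ?thesis
      proof (cases "fac_gt V1 F1 G1")
        case True
        obtain X where X: "X \<in> firstborns (dtree V1 F1)" "edge_of X \<notin> G1"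
          using less(1)[OF cl(1) Gs(1) Gs(25) f1 _ True] h1 v1 by blast
        have "X \<subseteq> V1" using dtree_labels[OF Gs(1) Gs(25) f1] X(1) firstborns_sub by blast
        then have "edge_of X \<subseteq> V1" using dtree_labels[OF Gs(1) Gs(25) f1] X(1) firstborns_sub
          by (auto simp: edge_of_def) (metis Max_in Min_in card.empty not_numeral_le_zero subsetD)+
        then have "edge_of X \<notin> G" using X(2) parts(1) by blast
        moreover have "X \<in> firstborns (dtree W F)" using X(1) dF by simp
        ultimately show ?thesis by blast
      next
        case False
        then have "F1 = G1" "fac_gt V2 F2 G2" using gt' v1 set_gt_irrefl by auto
        then obtain X where X: "X \<in> firstborns (dtree V2 F2)" "edge_of X \<notin> G2"
          using less(1)[OF cl(2) Gs(2) Gs(13) f2] h2 v2 by blast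
        have "edge_of X \<subseteq> V2" using dtree_labels[OF Gs(2) Gs(13) f2] X(1) firstborns_sub
          by (auto simp: edge_of_def) (metis Max_in Min_in card.empty not_numeral_le_zero subsetD)+
        then have "edge_of X \<notin> G" using X(2) parts(2) by blast
        moreover have "X \<in> firstborns (dtree W F)" using X(1) dF by simp
        ultimately show ?thesis by blast
      qed
    qed
  qed
qed

lemma edge_of_sub: "X \<subseteq> V \<Longrightarrow> finite X \<Longrightarrow> card X \<ge> 2 \<Longrightarrow> edge_of X \<subseteq> V"
proof -
  assume a: "X \<subseteq> V" "finite X" "card X \<ge> 2"
  have "X \<noteq> {}" using a(3) by auto
  then show ?thesis using a(1,2) Min_in Max_in by (auto simp: edge_of_def)
qed

lemma sigma_sub:
  assumes "finite W" "card W \<ge> 2" "is_facet W F" "e \<in> sigma W F"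
  shows "e \<subseteq> W"
proof -
  obtain X where X: "X \<in> set (traversal (dtree W F))" "e = edge_of X"
    using sigma_tree_sub assms(4) by (auto simp: sigma_def)
  then show ?thesis using dtree_labels[OF assms(1-3) X(1)] edge_of_sub by blast
qed

lemma card3_unique:
  assumes fW: "finite W" and c3: "card W = 3" and f: "is_facet W F" and h: "is_facet W G"
  shows "F = G"
proof -
  obtain V1 V2 F1 F2 where g: "gsplit W V1 V2" and f1: "is_facet V1 F1" and f2: "is_facet V2 F2"
    and FU: "F = F1 \<union> F2 \<union> {{Min W, Max W}}" by (rule facet_decomp[OF fW _ f]) (use c3 in simp)
  obtain V1' V2' G1 G2 where g': "gsplit W V1' V2'" and h1: "is_facet V1' G1" and h2: "is_facet V2' G2"
    and GU: "G = G1 \<union> G2 \<union> {{Min W, Max W}}" by (rule facet_decomp[OF fW _ h]) (use c3 in simp)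
  note Gs = gsplit_props[OF g] and Gs' = gsplit_props[OF g']
  have cWb: "card (W - {Max W}) = 2" using c3 Gs(18) fW by simp
  have fWb: "finite (W - {Max W})" using fW by simp
  have s1: "V1 \<subseteq> W - {Max W}" "V1' \<subseteq> W - {Max W}" using Gs(3,24) Gs'(3,24) by auto
  have e1: "V1 = W - {Max W}" using card_subset_eq[OF fWb s1(1)] cWb Gs(25) card_mono[OF fWb s1(1)] by simp
  have e1': "V1' = W - {Max W}" using card_subset_eq[OF fWb s1(2)] cWb Gs'(25) card_mono[OF fWb s1(2)] by simp
  have v1: "V1 = V1'" using e1 e1' by simp
  then have v2: "V2 = V2'" using gsplit_V2[OF g] gsplit_V2[OF g'] by simp
  have c1: "card V1 = 2" using e1 cWb by simp
  have c2: "card V2 = 2" using card_Un_Int[OF Gs(1) Gs(2)] Gs(20,21) c3 c1 by simp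
  have "F1 = G1" using card2_facet_eq[OF Gs(1) c1 f1] h1 v1 by simp
  moreover have "F2 = G2" using card2_facet_eq[OF Gs(2) c2 f2] h2 v2 by simp
  ultimately show ?thesis using FU GU by simp
qed

lemma min2_least:
  assumes fW: "finite W" and c3: "card W \<ge> 3" and Y: "Y \<subseteq> W" "Min W \<in> Y" "card Y \<ge> 2"
  shows "\<not> set_gt {Min W, min2 W} Y"
proof
  assume gt: "set_gt {Min W, min2 W} Y"
  define a m where "a = Min W" and "m = min2 W"
  have ne: "W - {a} \<noteq> {}"
  proof
    assume "W - {a} = {}"
    then have "W \<subseteq> {a}" by blast
    then have "card W \<le> 1" using card_mono[of "{a}" W] by simp
    then show False using c3 by simp
  qed
  have "Min (W - {a}) \<in> W - {a}" using ne fW by (intro Min_in) auto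
  then have mW: "m \<in> W - {a}" by (simp add: m_def min2_def a_def)
  have mle: "\<forall>z \<in> W - {a}. m \<le> z" using fW by (simp add: m_def min2_def a_def)
  have cX: "card {a, m} = 2" using mW by simp
  then have cY: "card Y = 2" and neq: "{a, m} \<noteq> Y" and mn: "Min ({a, m} - Y \<union> (Y - {a, m})) \<in> Y"
    using gt assms(5) by (auto simp: set_gt_def a_def m_def)
  obtain x y where xy: "Y = {x, y}" "x \<noteq> y" using cY by (auto simp: card_2_iff)
  obtain z where z: "Y = {a, z}" "z \<noteq> a" using xy Y(2) by (auto simp: a_def doubleton_eq_iff) 
  have zW: "z \<in> W - {a}" using z Y(1) by auto
  have mz: "m \<noteq> z" using neq z by auto
  have "{a, m} - Y \<union> (Y - {a, m}) = {m, z}" using z mz mW by auto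
  moreover have "Min {m, z} = m" using mle zW by (simp add: min_def)
  ultimately have "m \<in> Y" using mn by simp
  then show False using z mz mW by auto
qed

theorem SH1:
  "finite W \<Longrightarrow> card W \<ge> 2 \<Longrightarrow> is_facet W F \<Longrightarrow> is_facet W G \<Longrightarrow> fac_gt W F G \<Longrightarrow> \<not> sigma W F \<subseteq> G"
proof (induction "card W" arbitrary: W F G rule: less_induct)
  case less
  have fW: "finite W" and f: "is_facet W F" and h: "is_facet W G" and gt: "fac_gt W F G" using less by auto
  have neq: "F \<noteq> G" using gt lexgt_irrefl by (auto simp: fac_gt_lexgt)
  show ?case
  proof (cases "card W \<le> 3")
    case True
    then have "card W = 2 \<or> card W = 3" using less(3) by auto
    then have "F = G" using card2_facet_eq[OF fW _ f h] card3_unique[OF fW _ f h] by blast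
    then show ?thesis using neq by simp
  next
    case False
    then have c4: "card W \<ge> 4" by simp
    then have c3: "card W \<ge> 3" by simp
    obtain V1 V2 F1 F2 where g: "gsplit W V1 V2" and f1: "is_facet V1 F1" and f2: "is_facet V2 F2"
      and FU: "F = F1 \<union> F2 \<union> {{Min W, Max W}}" by (rule facet_decomp[OF fW c3 f])
    obtain V1' V2' G1 G2 where g': "gsplit W V1' V2'" and h1: "is_facet V1' G1" and h2: "is_facet V2' G2"
      and GU: "G = G1 \<union> G2 \<union> {{Min W, Max W}}" by (rule facet_decomp[OF fW c3 h])
    note Gs = gsplit_props[OF g] and Gs' = gsplit_props[OF g']
    have cl: "card V1 < card W" "card V2 < card W" using gsplit_card_less[OF g] by auto
    have gt': "set_gt V1 V1' \<or> (V1 = V1' \<and> (fac_gt V1 F1 G1 \<or> (F1 = G1 \<and> fac_gt V2 F2 G2)))"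
      using gt fac_gt_glue[OF g f1 f2 g' h1 h2] FU GU by simp
    have sig: "sigma W F = (if V1 = {Min W, min2 W} then sigma V2 F2 else sigma V2 F2 \<union> edge_of ` Lset (dtree V1 F1))"
      using sigma_glue[OF g f1 f2] FU False by simp
    show ?thesis
    proof (cases "set_gt V1 V1'")
      case True
      have "V1 \<noteq> {Min W, min2 W}" using min2_least[OF fW c3 Gs'(3) Gs'(22) Gs'(25)] True by auto
      then have sg: "sigma W F = sigma V2 F2 \<union> edge_of ` Lset (dtree V1 F1)" using sig by simp
      show ?thesis
      proof
        assume "sigma W F \<subseteq> G"
        then have "edge_of ` Lset (dtree V1 F1) \<subseteq> G1 \<union> G2 \<union> {{Min W, Max W}}" using sg GU by auto
        then have "V1 \<subseteq> V1'" by (rule lemmaK[OF g f1 f2 g' h1 h2])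
        then show False using set_gt_subset[OF Gs'(1)] True by blast
      qed
    next
      case nsg: False
      then have v1: "V1 = V1'" using gt' by simp
      then have v2: "V2 = V2'" using gsplit_V2[OF g] gsplit_V2[OF g'] by simp
      have parts: "G1 = {e \<in> G. e \<subseteq> V1}" "G2 = {e \<in> G. e \<subseteq> V2}"
        using glue_part[OF g' h1 h2] GU v1 v2 by auto
      show ?thesis
      proof (cases "fac_gt V1 F1 G1")
        case True
        obtain X where X: "X \<in> firstborns (dtree V1 F1)" "edge_of X \<notin> G1"
          using LL[OF Gs(1) Gs(25) f1 _ True] h1 v1 by blast
        have "edge_of X \<subseteq> V1"
          using dtree_labels[OF Gs(1) Gs(25) f1] X(1) firstborns_sub edge_of_sub by blast
        then have nG: "edge_of X \<notin> G" using X(2) parts(1) by blast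
        have "V1 \<noteq> {Min W, min2 W}"
        proof
          assume "V1 = {Min W, min2 W}"
          moreover have "card V1 \<ge> 2" by (rule Gs(25))
          moreover have "card {Min W, min2 W} \<le> 2" by (cases "Min W = min2 W") auto
          ultimately have "card V1 = 2" by simp
          then have "F1 = G1" using card2_facet_eq[OF Gs(1) _ f1] h1 v1 by simp
          then show False using True lexgt_irrefl by (simp add: fac_gt_lexgt)
        qed
        then have "edge_of X \<in> sigma W F" using sig X(1) by (auto simp: Lset_def)
        then show ?thesis using nG by blast
      next
        case False
        then have "F1 = G1" "fac_gt V2 F2 G2" using gt' v1 set_gt_irrefl by auto
        then have "\<not> sigma V2 F2 \<subseteq> G2" using less(1)[OF cl(2) Gs(2) Gs(13) f2] h2 v2 by blast
        then obtain e where e: "e \<in> sigma V2 F2" "e \<notin> G2" by blast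
        have "e \<subseteq> V2" using sigma_sub[OF Gs(2) Gs(13) f2 e(1)] .
        then have "e \<notin> G" using e(2) parts(2) by blast
        moreover have "e \<in> sigma W F" using sig e(1) by (auto split: if_splits)
        ultimately show ?thesis by blast
      qed
    qed
  qed
qed

lemma KEdges_finite: "finite U \<Longrightarrow> finite (KEdges U)"
proof -
  assume "finite U"
  then have fp: "finite (Pow U)" by simp
  have "KEdges U \<subseteq> Pow U" by (auto simp: KEdges_def)
  then show ?thesis by (rule finite_subset[OF _ fp])
qed

lemma face_ext:
  assumes fU: "finite U" and h: "is_face U H"
  shows "\<exists>G. is_facet U G \<and> H \<subseteq> G"
proof -
  define P where "P = (\<lambda>G. is_face U G \<and> H \<subseteq> G)"
  have fK: "finite (KEdges U)" using KEdges_finite[OF fU] .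
  have bnd: "\<forall>G. P G \<longrightarrow> card G < Suc (card (KEdges U))"
  proof (intro allI impI)
    fix G assume "P G"
    then have "G \<subseteq> KEdges U" by (simp add: P_def is_face_nf)
    then have "card G \<le> card (KEdges U)" by (rule card_mono[OF fK])
    then show "card G < Suc (card (KEdges U))" by simp
  qed
  have PH: "P H" using h by (simp add: P_def)
  obtain G where G: "P G" "\<forall>G'. P G' \<longrightarrow> card G' \<le> card G"
    using ex_has_greatest_nat[OF PH bnd] by blast
  have "is_facet U G" unfolding is_facet_def
  proof (intro conjI allI impI)
    show "is_face U G" using G(1) by (simp add: P_def)
    fix G' assume g': "is_face U G' \<and> G \<subseteq> G'"
    then have "P G'" using G(1) by (auto simp: P_def)
    then have le: "card G' \<le> card G" using G(2) by blast
    have "G' \<subseteq> KEdges U" using g' by (simp add: is_face_nf)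
    then have fin: "finite G'" by (rule finite_subset[OF _ fK])
    have "G = G'" using card_seteq[OF fin _ le] g' by blast
    then show "G' = G" by simp
  qed
  then show ?thesis using G(1) by (auto simp: P_def)
qed

lemma nf_small:
  assumes fV: "finite V" and c: "card V \<le> 3" and K: "E \<subseteq> KEdges V"
  shows "nf E"
  unfolding nf_def
proof
  assume "\<exists>x ys z. fpath E x ys z"
  then obtain x ys z where fp: "fpath E x ys z" by blast
  have s: "set (x # ys @ [z]) \<subseteq> V" using fpath_verts[OF fp K] .
  have "length (x # ys @ [z]) = card (set (x # ys @ [z]))"
    using fpath_props(1)[OF fp] by (simp add: distinct_card)
  also have "\<dots> \<le> card V" using s fV by (intro card_mono)
  finally show False using fpath_props(3)[OF fp] c by simp
qed

lemma diff_single: "e \<in> F \<Longrightarrow> F - {e} \<subseteq> G \<Longrightarrow> e \<notin> G \<Longrightarrow> F - G = {e}"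
  by blast

lemma flip_top:
  assumes g: "gsplit W V1 V2" and f1: "is_facet V1 F1" and f2: "is_facet V2 F2"
    and g': "gsplit W V1' V2'" and H1: "is_face V1' H1" and H2: "is_face V2' H2"
    and sub: "F1 \<union> F2 \<union> {{Min W, Max W}} - {e} \<subseteq> H1 \<union> H2 \<union> {{Min W, Max W}}"
    and eF: "e \<in> F1 \<union> F2 \<union> {{Min W, Max W}}" and ne: "e \<noteq> {Min W, Max W}"
    and n1: "\<not> e \<subseteq> V1'" and n2: "\<not> e \<subseteq> V2'" and gt: "set_gt V1 V1'"
  shows "\<exists>G. is_facet W G \<and> fac_gt W (F1 \<union> F2 \<union> {{Min W, Max W}}) G
    \<and> (F1 \<union> F2 \<union> {{Min W, Max W}}) - G = {e}"
proof -
  note Gs' = gsplit_props[OF g']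
  obtain G1 where G1: "is_facet V1' G1" "H1 \<subseteq> G1" using face_ext[OF Gs'(1) H1] by blast
  obtain G2 where G2: "is_facet V2' G2" "H2 \<subseteq> G2" using face_ext[OF Gs'(2) H2] by blast
  define G where "G = G1 \<union> G2 \<union> {{Min W, Max W}}"
  have fG: "is_facet W G" using glue_facet[OF g' G1(1) G2(1)] by (simp add: G_def)
  have gtG: "fac_gt W (F1 \<union> F2 \<union> {{Min W, Max W}}) G"
    using fac_gt_glue[OF g f1 f2 g' G1(1) G2(1)] gt by (simp add: G_def)
  have K1: "G1 \<subseteq> KEdges V1'" and K2: "G2 \<subseteq> KEdges V2'" using G1 G2 by (auto dest: facet_sub)
  have "e \<notin> G1" using K1 n1 KEdges_sub by blast
  moreover have "e \<notin> G2" using K2 n2 KEdges_sub by blast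
  ultimately have eG: "e \<notin> G" using ne by (simp add: G_def)
  have "F1 \<union> F2 \<union> {{Min W, Max W}} - {e} \<subseteq> G" using sub G1(2) G2(2) by (auto simp: G_def)
  then show ?thesis using fG gtG diff_single[OF eF _ eG] by blast
qed


lemma facet_KEdges_disj:
  assumes g: "gsplit W V1 V2" and f1: "is_facet V1 F1" and e: "e \<in> F1"
  shows "\<not> e \<subseteq> V2" "e \<noteq> {Min W, Max W}"
proof -
  note Gs = gsplit_props[OF g]
  have eK: "e \<in> KEdges V1" using e facet_sub[OF f1] by blast
  show "\<not> e \<subseteq> V2"
  proof
    assume "e \<subseteq> V2"
    then have "e \<subseteq> {Max V1}" using KEdges_sub[OF eK] Gs(20) by blast
    then show False using KEdges_two[OF eK] by blast
  qed
  show "e \<noteq> {Min W, Max W}" using KEdges_sub[OF eK] Gs(24) by auto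
qed

lemma facet_KEdges_disj2:
  assumes g: "gsplit W V1 V2" and f2: "is_facet V2 F2" and e: "e \<in> F2"
  shows "\<not> e \<subseteq> V1" "e \<noteq> {Min W, Max W}"
proof -
  note Gs = gsplit_props[OF g]
  have eK: "e \<in> KEdges V2" using e facet_sub[OF f2] by blast
  show "\<not> e \<subseteq> V1"
  proof
    assume "e \<subseteq> V1"
    then have "e \<subseteq> {Max V1}" using KEdges_sub[OF eK] Gs(20) by blast
    then show False using KEdges_two[OF eK] by blast
  qed
  show "e \<noteq> {Min W, Max W}" using KEdges_sub[OF eK] Gs(10) by auto
qed

lemma glue_left:
  assumes g: "gsplit W V1 V2" and f1: "is_facet V1 F1" and f2: "is_facet V2 F2"
    and h1: "is_facet V1 G1" and gt: "fac_gt V1 F1 G1" and d: "F1 - G1 = {e}"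
  shows "\<exists>G. is_facet W G \<and> fac_gt W (F1 \<union> F2 \<union> {{Min W, Max W}}) G
    \<and> (F1 \<union> F2 \<union> {{Min W, Max W}}) - G = {e}"
proof -
  define G where "G = G1 \<union> F2 \<union> {{Min W, Max W}}"
  have fG: "is_facet W G" using glue_facet[OF g h1 f2] by (simp add: G_def)
  have gtG: "fac_gt W (F1 \<union> F2 \<union> {{Min W, Max W}}) G"
    using fac_gt_glue[OF g f1 f2 g h1 f2] gt by (simp add: G_def)
  have e1: "e \<in> F1" "e \<notin> G1" using d by auto
  have "e \<notin> F2" using facet_KEdges_disj(1)[OF g f1 e1(1)] facet_sub[OF f2] KEdges_sub by blast
  moreover have "e \<noteq> {Min W, Max W}" using facet_KEdges_disj(2)[OF g f1 e1(1)] .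
  ultimately have "e \<notin> G" using e1 by (simp add: G_def)
  moreover have "F1 \<union> F2 \<union> {{Min W, Max W}} - {e} \<subseteq> G" using d by (auto simp: G_def)
  ultimately show ?thesis using fG gtG diff_single[of e "F1 \<union> F2 \<union> {{Min W, Max W}}" G] e1 by blast
qed

lemma glue_right:
  assumes g: "gsplit W V1 V2" and f1: "is_facet V1 F1" and f2: "is_facet V2 F2"
    and h2: "is_facet V2 G2" and gt: "fac_gt V2 F2 G2" and d: "F2 - G2 = {e}"
  shows "\<exists>G. is_facet W G \<and> fac_gt W (F1 \<union> F2 \<union> {{Min W, Max W}}) G
    \<and> (F1 \<union> F2 \<union> {{Min W, Max W}}) - G = {e}"
proof -
  define G where "G = F1 \<union> G2 \<union> {{Min W, Max W}}"
  have fG: "is_facet W G" using glue_facet[OF g f1 h2] by (simp add: G_def)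
  have gtG: "fac_gt W (F1 \<union> F2 \<union> {{Min W, Max W}}) G"
    using fac_gt_glue[OF g f1 f2 g f1 h2] gt set_gt_irrefl by (simp add: G_def)
  have e1: "e \<in> F2" "e \<notin> G2" using d by auto
  have "e \<notin> F1" using facet_KEdges_disj2(1)[OF g f2 e1(1)] facet_sub[OF f1] KEdges_sub by blast
  moreover have "e \<noteq> {Min W, Max W}" using facet_KEdges_disj2(2)[OF g f2 e1(1)] .
  ultimately have "e \<notin> G" using e1 by (simp add: G_def)
  moreover have "F1 \<union> F2 \<union> {{Min W, Max W}} - {e} \<subseteq> G" using d by (auto simp: G_def)
  ultimately show ?thesis using fG gtG diff_single[of e "F1 \<union> F2 \<union> {{Min W, Max W}}" G] e1 by blast
qed

lemma typeI:
  assumes g: "gsplit W V1 V2" and f1: "is_facet V1 F1" and f2: "is_facet V2 F2" and c13: "card V1 \<ge> 3"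
  shows "\<exists>G. is_facet W G \<and> fac_gt W (F1 \<union> F2 \<union> {{Min W, Max W}}) G
    \<and> (F1 \<union> F2 \<union> {{Min W, Max W}}) - G = {edge_of V1}"
proof -
  note Gs = gsplit_props[OF g]
  obtain V11 V12 F11 F12 where g1: "gsplit V1 V11 V12" and f11: "is_facet V11 F11" and f12: "is_facet V12 F12"
    and F1U: "F1 = F11 \<union> F12 \<union> {{Min V1, Max V1}}" by (rule facet_decomp[OF Gs(1) c13 f1])
  note G1s = gsplit_props[OF g1]
  have g': "gsplit W V11 (V12 \<union> V2)" unfolding gsplit_def
  proof (intro conjI)
    show "finite W" by (rule Gs(16))
    show "V11 \<union> (V12 \<union> V2) = W" using G1s(21) Gs(21) by blast
    have "V11 \<inter> V2 = {}"
    proof (rule ccontr)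
      assume "V11 \<inter> V2 \<noteq> {}"
      then obtain x where x: "x \<in> V11" "x \<in> V2" by blast
      then have "x \<in> V1 \<inter> V2" using G1s(3) by blast
      then have "x = Max V1" using Gs(20) by blast
      then show False using G1s(24) x(1) by simp
    qed
    then show "V11 \<inter> (V12 \<union> V2) = {Max V11}" using G1s(20) by blast
    show "Min W \<in> V11" using G1s(22) Gs(11) by simp
    show "Max W \<in> V12 \<union> V2" using Gs(23) by simp
    show "Max W \<notin> V11" using G1s(3) Gs(24) by blast
    show "2 \<le> card V11" by (rule G1s(25))
  qed
  have H1: "is_face V11 F11" using facet_face[OF f11] .
  have K12: "F12 \<subseteq> KEdges V12" and K2: "F2 \<subseteq> KEdges V2" using f12 f2 by (auto dest: facet_sub)
  have i12: "V12 \<inter> V2 = {Max V1}" using G1s(4,23) Gs(20) by blast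
  have le12: "\<forall>v\<in>V12. v \<le> Max V1" using G1s(4) Gs(7) by blast
  have "nf (F12 \<union> F2)" by (rule cut_nf[OF K12 K2 i12 le12 facet_nf[OF f12] facet_nf[OF f2]])
  moreover have "F12 \<union> F2 \<subseteq> KEdges (V12 \<union> V2)"
    using K12 K2 KEdges_mono[of V12 "V12 \<union> V2"] KEdges_mono[of V2 "V12 \<union> V2"] by blast
  ultimately have H2: "is_face (V12 \<union> V2) (F12 \<union> F2)" by (simp add: is_face_nf)
  have e: "edge_of V1 = {Min W, Max V1}" using Gs(11) by (simp add: edge_of_def)
  have sub: "F1 \<union> F2 \<union> {{Min W, Max W}} - {edge_of V1} \<subseteq> F11 \<union> (F12 \<union> F2) \<union> {{Min W, Max W}}"
    using F1U e Gs(11) by auto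
  have eF: "edge_of V1 \<in> F1 \<union> F2 \<union> {{Min W, Max W}}" using F1U e Gs(11) by simp
  have ne: "edge_of V1 \<noteq> {Min W, Max W}" using e Gs(9,19) by (auto simp: doubleton_eq_iff)
  have n1: "\<not> edge_of V1 \<subseteq> V11" using e G1s(24) by auto
  have n2: "\<not> edge_of V1 \<subseteq> V12 \<union> V2" using e G1s(10) Gs(10) Gs(11) by auto
  have gt: "set_gt V1 V11" using gsplit_card_less[OF g1] by (simp add: set_gt_card)
  show ?thesis by (rule flip_top[OF g f1 f2 g' H1 H2 sub eF ne n1 n2 gt])
qed

lemma typeII:
  assumes g: "gsplit W V1 V2" and f1: "is_facet V1 F1" and f2: "is_facet V2 F2" and c12: "card V1 = 2"
    and nm: "V1 \<noteq> {Min W, min2 W}"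
  shows "\<exists>G. is_facet W G \<and> fac_gt W (F1 \<union> F2 \<union> {{Min W, Max W}}) G
    \<and> (F1 \<union> F2 \<union> {{Min W, Max W}}) - G = {edge_of V1}"
proof -
  note Gs = gsplit_props[OF g]
  define a z m where "a = Min W" and "z = Max V1" and "m = min2 W"
  have zmax: "Max V1 = z" by (simp add: z_def)
  have amin: "Min V1 = a" using Gs(11) by (simp add: a_def)
  have "V1 = {Min V1, Max V1}" by (rule card2_eq[OF Gs(1) c12])
  also have "\<dots> = {a, z}" by (simp only: zmax amin)
  finally have V1: "V1 = {a, z}" .
  have za: "z \<noteq> a" using Gs(26) by (simp add: a_def z_def)
  have zW: "z \<in> W" using Gs(3,5) by (auto simp: z_def)
  have aW: "a \<in> W" using Gs(17) by (simp add: a_def)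
  have "V2 = W - V1 \<union> {z}" using gsplit_V2[OF g] by (simp only: zmax)
  also have "\<dots> = W - {a}" using V1 za zW by auto
  finally have V2: "V2 = W - {a}" .
  have zWa: "z \<in> W - {a}" using zW za by blast
  then have ne: "W - {a} \<noteq> {}" by blast
  have fWa: "finite (W - {a})" using Gs(16) by simp
  have "Min (W - {a}) \<in> W - {a}" using ne fWa by (intro Min_in)
  then have mW: "m \<in> W - {a}" by (simp add: m_def min2_def a_def)
  have "Min (W - {a}) \<le> z" using fWa zWa by (rule Min_le)
  then have mle: "m \<le> z" by (simp add: m_def min2_def a_def)
  have mz: "m \<noteq> z"
  proof
    assume "m = z"
    then have "V1 = {Min W, min2 W}" using V1 by (simp add: a_def m_def)
    then show False using nm by simp
  qed
  have zb: "z < Max W" using Gs(9) by (simp add: z_def)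
  have am: "a < m" using mW Gs(28) by (auto simp: a_def le_neq_implies_less)
  have mb: "m \<noteq> Max W" using mle mz zb by simp
  have "F1 = {{Min V1, Max V1}}" by (rule card2_facet[OF Gs(1) c12 f1])
  then have F1: "F1 = {{a, z}}" by (simp only: zmax amin)
  have maxam: "Max {a, m} = m" using am by simp
  have g': "gsplit W {a, m} V2" unfolding gsplit_def
  proof (intro conjI)
    show "finite W" by (rule Gs(16))
    show "{a, m} \<union> V2 = W" using V2 aW mW by auto
    show "{a, m} \<inter> V2 = {Max {a, m}}" using V2 maxam mW by auto
    show "Min W \<in> {a, m}" by (simp add: a_def)
    show "Max W \<in> V2" by (rule Gs(23))
    show "Max W \<notin> {a, m}" using mb Gs(19) by (auto simp: a_def)
    show "2 \<le> card {a, m}" using am by simp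
  qed
  have H1: "is_face {a, m} {{a, m}}"
  proof -
    have K: "{{a, m}} \<subseteq> KEdges {a, m}" using am by (auto simp: KEdges_iff)
    moreover have "nf {{a, m}}" by (rule nf_small[OF _ _ K]) (use am in auto)
    ultimately show ?thesis by (simp add: is_face_nf)
  qed
  have H2: "is_face V2 F2" using facet_face[OF f2] .
  have e: "edge_of V1 = {a, z}" unfolding edge_of_def by (simp only: zmax amin)
  have sub: "F1 \<union> F2 \<union> {{Min W, Max W}} - {edge_of V1} \<subseteq> {{a, m}} \<union> F2 \<union> {{Min W, Max W}}"
    using F1 e by auto
  have eF: "edge_of V1 \<in> F1 \<union> F2 \<union> {{Min W, Max W}}" using F1 e by simp
  have ne': "edge_of V1 \<noteq> {Min W, Max W}" using e zb za by (auto simp: a_def doubleton_eq_iff)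
  have n1: "\<not> edge_of V1 \<subseteq> {a, m}" using e za mz by auto
  have n2: "\<not> edge_of V1 \<subseteq> V2" using e V2 by auto
  have gt: "set_gt V1 {a, m}"
  proof -
    have "V1 - {a, m} \<union> ({a, m} - V1) = {m, z}" using V1 za mz am by auto
    moreover have "Min {m, z} = m" using mle by (simp add: min_def)
    moreover have "card V1 = card {a, m}" using c12 am by simp
    moreover have "V1 \<noteq> {a, m}" using V1 za mz by (auto simp: doubleton_eq_iff)
    ultimately show ?thesis by (simp add: set_gt_def)
  qed
  show ?thesis by (rule flip_top[OF g f1 f2 g' H1 H2 sub eF ne' n1 n2 gt])
qed



lemma typeIII:
  assumes g: "gsplit W V1 V2" and f1: "is_facet V1 F1" and f2: "is_facet V2 F2"
    and AD: "A \<union> D = V1 - {Max V1}" "A \<inter> D = {}" and aA: "Min W \<in> A"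
    and e: "e = {x, y}" "x \<in> A" "y \<in> D" and eF1: "e \<in> F1"
    and br: "\<forall>f \<in> F1 - {e}. f \<subseteq> insert (Max V1) A \<or> f \<subseteq> insert (Max V1) D"
  shows "\<exists>G. is_facet W G \<and> fac_gt W (F1 \<union> F2 \<union> {{Min W, Max W}}) G
    \<and> (F1 \<union> F2 \<union> {{Min W, Max W}}) - G = {e}"
proof -
  note Gs = gsplit_props[OF g]
  define c where "c = Max V1"
  have AV: "A \<subseteq> V1 - {c}" "D \<subseteq> V1 - {c}" using AD by (auto simp: c_def)
  have Alt: "\<forall>v\<in>A. v < c"
  proof
    fix v assume vA: "v \<in> A"
    then have v1: "v \<in> V1" and vc: "v \<noteq> c" using AV(1) by auto
    have "v \<le> Max V1" using v1 Gs(7) by blast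
    then have "v \<le> c" by (simp add: c_def)
    then show "v < c" using vc by simp
  qed
  have Dle: "\<forall>v\<in>insert c D. v \<le> c" using AV(2) Gs(7) by (auto simp: c_def)
  have cV1: "c \<in> V1" and cV2: "c \<in> V2" using Gs(5,6) by (auto simp: c_def)
  have fA: "finite (insert c A)" using AV(1) Gs(1) by (auto intro: finite_subset)
  have mx: "Max (insert c A) = c" using fA Alt by (intro Max_eqI) auto
  have AV2: "A \<inter> V2 = {}" using AV(1) Gs(20) by (auto simp: c_def)
  have DV2: "D \<inter> V2 = {}" using AV(2) Gs(20) by (auto simp: c_def)
  have g': "gsplit W (insert c A) (V2 \<union> D)" unfolding gsplit_def
  proof (intro conjI)
    show "finite W" by (rule Gs(16))
    show "insert c A \<union> (V2 \<union> D) = W" using AD(1) cV1 Gs(21) by (auto simp: c_def)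
    show "insert c A \<inter> (V2 \<union> D) = {Max (insert c A)}" using mx cV2 AV2 AD(2) AV(2) by auto
    show "Min W \<in> insert c A" using aA by simp
    show "Max W \<in> V2 \<union> D" using Gs(23) by simp
    show "Max W \<notin> insert c A" using Gs(9) AV(1) Gs(24) by (auto simp: c_def)
    have "Min W \<noteq> c" using Gs(26) by (simp add: c_def)
    then have "card {Min W, c} = 2" by simp
    moreover have "{Min W, c} \<subseteq> insert c A" using aA by auto
    then have "card {Min W, c} \<le> card (insert c A)" by (rule card_mono[OF fA])
    ultimately show "2 \<le> card (insert c A)" by simp
  qed
  have K1: "F1 \<subseteq> KEdges V1" and K2: "F2 \<subseteq> KEdges V2" using f1 f2 by (auto dest: facet_sub)
  define H1 where "H1 = {f \<in> F1. f \<subseteq> insert c A}"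
  define E1 where "E1 = {f \<in> F1. f \<subseteq> insert c D}"
  have H1: "is_face (insert c A) H1"
  proof -
    have "H1 \<subseteq> KEdges (insert c A)" using K1 by (auto simp: H1_def KEdges_sub_iff)
    moreover have "nf H1" using nf_mono[OF facet_nf[OF f1]] by (auto simp: H1_def)
    ultimately show ?thesis by (simp add: is_face_nf)
  qed
  have KE1: "E1 \<subseteq> KEdges (insert c D)" using K1 by (auto simp: E1_def KEdges_sub_iff)
  have iD: "insert c D \<inter> V2 = {c}" using DV2 cV2 by auto
  have "E1 \<subseteq> F1" by (auto simp: E1_def)
  then have nE1: "nf E1" by (rule nf_mono[OF facet_nf[OF f1]])
  have "nf (E1 \<union> F2)" by (rule cut_nf[OF KE1 K2 iD Dle nE1 facet_nf[OF f2]])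
  moreover have "E1 \<union> F2 \<subseteq> KEdges (V2 \<union> D)"
    using KE1 K2 KEdges_mono[of "insert c D" "V2 \<union> D"] KEdges_mono[of V2 "V2 \<union> D"] cV2 by blast
  ultimately have H2: "is_face (V2 \<union> D) (F2 \<union> E1)" by (simp add: is_face_nf Un_commute)
  have sub: "F1 \<union> F2 \<union> {{Min W, Max W}} - {e} \<subseteq> H1 \<union> (F2 \<union> E1) \<union> {{Min W, Max W}}"
  proof
    fix f assume f: "f \<in> F1 \<union> F2 \<union> {{Min W, Max W}} - {e}"
    show "f \<in> H1 \<union> (F2 \<union> E1) \<union> {{Min W, Max W}}"
    proof (cases "f \<in> F1")
      case True
      then have "f \<in> F1 - {e}" using f by blast
      then have "f \<subseteq> insert c A \<or> f \<subseteq> insert c D" using br by (simp add: c_def)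
      then show ?thesis using True by (auto simp: H1_def E1_def)
    next
      case False
      then show ?thesis using f by blast
    qed
  qed
  have eF: "e \<in> F1 \<union> F2 \<union> {{Min W, Max W}}" using eF1 by simp
  have ne: "e \<noteq> {Min W, Max W}" using facet_KEdges_disj(2)[OF g f1 eF1] .
  have xy: "x \<noteq> c" "x \<notin> D" "x \<notin> V2" "y \<notin> A" "y \<noteq> c" using e(2,3) AV AD(2) AV2 by auto
  have n1: "\<not> e \<subseteq> insert c A" using e(1) xy by auto
  have n2: "\<not> e \<subseteq> V2 \<union> D" using e(1) xy by auto
  have gt: "set_gt V1 (insert c A)"
  proof -
    have "insert c A \<subset> V1" using AV cV1 e(3) AD(2) by auto
    then have "card (insert c A) < card V1" by (rule psubset_card_mono[OF Gs(1)])
    then show ?thesis by (rule set_gt_card)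
  qed
  show ?thesis by (rule flip_top[OF g f1 f2 g' H1 H2 sub eF ne n1 n2 gt])
qed

definition bridge :: "nat set \<Rightarrow> nat set set \<Rightarrow> nat set \<Rightarrow> bool" where
  "bridge Y F e \<longleftrightarrow> (\<exists>A B. A \<union> B = Y - {Max Y} \<and> A \<inter> B = {} \<and> (\<exists>x y. e = {x, y} \<and> x \<in> A \<and> y \<in> B)
     \<and> (\<forall>f \<in> F - {e}. f \<subseteq> insert (Max Y) A \<or> f \<subseteq> insert (Max Y) B))"

lemma bridge_typeIII:
  assumes g: "gsplit W V1 V2" and f1: "is_facet V1 F1" and f2: "is_facet V2 F2"
    and br: "bridge V1 F1 e" and eF1: "e \<in> F1"
  shows "\<exists>G. is_facet W G \<and> fac_gt W (F1 \<union> F2 \<union> {{Min W, Max W}}) G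
    \<and> (F1 \<union> F2 \<union> {{Min W, Max W}}) - G = {e}"
proof -
  note Gs = gsplit_props[OF g]
  obtain A B x y where AB: "A \<union> B = V1 - {Max V1}" "A \<inter> B = {}" and e: "e = {x, y}" "x \<in> A" "y \<in> B"
    and fs: "\<forall>f \<in> F1 - {e}. f \<subseteq> insert (Max V1) A \<or> f \<subseteq> insert (Max V1) B"
    using br by (auto simp: bridge_def)
  have "Min W \<in> V1 - {Max V1}" using Gs(22,26) by simp
  then have "Min W \<in> A \<or> Min W \<in> B" using AB(1) by blast
  then show ?thesis
  proof
    assume "Min W \<in> A"
    then show ?thesis by (rule typeIII[OF g f1 f2 AB _ e eF1 fs])
  next
    assume aB: "Min W \<in> B"
    have AB': "B \<union> A = V1 - {Max V1}" "B \<inter> A = {}" using AB by auto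
    have e': "e = {y, x}" using e(1) by (simp add: insert_commute)
    have fs': "\<forall>f \<in> F1 - {e}. f \<subseteq> insert (Max V1) B \<or> f \<subseteq> insert (Max V1) A" using fs by blast
    show ?thesis using typeIII[OF g f1 f2 AB' aB e' e(3) e(2) eF1 fs'] .
  qed
qed


lemma bridge_base:
  assumes g: "gsplit W V1 V2" and f1: "is_facet V1 F1" and f2: "is_facet V2 F2" and c12: "card V1 = 2"
  shows "bridge W (F1 \<union> F2 \<union> {{Min W, Max W}}) (edge_of V1)"
proof -
  note Gs = gsplit_props[OF g]
  define a z where "a = Min W" and "z = Max V1"
  have zmax: "Max V1 = z" by (simp add: z_def)
  have amin: "Min V1 = a" using Gs(11) by (simp add: a_def)
  have "V1 = {Min V1, Max V1}" by (rule card2_eq[OF Gs(1) c12])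
  also have "\<dots> = {a, z}" by (simp only: zmax amin)
  finally have V1: "V1 = {a, z}" .
  have za: "z \<noteq> a" using Gs(26) by (simp add: a_def z_def)
  have zW: "z \<in> W" using Gs(3,5) by (auto simp: z_def)
  have "V2 = W - V1 \<union> {z}" using gsplit_V2[OF g] by (simp only: zmax)
  also have "\<dots> = W - {a}" using V1 za zW by auto
  finally have V2: "V2 = W - {a}" .
  have "F1 = {{Min V1, Max V1}}" by (rule card2_facet[OF Gs(1) c12 f1])
  then have F1: "F1 = {{a, z}}" by (simp only: zmax amin)
  have e: "edge_of V1 = {a, z}" unfolding edge_of_def by (simp only: zmax amin)
  have zb: "z \<noteq> Max W" using Gs(9) by (simp add: z_def)
  have ab: "a \<noteq> Max W" using Gs(19) by (simp add: a_def)
  have K2: "F2 \<subseteq> KEdges V2" using f2 by (auto dest: facet_sub)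
  show ?thesis unfolding bridge_def
  proof (rule exI[of _ "{a}"], rule exI[of _ "V2 - {Max W}"], intro conjI)
    show "{a} \<union> (V2 - {Max W}) = W - {Max W}" using V2 Gs(17) ab by (auto simp: a_def)
    show "{a} \<inter> (V2 - {Max W}) = {}" using V2 by auto
    show "\<exists>x y. edge_of V1 = {x, y} \<and> x \<in> {a} \<and> y \<in> V2 - {Max W}" using e V2 zW za zb by auto
    show "\<forall>f\<in>F1 \<union> F2 \<union> {{Min W, Max W}} - {edge_of V1}. f \<subseteq> insert (Max W) {a} \<or> f \<subseteq> insert (Max W) (V2 - {Max W})"
    proof
      fix f assume f: "f \<in> F1 \<union> F2 \<union> {{Min W, Max W}} - {edge_of V1}"
      then have "f \<in> F2 \<or> f = {a, Max W}" using F1 e by (auto simp: a_def)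
      then show "f \<subseteq> insert (Max W) {a} \<or> f \<subseteq> insert (Max W) (V2 - {Max W})"
        using K2 KEdges_sub by blast
    qed
  qed
qed


lemma bridge_lift:
  assumes g: "gsplit W V1 V2" and f1: "is_facet V1 F1" and f2: "is_facet V2 F2"
    and br: "bridge V2 F2 e"
  shows "bridge W (F1 \<union> F2 \<union> {{Min W, Max W}}) e"
proof -
  note Gs = gsplit_props[OF g]
  obtain A B x y where AB: "A \<union> B = V2 - {Max V2}" "A \<inter> B = {}" and e: "e = {x, y}" "x \<in> A" "y \<in> B"
    and fs: "\<forall>f \<in> F2 - {e}. f \<subseteq> insert (Max V2) A \<or> f \<subseteq> insert (Max V2) B"
    using br by (auto simp: bridge_def)
  have K1: "F1 \<subseteq> KEdges V1" using f1 by (auto dest: facet_sub)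
  have mV2: "Max V2 = Max W" by (rule Gs(12))
  have cV: "Max V1 \<in> V2 - {Max V2}" using Gs(6,9,12) by auto
  have V1b: "V1 \<subseteq> W - {Max W}" using Gs(3,24) by auto
  have iV: "V1 \<inter> (V2 - {Max V2}) = {Max V1}" using Gs(20) cV by auto
  have aV1: "Min W \<in> V1" by (rule Gs(22))
  have U: "V1 \<union> (V2 - {Max V2}) = W - {Max W}" using Gs(21) V1b mV2 by auto
  have edges1: "f \<subseteq> V1" if "f \<in> F1 \<union> {{Min W, Max W}}" "f \<noteq> {Min W, Max W}" for f
    using that K1 KEdges_sub by blast
  have "Max V1 \<in> A \<or> Max V1 \<in> B" using cV AB(1) by blast
  then show ?thesis
  proof
    assume cA: "Max V1 \<in> A"
    have dj: "V1 \<inter> B = {}"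
    proof (rule ccontr)
      assume "V1 \<inter> B \<noteq> {}"
      then obtain v where v: "v \<in> V1" "v \<in> B" by blast
      then have "v \<in> V1 \<inter> (V2 - {Max V2})" using AB(1) by blast
      then have "v = Max V1" using iV by blast
      then show False using v(2) cA AB(2) by blast
    qed
    show ?thesis unfolding bridge_def
    proof (rule exI[of _ "A \<union> V1"], rule exI[of _ B], intro conjI)
      show "(A \<union> V1) \<union> B = W - {Max W}" using AB(1) U by auto
      show "(A \<union> V1) \<inter> B = {}" using AB(2) dj by auto
      show "\<exists>x y. e = {x, y} \<and> x \<in> A \<union> V1 \<and> y \<in> B" using e by auto
      show "\<forall>f\<in>F1 \<union> F2 \<union> {{Min W, Max W}} - {e}. f \<subseteq> insert (Max W) (A \<union> V1) \<or> f \<subseteq> insert (Max W) B"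
      proof
        fix f assume f: "f \<in> F1 \<union> F2 \<union> {{Min W, Max W}} - {e}"
        show "f \<subseteq> insert (Max W) (A \<union> V1) \<or> f \<subseteq> insert (Max W) B"
        proof (cases "f \<in> F2")
          case True then show ?thesis using fs f mV2 by auto
        next
          case False
          then have "f \<in> F1 \<or> f = {Min W, Max W}" using f by auto
          then show ?thesis using edges1 aV1 by auto
        qed
      qed
    qed
  next
    assume cB: "Max V1 \<in> B"
    have dj: "V1 \<inter> A = {}"
    proof (rule ccontr)
      assume "V1 \<inter> A \<noteq> {}"
      then obtain v where v: "v \<in> V1" "v \<in> A" by blast
      then have "v \<in> V1 \<inter> (V2 - {Max V2})" using AB(1) by blast
      then have "v = Max V1" using iV by blast
      then show False using v(2) cB AB(2) by blast
    qed
    show ?thesis unfolding bridge_def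
    proof (rule exI[of _ A], rule exI[of _ "B \<union> V1"], intro conjI)
      show "A \<union> (B \<union> V1) = W - {Max W}" using AB(1) U by auto
      show "A \<inter> (B \<union> V1) = {}" using AB(2) dj by auto
      show "\<exists>x y. e = {x, y} \<and> x \<in> A \<and> y \<in> B \<union> V1" using e by auto
      show "\<forall>f\<in>F1 \<union> F2 \<union> {{Min W, Max W}} - {e}. f \<subseteq> insert (Max W) A \<or> f \<subseteq> insert (Max W) (B \<union> V1)"
      proof
        fix f assume f: "f \<in> F1 \<union> F2 \<union> {{Min W, Max W}} - {e}"
        show "f \<subseteq> insert (Max W) A \<or> f \<subseteq> insert (Max W) (B \<union> V1)"
        proof (cases "f \<in> F2")
          case True then show ?thesis using fs f mV2 by auto
        next
          case False
          then have "f \<in> F1 \<or> f = {Min W, Max W}" using f by auto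
          then show ?thesis using edges1 aV1 by auto
        qed
      qed
    qed
  qed
qed

lemma dtree_card2: "finite W \<Longrightarrow> card W = 2 \<Longrightarrow> is_facet W F \<Longrightarrow> dtree W F = Leaf W"
  using dtree_of.base dtree_eq by blast

lemma edge_in_F1:
  assumes "finite V1" "card V1 \<ge> 2" "is_facet V1 F1" "X \<in> firstborns (dtree V1 F1)"
  shows "edge_of X \<in> F1"
proof -
  have "X \<in> set (traversal (dtree V1 F1))" using assms(4) firstborns_sub by blast
  then show ?thesis using dtree_edges[OF assms(1-3)] by blast
qed

lemma lemS:
  "finite W \<Longrightarrow> card W \<ge> 2 \<Longrightarrow> is_facet W F \<Longrightarrow> X \<in> firstborns (dtree W F) \<Longrightarrow>
    (\<exists>G. is_facet W G \<and> fac_gt W F G \<and> F - G = {edge_of X}) \<or> bridge W F (edge_of X)"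
proof (induction "card W" arbitrary: W F X rule: less_induct)
  case less
  have fW: "finite W" and f: "is_facet W F" and X: "X \<in> firstborns (dtree W F)" using less by auto
  show ?case
  proof (cases "card W = 2")
    case True
    then show ?thesis using X dtree_card2[OF fW True f] by simp
  next
    case False
    then have c3: "card W \<ge> 3" using less by simp
    obtain V1 V2 F1 F2 where g: "gsplit W V1 V2" and f1: "is_facet V1 F1" and f2: "is_facet V2 F2"
      and FU: "F = F1 \<union> F2 \<union> {{Min W, Max W}}" by (rule facet_decomp[OF fW c3 f])
    note Gs = gsplit_props[OF g]
    have cl: "card V1 < card W" "card V2 < card W" using gsplit_card_less[OF g] by auto
    have dF: "dtree W F = Node W (dtree V1 F1) (dtree V2 F2)" using dtree_glue[OF g f1 f2] FU by simp
    have lab: "label (dtree V1 F1) = V1" using dtree_label[OF Gs(1) Gs(25) f1] .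
    have "X = V1 \<or> X \<in> firstborns (dtree V1 F1) \<or> X \<in> firstborns (dtree V2 F2)" using X dF lab by auto
    moreover
    {
      assume XV: "X = V1"
      have ?thesis
      proof (cases "card V1 \<ge> 3")
        case True
        then show ?thesis using typeI[OF g f1 f2 True] FU XV by simp
      next
        case False
        then have "card V1 = 2" using Gs(25) by simp
        then show ?thesis using bridge_base[OF g f1 f2] FU XV by simp
      qed
    }
    moreover
    {
      assume X1: "X \<in> firstborns (dtree V1 F1)"
      have eF1: "edge_of X \<in> F1" by (rule edge_in_F1[OF Gs(1) Gs(25) f1 X1])
      have "(\<exists>G. is_facet V1 G \<and> fac_gt V1 F1 G \<and> F1 - G = {edge_of X}) \<or> bridge V1 F1 (edge_of X)"
        by (rule less(1)[OF cl(1) Gs(1) Gs(25) f1 X1])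
      then have ?thesis
      proof
        assume "\<exists>G. is_facet V1 G \<and> fac_gt V1 F1 G \<and> F1 - G = {edge_of X}"
        then obtain G1 where "is_facet V1 G1" "fac_gt V1 F1 G1" "F1 - G1 = {edge_of X}" by blast
        then show ?thesis using glue_left[OF g f1 f2] FU by simp
      next
        assume "bridge V1 F1 (edge_of X)"
        then show ?thesis using bridge_typeIII[OF g f1 f2 _ eF1] FU by simp
      qed
    }
    moreover
    {
      assume X2: "X \<in> firstborns (dtree V2 F2)"
      have "(\<exists>G. is_facet V2 G \<and> fac_gt V2 F2 G \<and> F2 - G = {edge_of X}) \<or> bridge V2 F2 (edge_of X)"
        by (rule less(1)[OF cl(2) Gs(2) Gs(13) f2 X2])
      then have ?thesis
      proof
        assume "\<exists>G. is_facet V2 G \<and> fac_gt V2 F2 G \<and> F2 - G = {edge_of X}"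
        then obtain G2 where "is_facet V2 G2" "fac_gt V2 F2 G2" "F2 - G2 = {edge_of X}" by blast
        then show ?thesis using glue_right[OF g f1 f2] FU by simp
      next
        assume "bridge V2 F2 (edge_of X)"
        then show ?thesis using bridge_lift[OF g f1 f2] FU by simp
      qed
    }
    ultimately show ?thesis by blast
  qed
qed

theorem SH2:
  "finite W \<Longrightarrow> card W \<ge> 2 \<Longrightarrow> is_facet W F \<Longrightarrow> e \<in> sigma W F \<Longrightarrow>
    \<exists>G. is_facet W G \<and> fac_gt W F G \<and> F - G = {e}"
proof (induction "card W" arbitrary: W F e rule: less_induct)
  case less
  have fW: "finite W" and f: "is_facet W F" and e: "e \<in> sigma W F" using less by auto
  show ?case
  proof (cases "card W = 2")
    case True
    then show ?thesis using e dtree_card2[OF fW True f] by (simp add: sigma_def)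
  next
    case False
    then have c3: "card W \<ge> 3" using less by simp
    obtain V1 V2 F1 F2 where g: "gsplit W V1 V2" and f1: "is_facet V1 F1" and f2: "is_facet V2 F2"
      and FU: "F = F1 \<union> F2 \<union> {{Min W, Max W}}" by (rule facet_decomp[OF fW c3 f])
    note Gs = gsplit_props[OF g]
    have cl: "card V1 < card W" "card V2 < card W" using gsplit_card_less[OF g] by auto
    have sg: "sigma W F = (if card W \<le> 3 then {}
      else if V1 = {Min W, min2 W} then sigma V2 F2 else sigma V2 F2 \<union> edge_of ` Lset (dtree V1 F1))"
      using sigma_glue[OF g f1 f2] FU by simp
    have c4: "\<not> card W \<le> 3" using e sg by (auto split: if_splits)
    show ?thesis
    proof (cases "e \<in> sigma V2 F2")
      case True
      obtain G2 where "is_facet V2 G2" "fac_gt V2 F2 G2" "F2 - G2 = {e}"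
        using less(1)[OF cl(2) Gs(2) Gs(13) f2 True] by blast
      then show ?thesis using glue_right[OF g f1 f2] FU by simp
    next
      case False
      then have nm: "V1 \<noteq> {Min W, min2 W}" and eL: "e \<in> edge_of ` Lset (dtree V1 F1)"
        using e sg c4 by (auto split: if_splits)
      obtain X where X: "X \<in> Lset (dtree V1 F1)" "e = edge_of X" using eL by blast
      have lab: "label (dtree V1 F1) = V1" using dtree_label[OF Gs(1) Gs(25) f1] .
      have "X = V1 \<or> X \<in> firstborns (dtree V1 F1)" using X(1) lab by (auto simp: Lset_def)
      then show ?thesis
      proof
        assume XV: "X = V1"
        show ?thesis
        proof (cases "card V1 \<ge> 3")
          case True
          then show ?thesis using typeI[OF g f1 f2 True] FU XV X(2) by simp
        next
          case False
          then have "card V1 = 2" using Gs(25) by simp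
          then show ?thesis using typeII[OF g f1 f2 _ nm] FU XV X(2) by simp
        qed
      next
        assume X1: "X \<in> firstborns (dtree V1 F1)"
        have eF1: "edge_of X \<in> F1" by (rule edge_in_F1[OF Gs(1) Gs(25) f1 X1])
        have "(\<exists>G. is_facet V1 G \<and> fac_gt V1 F1 G \<and> F1 - G = {edge_of X}) \<or> bridge V1 F1 (edge_of X)"
          by (rule lemS[OF Gs(1) Gs(25) f1 X1])
        then show ?thesis
        proof
          assume "\<exists>G. is_facet V1 G \<and> fac_gt V1 F1 G \<and> F1 - G = {edge_of X}"
          then obtain G1 where "is_facet V1 G1" "fac_gt V1 F1 G1" "F1 - G1 = {edge_of X}" by blast
          then show ?thesis using glue_left[OF g f1 f2] FU X(2) by simp
        next
          assume "bridge V1 F1 (edge_of X)"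
          then show ?thesis using bridge_typeIII[OF g f1 f2 _ eF1] FU X(2) by simp
        qed
      qed
    qed
  qed
qed

theorem theorem8p3:
  fixes V :: "nat set"
  assumes "finite V" and "card V \<ge> 2"
  shows "(\<forall>F. is_facet V F \<longrightarrow> \<not> fac_gt V F F)
       \<and> (\<forall>F G H. is_facet V F \<and> is_facet V G \<and> is_facet V H \<and> fac_gt V F G \<and> fac_gt V G H
              \<longrightarrow> fac_gt V F H)
       \<and> (\<forall>F G. is_facet V F \<and> is_facet V G \<and> F \<noteq> G \<longrightarrow> fac_gt V F G \<or> fac_gt V G F)
       \<and> (\<forall>F G. is_facet V F \<and> is_facet V G \<and> fac_gt V F G \<longrightarrow> \<not> sigma V F \<subseteq> G)
       \<and> (\<forall>F e. is_facet V F \<and> e \<in> sigma V F \<longrightarrow>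
              (\<exists>G. is_facet V G \<and> fac_gt V F G \<and> F - G = {e}))"
proof (intro conjI allI impI)
  fix F assume "is_facet V F"
  show "\<not> fac_gt V F F" by (simp add: fac_gt_lexgt lexgt_irrefl)
next
  fix F G H assume h: "is_facet V F \<and> is_facet V G \<and> is_facet V H \<and> fac_gt V F G \<and> fac_gt V G H"
  have fin: "\<forall>X \<in> set (traversal (dtree V F)) \<union> set (traversal (dtree V G)) \<union> set (traversal (dtree V H)). finite X"
    using dtree_labels[OF assms] h by blast
  show "fac_gt V F H" using lexgt_trans[OF fin] h by (simp add: fac_gt_lexgt)
next
  fix F G assume h: "is_facet V F \<and> is_facet V G \<and> F \<noteq> G"
  have fin: "\<forall>X \<in> set (traversal (dtree V F)) \<union> set (traversal (dtree V G)). finite X"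
    using dtree_labels[OF assms] h by blast
  have l: "length (traversal (dtree V F)) = length (traversal (dtree V G))"
    using dtree_length[OF assms] h by (metis add_right_cancel)
  have ne: "traversal (dtree V F) \<noteq> traversal (dtree V G)"
    using dtree_edges[OF assms] h by metis
  show "fac_gt V F G \<or> fac_gt V G F" using lexgt_total[OF fin l ne] by (simp add: fac_gt_lexgt)
next
  fix F G assume h: "is_facet V F \<and> is_facet V G \<and> fac_gt V F G"
  then show "\<not> sigma V F \<subseteq> G" using SH1[OF assms] by blast
next
  fix F e assume h: "is_facet V F \<and> e \<in> sigma V F"
  then show "\<exists>G. is_facet V G \<and> fac_gt V F G \<and> F - G = {e}" using SH2[OF assms] by blast
qed


end
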